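(* Let $\mathfrak{G}$ be a right-angled graph of groups satisfying conditions (i)–(iv) below, with underlying abstract graph $(V,E,\bar\cdot,s,t)$, and let $\omega\in V$. Conditions: (i) for every vertex $u$, every factor $G$ of $G_u$ and every loop $c$ based at $u$, $\varphi_c(G)\in\{\emptyset,G\}$; (ii) there do not exist vertices $u,v$, oriented paths $\alpha,\beta$ from $u$ to $v$, commuting factors $A_1,A_2$ of $G_u$ and non-commuting factors $B_1,B_2$ of $G_v$ with $\varphi_\alpha(A_1)=B_1$ and $\varphi_\beta(A_2)=B_2$; (iii) no arrow $e$ satisfies $s(e)=t(e)$; (iv) $\Phi(G)=\{\mathrm{Id}\}$ for every factor $G$. For vertices $a\in V(\Gamma_u)$, $b\in V(\Gamma_v)$ write $a\sim b$ if there is an arrow $e$ from $u$ to $v$ such that $\varphi_e$ sends the factor indexed by $a$ to the factor indexed by $b$, and let $\Psi_0$ be the quotient of the disjoint union $\bigsqcup_{u\in V}\Gamma_u$ by the equivalence relation generated by $\sim$ (two classes being adjacent if they have adjacent representatives). Let $\Psi$ be the simplicial graph obtained from $\Psi_0$ by adding one new vertex $x_{\{e,\bar e\}}$ for each pair of arrows $\{e,\bar e\}$, adjacent to the classes of all vertices of $\Gamma_{s(e)}$ indexing factors contained in $\iota_e(G_e)$ (equivalently, of $\Gamma_{t(e)}$ indexing factors contained in $\iota_{\bar e}(G_e)$). Let $\mathcal{G}$ be the collection of groups indexed by $V(\Psi)$ in which the class of a vertex of $\Gamma_u$ is labelled by the corresponding factor (well defined up to isomorphism) and each new vertex $x_{\{e,\bar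 e\}}$ by $\mathbb{Z}/2\mathbb{Z}$. Then $\mathfrak{F}_\omega$ embeds into the graph product $\Psi\mathcal{G}$.
   Context: An abstract graph consists of a set $V$ of vertices, a set $E$ of arrows, a fixed-point-free involution $e\mapsto\bar e$ on $E$, and maps $s,t:E\to V$ with $t(e)=s(\bar e)$; it is assumed connected; a loop based at $u$ is an oriented path of arrows from $u$ to $u$. A right-angled graph of groups $\mathfrak{G}$ consists of an abstract graph, for each $v\in V$ a group $G_v$ with a fixed decomposition as a graph product $\Gamma_v\mathcal{G}_v$ (over a simplicial graph $\Gamma_v$ with non-trivial vertex-groups), for each $e\in E$ a group $G_e=G_{\bar e}$ with a fixed decomposition as a graph product, and monomorphisms $\iota_e:G_e\hookrightarrow G_{s(e)}$ which are graphical embeddings: there is an embedding $f$ of the graph of $G_e$ onto an induced subgraph of $\Gamma_{s(e)}$ such that $\iota_e$ restricts to an isomorphism from each vertex-group of $G_e$ onto the vertex-group of $G_{s(e)}$ indexed by the image under $f$ of its vertex. (A graph product $\Gamma\mathcal{G}$ is the quotient of $\ast_u G_u$ by $[g,h]=1$ for $g\in G_u,h\in G_v$, $\{u,v\}\in E(\Gamma)$.) The factors of $G_v$ are the vertex-groups of its fixed graph product decomposition; two factors of $G_v$ commute if they are distinct and indexed by adjacent vertices of $\Gamma_v$, and are non-commuting if they are distinct and indexed by non-adjacent vertices. The fundamental groupoid $\mathfrak{F}$ is the groupoid with object set $V$ generated by the arrows $e\in E$ (morphisms from $s(e)$ to $t(e)$) and the elements of each $G_v$ (morphisms from $v$ to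 $v$), subject to the relations of each $G_v$, $\bar e=e^{-1}$, and $\iota_e(g)\cdot e=e\cdot\iota_{\bar e}(g)$ for $e\in E$, $g\in G_e$. $\mathfrak{F}_\omega$ is the group of morphisms from $\omega$ to $\omega$ (the fundamental group of $\mathfrak{G}$). For an arrow $e$ and a factor $A$ of $G_{s(e)}$, set $\varphi_e(A):=\iota_{\bar e}(\iota_e^{-1}(A))$ (a factor of $G_{t(e)}$) if $A\subset\iota_e(G_e)$ and $\varphi_e(A):=\emptyset$ otherwise, with $\varphi_e(\emptyset)=\emptyset$; on elements, $\varphi_e=\iota_{\bar e}\circ\iota_e^{-1}$. For an oriented path $\gamma=e_1\cdots e_n$, $\varphi_\gamma:=\varphi_{e_n}\circ\cdots\circ\varphi_{e_1}$. For a factor $G$ of $G_u$, $\Phi(G):=\{\varphi_c|_G\mid c \text{ a loop based at } u \text{ with } \varphi_c(G)=G\}\leq\mathrm{Aut}(G)$. *)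

theory Defs
  imports "HOL-Algebra.Algebra"
begin

definition qrel :: "'w list set \<Rightarrow> ('w list \<Rightarrow> 'w list \<Rightarrow> bool) \<Rightarrow> 'w list \<Rightarrow> 'w list \<Rightarrow> bool" where
  "qrel W st = (\<lambda>x y. x \<in> W \<and> y \<in> W \<and> (st x y \<or> st y x))\<^sup>*\<^sup>*"

definition qclass :: "'w list set \<Rightarrow> ('w list \<Rightarrow> 'w list \<Rightarrow> bool) \<Rightarrow> 'w list \<Rightarrow> 'w list set" where
  "qclass W st w = {w' \<in> W. qrel W st w w'}"

definition quot_monoid :: "'w list set \<Rightarrow> ('w list \<Rightarrow> 'w list \<Rightarrow> bool) \<Rightarrow> 'w list set monoid" where
  "quot_monoid W st =
     \<lparr>carrier = qclass W st ` W,
      monoid.mult = (\<lambda>A B. {w \<in> W. \<exists>x\<in>A. \<exists>y\<in>B. qrel W st (x @ y) w}),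
      monoid.one = qclass W st []\<rparr>"

definition rewrite_step :: "('w list \<Rightarrow> 'w list \<Rightarrow> bool) \<Rightarrow> 'w list \<Rightarrow> 'w list \<Rightarrow> bool" where
  "rewrite_step basic w1 w2 = (\<exists>u l r v. basic l r \<and> w1 = u @ l @ v \<and> w2 = u @ r @ v)"

definition simplicial :: "'i set \<Rightarrow> ('i \<Rightarrow> 'i \<Rightarrow> bool) \<Rightarrow> bool" where
  "simplicial I adj = (\<forall>a b. adj a b \<longrightarrow> a \<in> I \<and> b \<in> I \<and> a \<noteq> b \<and> adj b a)"

definition gp_words :: "'i set \<Rightarrow> ('i \<Rightarrow> 'x monoid) \<Rightarrow> ('i \<times> 'x) list set" where
  "gp_words I F = {w. \<forall>p \<in> set w. fst p \<in> I \<and> snd p \<in> carrier (F (fst p))}"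

definition gp_basic :: "'i set \<Rightarrow> ('i \<Rightarrow> 'i \<Rightarrow> bool) \<Rightarrow> ('i \<Rightarrow> 'x monoid)
    \<Rightarrow> ('i \<times> 'x) list \<Rightarrow> ('i \<times> 'x) list \<Rightarrow> bool" where
  "gp_basic I adj F l r =
     ((\<exists>a\<in>I. \<exists>x\<in>carrier (F a). \<exists>y\<in>carrier (F a).
         l = [(a, x), (a, y)] \<and> r = [(a, x \<otimes>\<^bsub>F a\<^esub> y)]) \<or>
      (\<exists>a\<in>I. l = [(a, \<one>\<^bsub>F a\<^esub>)] \<and> r = []) \<or>
      (\<exists>a\<in>I. \<exists>b\<in>I. adj a b \<and> (\<exists>x\<in>carrier (F a). \<exists>y\<in>carrier (F b).
         l = [(a, x), (b, y)] \<and> r = [(b, y), (a, x)])))"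

text \<open>The graph product: free product of the vertex groups (presented by their multiplication
tables) modulo commutation of adjacent vertex groups.\<close>

definition graph_product :: "'i set \<Rightarrow> ('i \<Rightarrow> 'i \<Rightarrow> bool) \<Rightarrow> ('i \<Rightarrow> 'x monoid)
    \<Rightarrow> ('i \<times> 'x) list set monoid" where
  "graph_product I adj F = quot_monoid (gp_words I F) (rewrite_step (gp_basic I adj F))"

definition gp_factor :: "'i set \<Rightarrow> ('i \<Rightarrow> 'i \<Rightarrow> bool) \<Rightarrow> ('i \<Rightarrow> 'x monoid) \<Rightarrow> 'i
    \<Rightarrow> ('i \<times> 'x) list set set" where
  "gp_factor I adj F a =
     (\<lambda>x. qclass (gp_words I F) (rewrite_step (gp_basic I adj F)) [(a, x)]) ` carrier (F a)"

definition transport :: "('x \<Rightarrow> 'y) \<Rightarrow> 'x monoid \<Rightarrow> 'y monoid" where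
  "transport f G =
     \<lparr>carrier = f ` carrier G,
      monoid.mult = (\<lambda>x y. f (inv_into (carrier G) f x \<otimes>\<^bsub>G\<^esub> inv_into (carrier G) f y)),
      monoid.one = f \<one>\<^bsub>G\<^esub>\<rparr>"

record ('v, 'e, 'a, 'g) ragg =
  Vs :: "'v set"
  Es :: "'e set"
  bar :: "'e \<Rightarrow> 'e"
  src :: "'e \<Rightarrow> 'v"
  tgt :: "'e \<Rightarrow> 'v"
  VGam :: "'v \<Rightarrow> 'a set"
  adjG :: "'v \<Rightarrow> 'a \<Rightarrow> 'a \<Rightarrow> bool"
  FV :: "'v \<Rightarrow> 'a \<Rightarrow> 'g monoid"         \<comment> \<open>vertex groups of G_u\<close>
  VEdg :: "'e \<Rightarrow> 'a set"                 \<comment> \<open>vertices of the graph of G_e\<close>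
  adjE :: "'e \<Rightarrow> 'a \<Rightarrow> 'a \<Rightarrow> bool"
  FE :: "'e \<Rightarrow> 'a \<Rightarrow> 'g monoid"
  iota :: "'e \<Rightarrow> ('a \<times> 'g) list set \<Rightarrow> ('a \<times> 'g) list set"

definition Gv :: "('v, 'e, 'a, 'g) ragg \<Rightarrow> 'v \<Rightarrow> ('a \<times> 'g) list set monoid" where
  "Gv R u = graph_product (VGam R u) (adjG R u) (FV R u)"

definition Ge :: "('v, 'e, 'a, 'g) ragg \<Rightarrow> 'e \<Rightarrow> ('a \<times> 'g) list set monoid" where
  "Ge R e = graph_product (VEdg R e) (adjE R e) (FE R e)"

definition factor :: "('v, 'e, 'a, 'g) ragg \<Rightarrow> 'v \<Rightarrow> 'a \<Rightarrow> ('a \<times> 'g) list set set" where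
  "factor R u a = gp_factor (VGam R u) (adjG R u) (FV R u) a"

definition efactor :: "('v, 'e, 'a, 'g) ragg \<Rightarrow> 'e \<Rightarrow> 'a \<Rightarrow> ('a \<times> 'g) list set set" where
  "efactor R e b = gp_factor (VEdg R e) (adjE R e) (FE R e) b"

fun arrow_path :: "('v, 'e, 'a, 'g) ragg \<Rightarrow> 'e list \<Rightarrow> 'v \<Rightarrow> 'v \<Rightarrow> bool" where
  "arrow_path R [] u v = (u = v)"
| "arrow_path R (e # p) u v = (e \<in> Es R \<and> src R e = u \<and> arrow_path R p (tgt R e) v)"

definition graphical_embedding :: "('v, 'e, 'a, 'g) ragg \<Rightarrow> 'e \<Rightarrow> bool" where
  "graphical_embedding R e =
     (iota R e \<in> hom (Ge R e) (Gv R (src R e)) \<and> inj_on (iota R e) (carrier (Ge R e)) \<and>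
      (\<exists>f. inj_on f (VEdg R e) \<and> f ` VEdg R e \<subseteq> VGam R (src R e) \<and>
           (\<forall>a\<in>VEdg R e. \<forall>b\<in>VEdg R e. adjE R e a b \<longleftrightarrow> adjG R (src R e) (f a) (f b)) \<and>
           (\<forall>b\<in>VEdg R e. bij_betw (iota R e) (efactor R e b) (factor R (src R e) (f b)))))"

definition is_ragg :: "('v, 'e, 'a, 'g) ragg \<Rightarrow> bool" where
  "is_ragg R =
     ((\<forall>e\<in>Es R. bar R e \<in> Es R \<and> bar R e \<noteq> e \<and> bar R (bar R e) = e \<and>
                 src R e \<in> Vs R \<and> tgt R e \<in> Vs R \<and> tgt R e = src R (bar R e)) \<and>
      (\<forall>u\<in>Vs R. \<forall>v\<in>Vs R. \<exists>p. arrow_path R p u v) \<and>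
      (\<forall>u\<in>Vs R. simplicial (VGam R u) (adjG R u) \<and>
         (\<forall>a\<in>VGam R u. group (FV R u a) \<and> carrier (FV R u a) \<noteq> {\<one>\<^bsub>FV R u a\<^esub>})) \<and>
      (\<forall>e\<in>Es R. simplicial (VEdg R e) (adjE R e) \<and>
         (\<forall>b\<in>VEdg R e. group (FE R e b) \<and> carrier (FE R e b) \<noteq> {\<one>\<^bsub>FE R e b\<^esub>}) \<and>
         VEdg R (bar R e) = VEdg R e \<and> adjE R (bar R e) = adjE R e \<and>
         (\<forall>b\<in>VEdg R e. FE R (bar R e) b = FE R e b)) \<and>
      (\<forall>e\<in>Es R. graphical_embedding R e))"

definition phiset :: "('v, 'e, 'a, 'g) ragg \<Rightarrow> 'e \<Rightarrow> ('a \<times> 'g) list set set \<Rightarrow> ('a \<times> 'g) list set set" where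
  "phiset R e A =
     (if A \<subseteq> iota R e ` carrier (Ge R e)
      then iota R (bar R e) ` (iota R e -` A \<inter> carrier (Ge R e)) else {})"

definition phiset_path :: "('v, 'e, 'a, 'g) ragg \<Rightarrow> 'e list \<Rightarrow> ('a \<times> 'g) list set set \<Rightarrow> ('a \<times> 'g) list set set" where
  "phiset_path R p = fold (phiset R) p"

definition phielt :: "('v, 'e, 'a, 'g) ragg \<Rightarrow> 'e \<Rightarrow> ('a \<times> 'g) list set \<Rightarrow> ('a \<times> 'g) list set" where
  "phielt R e g = iota R (bar R e) (inv_into (carrier (Ge R e)) (iota R e) g)"

definition phielt_path :: "('v, 'e, 'a, 'g) ragg \<Rightarrow> 'e list \<Rightarrow> ('a \<times> 'g) list set \<Rightarrow> ('a \<times> 'g) list set" where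
  "phielt_path R p = fold (phielt R) p"

definition Phi :: "('v, 'e, 'a, 'g) ragg \<Rightarrow> 'v \<Rightarrow> ('a \<times> 'g) list set set
    \<Rightarrow> (('a \<times> 'g) list set \<Rightarrow> ('a \<times> 'g) list set) set" where
  "Phi R u G = {restrict (phielt_path R c) G | c. arrow_path R c u u \<and> phiset_path R c G = G}"

definition cond_i :: "('v, 'e, 'a, 'g) ragg \<Rightarrow> bool" where
  "cond_i R = (\<forall>u\<in>Vs R. \<forall>a\<in>VGam R u. \<forall>c. arrow_path R c u u \<longrightarrow>
                 phiset_path R c (factor R u a) \<in> {{}, factor R u a})"

definition cond_ii :: "('v, 'e, 'a, 'g) ragg \<Rightarrow> bool" where
  "cond_ii R = (\<not> (\<exists>u\<in>Vs R. \<exists>v\<in>Vs R. \<exists>\<alpha> \<beta>. arrow_path R \<alpha> u v \<and> arrow_path R \<beta> u v \<and>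
       (\<exists>a1\<in>VGam R u. \<exists>a2\<in>VGam R u. a1 \<noteq> a2 \<and> adjG R u a1 a2 \<and>
        (\<exists>b1\<in>VGam R v. \<exists>b2\<in>VGam R v. b1 \<noteq> b2 \<and> \<not> adjG R v b1 b2 \<and>
          phiset_path R \<alpha> (factor R u a1) = factor R v b1 \<and>
          phiset_path R \<beta> (factor R u a2) = factor R v b2))))"

definition cond_iii :: "('v, 'e, 'a, 'g) ragg \<Rightarrow> bool" where
  "cond_iii R = (\<forall>e\<in>Es R. src R e \<noteq> tgt R e)"

definition cond_iv :: "('v, 'e, 'a, 'g) ragg \<Rightarrow> bool" where
  "cond_iv R = (\<forall>u\<in>Vs R. \<forall>a\<in>VGam R u. Phi R u (factor R u a) = {restrict id (factor R u a)})"

datatype ('v, 'e, 'x) gletter = Arr 'e | Elt 'v 'x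

fun word_path :: "('v, 'e, 'a, 'g) ragg \<Rightarrow> 'v \<Rightarrow> 'v
    \<Rightarrow> ('v, 'e, ('a \<times> 'g) list set) gletter list \<Rightarrow> bool" where
  "word_path R u v [] = (u = v)"
| "word_path R u v (Arr e # w) = (e \<in> Es R \<and> src R e = u \<and> word_path R (tgt R e) v w)"
| "word_path R u v (Elt x g # w) =
     (x = u \<and> u \<in> Vs R \<and> g \<in> carrier (Gv R u) \<and> word_path R u v w)"

definition groupoid_basic :: "('v, 'e, 'a, 'g) ragg
    \<Rightarrow> ('v, 'e, ('a \<times> 'g) list set) gletter list \<Rightarrow> ('v, 'e, ('a \<times> 'g) list set) gletter list \<Rightarrow> bool" where
  "groupoid_basic R l r =
     ((\<exists>u\<in>Vs R. \<exists>x\<in>carrier (Gv R u). \<exists>y\<in>carrier (Gv R u).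
         l = [Elt u x, Elt u y] \<and> r = [Elt u (x \<otimes>\<^bsub>Gv R u\<^esub> y)]) \<or>
      (\<exists>u\<in>Vs R. l = [Elt u \<one>\<^bsub>Gv R u\<^esub>] \<and> r = []) \<or>
      (\<exists>e\<in>Es R. l = [Arr e, Arr (bar R e)] \<and> r = []) \<or>
      (\<exists>e\<in>Es R. \<exists>g\<in>carrier (Ge R e).
         l = [Elt (src R e) (iota R e g), Arr e] \<and> r = [Arr e, Elt (tgt R e) (iota R (bar R e) g)]))"

text \<open>Morphisms \<omega> \<rightarrow> \<omega> of the fundamental groupoid: paths from \<omega> to \<omega> in the generators,
modulo the congruence generated by the relations (all intermediate words being such paths).\<close>

definition fund_group :: "('v, 'e, 'a, 'g) ragg \<Rightarrow> 'v
    \<Rightarrow> ('v, 'e, ('a \<times> 'g) list set) gletter list set monoid" where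
  "fund_group R \<omega> = quot_monoid {w. word_path R \<omega> \<omega> w} (rewrite_step (groupoid_basic R))"

definition sim :: "('v, 'e, 'a, 'g) ragg \<Rightarrow> 'v \<times> 'a \<Rightarrow> 'v \<times> 'a \<Rightarrow> bool" where
  "sim R p q = (\<exists>e\<in>Es R. fst p = src R e \<and> fst q = tgt R e \<and>
       snd p \<in> VGam R (src R e) \<and> snd q \<in> VGam R (tgt R e) \<and>
       phiset R e (factor R (src R e) (snd p)) = factor R (tgt R e) (snd q))"

definition psi_class :: "('v, 'e, 'a, 'g) ragg \<Rightarrow> 'v \<times> 'a \<Rightarrow> ('v \<times> 'a) set" where
  "psi_class R p = {q. (\<lambda>x y. sim R x y \<or> sim R y x)\<^sup>*\<^sup>* p q}"

definition disj_union :: "('v, 'e, 'a, 'g) ragg \<Rightarrow> ('v \<times> 'a) set" where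
  "disj_union R = {(u, a). u \<in> Vs R \<and> a \<in> VGam R u}"

definition Psi_V :: "('v, 'e, 'a, 'g) ragg \<Rightarrow> (('v \<times> 'a) set + 'e set) set" where
  "Psi_V R = Inl ` (psi_class R ` disj_union R) \<union> Inr ` ((\<lambda>e. {e, bar R e}) ` Es R)"

definition edge_adj :: "('v, 'e, 'a, 'g) ragg \<Rightarrow> 'e set \<Rightarrow> ('v \<times> 'a) set \<Rightarrow> bool" where
  "edge_adj R P C = (\<exists>e\<in>P. \<exists>a\<in>VGam R (src R e). (src R e, a) \<in> C \<and>
       factor R (src R e) a \<subseteq> iota R e ` carrier (Ge R e))"

definition Psi_adj :: "('v, 'e, 'a, 'g) ragg \<Rightarrow> ('v \<times> 'a) set + 'e set \<Rightarrow> ('v \<times> 'a) set + 'e set \<Rightarrow> bool" where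
  "Psi_adj R x y = (x \<in> Psi_V R \<and> y \<in> Psi_V R \<and>
     (case (x, y) of
        (Inl C, Inl D) \<Rightarrow> C \<noteq> D \<and> (\<exists>u a b. (u, a) \<in> C \<and> (u, b) \<in> D \<and> u \<in> Vs R \<and> adjG R u a b)
      | (Inl C, Inr P) \<Rightarrow> edge_adj R P C
      | (Inr P, Inl C) \<Rightarrow> edge_adj R P C
      | (Inr P, Inr Q) \<Rightarrow> False))"

definition Psi_F :: "('v, 'e, 'a, 'g) ragg \<Rightarrow> ('v \<times> 'a) set + 'e set \<Rightarrow> ('g + int) monoid" where
  "Psi_F R x = (case x of
        Inl C \<Rightarrow> transport Inl (FV R (fst (SOME p. p \<in> C)) (snd (SOME p. p \<in> C)))
      | Inr P \<Rightarrow> transport Inr (integer_mod_group 2))"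

definition Psi_GP :: "('v, 'e, 'a, 'g) ragg \<Rightarrow> ((('v \<times> 'a) set + 'e set) \<times> ('g + int)) list set monoid" where
  "Psi_GP R = graph_product (Psi_V R) (Psi_adj R) (Psi_F R)"

end

theory Submission
  imports Defs
begin

lemma qrel_refl[simp]: "qrel W st x x" by (simp add: qrel_def)

lemma qrel_sym: "qrel W st x y \<Longrightarrow> qrel W st y x"
  unfolding qrel_def
proof (induction rule: rtranclp_induct)
  case base then show ?case by simp
next
  case (step y z)
  then have "(\<lambda>x y. x \<in> W \<and> y \<in> W \<and> (st x y \<or> st y x)) z y" by blast
  then show ?case using step(3) by (rule converse_rtranclp_into_rtranclp)
qed

lemma qrel_trans: "qrel W st x y \<Longrightarrow> qrel W st y z \<Longrightarrow> qrel W st x z"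
  unfolding qrel_def by (rule rtranclp_trans)

lemma qrel_cases: "qrel W st x y \<Longrightarrow> x = y \<or> (x \<in> W \<and> y \<in> W)"
  unfolding qrel_def by (induction rule: rtranclp_induct) auto

lemma qrel_stepI: "x \<in> W \<Longrightarrow> y \<in> W \<Longrightarrow> st x y \<Longrightarrow> qrel W st x y"
  unfolding qrel_def by auto

lemma mem_qclass: "x \<in> W \<Longrightarrow> x \<in> qclass W st x"
  by (simp add: qclass_def)

lemma qclass_eq_iff: "x \<in> W \<Longrightarrow> y \<in> W \<Longrightarrow> qclass W st x = qclass W st y \<longleftrightarrow> qrel W st x y"
proof
  assume x: "x \<in> W" and y: "y \<in> W" and e: "qclass W st x = qclass W st y"
  have "y \<in> qclass W st x" using e y by (simp add: qclass_def)
  then show "qrel W st x y" by (simp add: qclass_def)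
next
  assume "x \<in> W" "y \<in> W" "qrel W st x y"
  then show "qclass W st x = qclass W st y"
    unfolding qclass_def using qrel_sym qrel_trans by metis
qed

lemma qclass_eqI: "qrel W st x y \<Longrightarrow> qclass W st x = qclass W st y"
  unfolding qclass_def using qrel_sym qrel_trans by metis

lemma qclass_mem_eq: "y \<in> qclass W st x \<Longrightarrow> qclass W st y = qclass W st x \<and> y \<in> W \<and> qrel W st x y"
  unfolding qclass_def using qrel_sym qrel_trans by blast

lemma qrel_step_ctx: "basic l r \<Longrightarrow> u @ l @ v \<in> W \<Longrightarrow> u @ r @ v \<in> W
   \<Longrightarrow> qrel W (rewrite_step basic) (u @ l @ v) (u @ r @ v)"
  by (rule qrel_stepI) (auto simp: rewrite_step_def)

definition app_closed :: "'w list set \<Rightarrow> bool" where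
  "app_closed W = (\<forall>x y. x \<in> W \<longrightarrow> y \<in> W \<longrightarrow> x @ y \<in> W)"

lemma qrel_app_right:
  assumes A: "app_closed W" and r: "qrel W (rewrite_step b) x x'" and yW: "y \<in> W"
  shows "qrel W (rewrite_step b) (x @ y) (x' @ y)"
  using r unfolding qrel_def
proof (induction rule: rtranclp_induct)
  case base then show ?case by simp
next
  case (step z1 z2)
  have "rewrite_step b (z1 @ y) (z2 @ y)" if "rewrite_step b z1 z2" for z1 z2
    using that unfolding rewrite_step_def by (metis append.assoc)
  then have "(\<lambda>x y. x \<in> W \<and> y \<in> W \<and> (rewrite_step b x y \<or> rewrite_step b y x)) (z1 @ y) (z2 @ y)"
    using step A yW app_closed_def by blast
  with step(3) show ?case by (rule rtranclp.rtrancl_into_rtrancl)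
qed

lemma qrel_app_left:
  assumes A: "app_closed W" and r: "qrel W (rewrite_step b) x x'" and yW: "y \<in> W"
  shows "qrel W (rewrite_step b) (y @ x) (y @ x')"
  using r unfolding qrel_def
proof (induction rule: rtranclp_induct)
  case base then show ?case by simp
next
  case (step z1 z2)
  have "rewrite_step b (y @ z1) (y @ z2)" if "rewrite_step b z1 z2" for z1 z2
    using that unfolding rewrite_step_def by (metis append.assoc)
  then have "(\<lambda>x y. x \<in> W \<and> y \<in> W \<and> (rewrite_step b x y \<or> rewrite_step b y x)) (y @ z1) (y @ z2)"
    using step A yW app_closed_def by blast
  with step(3) show ?case by (rule rtranclp.rtrancl_into_rtrancl)
qed

lemma qrel_app2: "app_closed W \<Longrightarrow> qrel W (rewrite_step b) x x' \<Longrightarrow> qrel W (rewrite_step b) y y'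
  \<Longrightarrow> x \<in> W \<Longrightarrow> y' \<in> W \<Longrightarrow> qrel W (rewrite_step b) (x @ y) (x' @ y')"
  by (meson qrel_app_left qrel_app_right qrel_trans)

lemma quot_carrier: "carrier (quot_monoid W st) = qclass W st ` W"
  by (simp add: quot_monoid_def)

lemma quot_one: "\<one>\<^bsub>quot_monoid W st\<^esub> = qclass W st []"
  by (simp add: quot_monoid_def)

lemma quot_mult: "app_closed W \<Longrightarrow> x \<in> W \<Longrightarrow> y \<in> W \<Longrightarrow>
  qclass W (rewrite_step b) x \<otimes>\<^bsub>quot_monoid W (rewrite_step b)\<^esub> qclass W (rewrite_step b) y
   = qclass W (rewrite_step b) (x @ y)"
proof -
  assume A: "app_closed W" "x \<in> W" "y \<in> W"
  let ?q = "qclass W (rewrite_step b)" and ?r = "qrel W (rewrite_step b)"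
  have "w \<in> ?q (x @ y)" if "w \<in> W" "x' \<in> ?q x" "y' \<in> ?q y" "?r (x' @ y') w" for w x' y'
  proof -
    have "?r x x'" "?r y y'" "y' \<in> W" using that by (auto simp: qclass_def)
    then have "?r (x @ y) (x' @ y')" using qrel_app2 A by metis
    then show ?thesis using that unfolding qclass_def using qrel_trans by blast
  qed
  moreover have "w \<in> W \<and> (\<exists>x'\<in>?q x. \<exists>y'\<in>?q y. ?r (x' @ y') w)" if "w \<in> ?q (x @ y)" for w
    using that A mem_qclass unfolding qclass_def by blast
  ultimately show ?thesis unfolding quot_monoid_def by auto
qed

section \<open>Graph products\<close>

lemma gp_words_app_closed: "app_closed (gp_words I F)"
  by (auto simp: app_closed_def gp_words_def)

lemma gp_words_append[simp]: "xs @ ys \<in> gp_words I F \<longleftrightarrow> xs \<in> gp_words I F \<and> ys \<in> gp_words I F"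
  by (auto simp: gp_words_def)

lemma gp_words_Cons[simp]: "p # ys \<in> gp_words I F \<longleftrightarrow> fst p \<in> I \<and> snd p \<in> carrier (F (fst p)) \<and> ys \<in> gp_words I F"
  by (auto simp: gp_words_def)

lemma gp_words_Nil[simp]: "[] \<in> gp_words I F"
  by (auto simp: gp_words_def)

lemma gp_carrier: "carrier (graph_product I adj F) = qclass (gp_words I F) (rewrite_step (gp_basic I adj F)) ` gp_words I F"
  by (simp add: graph_product_def quot_carrier)

lemma gp_one: "\<one>\<^bsub>graph_product I adj F\<^esub> = qclass (gp_words I F) (rewrite_step (gp_basic I adj F)) []"
  by (simp add: graph_product_def quot_one)

lemma gp_mult: "x \<in> gp_words I F \<Longrightarrow> y \<in> gp_words I F \<Longrightarrow>
  qclass (gp_words I F) (rewrite_step (gp_basic I adj F)) x \<otimes>\<^bsub>graph_product I adj F\<^esub>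
  qclass (gp_words I F) (rewrite_step (gp_basic I adj F)) y
   = qclass (gp_words I F) (rewrite_step (gp_basic I adj F)) (x @ y)"
  unfolding graph_product_def by (rule quot_mult[OF gp_words_app_closed])

definition invw :: "('i \<Rightarrow> 'x monoid) \<Rightarrow> ('i \<times> 'x) list \<Rightarrow> ('i \<times> 'x) list" where
  "invw F w = rev (map (\<lambda>p. (fst p, inv\<^bsub>F (fst p)\<^esub> (snd p))) w)"

lemma invw_words: "(\<forall>a\<in>I. group (F a)) \<Longrightarrow> w \<in> gp_words I F \<Longrightarrow> invw F w \<in> gp_words I F"
  by (auto simp: invw_def gp_words_def intro: group.inv_closed)

lemma invw_rel: "(\<forall>a\<in>I. group (F a)) \<Longrightarrow> w \<in> gp_words I F \<Longrightarrow>
   qrel (gp_words I F) (rewrite_step (gp_basic I adj F)) (invw F w @ w) []"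
proof (induction w)
  case Nil then show ?case by (simp add: invw_def)
next
  case (Cons p w)
  obtain a x where p: "p = (a, x)" by force
  have a: "a \<in> I" and x: "x \<in> carrier (F a)" and w: "w \<in> gp_words I F" using Cons p by auto
  have g: "group (F a)" using Cons a by auto
  let ?W = "gp_words I F" and ?s = "rewrite_step (gp_basic I adj F)"
  have iw: "invw F w \<in> ?W" using invw_words Cons w by blast
  have e: "invw F (p # w) @ p # w = invw F w @ [(a, inv\<^bsub>F a\<^esub> x), (a, x)] @ w"
    by (simp add: invw_def p)
  have ix: "inv\<^bsub>F a\<^esub> x \<in> carrier (F a)" using g x by (simp add: group.inv_closed)
  have s1: "qrel ?W ?s (invw F w @ [(a, inv\<^bsub>F a\<^esub> x), (a, x)] @ w) (invw F w @ [(a, \<one>\<^bsub>F a\<^esub>)] @ w)"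
  proof -
    have "gp_basic I adj F [(a, inv\<^bsub>F a\<^esub> x), (a, x)] [(a, inv\<^bsub>F a\<^esub> x \<otimes>\<^bsub>F a\<^esub> x)]"
      unfolding gp_basic_def using a x ix by blast
    moreover have "inv\<^bsub>F a\<^esub> x \<otimes>\<^bsub>F a\<^esub> x = \<one>\<^bsub>F a\<^esub>" using g x by (simp add: group.l_inv)
    ultimately show ?thesis using iw w a x ix g
      by (intro qrel_step_ctx) (auto simp: monoid.one_closed group.is_monoid)
  qed
  have s2: "qrel ?W ?s (invw F w @ [(a, \<one>\<^bsub>F a\<^esub>)] @ w) (invw F w @ [] @ w)"
    using iw w a g by (intro qrel_step_ctx) (auto simp: gp_basic_def monoid.one_closed group.is_monoid)
  have s3: "qrel ?W ?s (invw F w @ w) []" using Cons.IH[OF Cons.prems(1) w] .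
  show ?case unfolding e using qrel_trans[OF s1 qrel_trans[OF s2]] s3 by simp
qed

lemma gp_group: "(\<forall>a\<in>I. group (F a)) \<Longrightarrow> group (graph_product I adj F)"
proof -
  assume G: "\<forall>a\<in>I. group (F a)"
  let ?W = "gp_words I F" and ?s = "rewrite_step (gp_basic I adj F)"
  let ?q = "qclass ?W ?s" and ?GP = "graph_product I adj F"
  show ?thesis
  proof (rule groupI)
    fix x y assume "x \<in> carrier ?GP" "y \<in> carrier ?GP"
    then show "x \<otimes>\<^bsub>?GP\<^esub> y \<in> carrier ?GP"
      by (auto simp: gp_carrier gp_mult)
  next
    show "\<one>\<^bsub>?GP\<^esub> \<in> carrier ?GP" by (auto simp: gp_carrier gp_one)
  next
    fix x y z assume "x \<in> carrier ?GP" "y \<in> carrier ?GP" "z \<in> carrier ?GP"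
    then show "x \<otimes>\<^bsub>?GP\<^esub> y \<otimes>\<^bsub>?GP\<^esub> z = x \<otimes>\<^bsub>?GP\<^esub> (y \<otimes>\<^bsub>?GP\<^esub> z)"
      by (auto simp: gp_carrier gp_mult)
  next
    fix x assume "x \<in> carrier ?GP"
    then show "\<one>\<^bsub>?GP\<^esub> \<otimes>\<^bsub>?GP\<^esub> x = x"
      by (auto simp: gp_carrier gp_one gp_mult[OF gp_words_Nil])
  next
    fix x assume "x \<in> carrier ?GP"
    then obtain w where w: "w \<in> ?W" "x = ?q w" by (auto simp: gp_carrier)
    have "?q (invw F w) \<in> carrier ?GP" using invw_words[OF G w(1)] by (auto simp: gp_carrier)
    moreover have "?q (invw F w) \<otimes>\<^bsub>?GP\<^esub> x = \<one>\<^bsub>?GP\<^esub>"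
      using w invw_words[OF G w(1)] invw_rel[OF G w(1)] by (simp add: gp_mult gp_one qclass_eqI)
    ultimately show "\<exists>y\<in>carrier ?GP. y \<otimes>\<^bsub>?GP\<^esub> x = \<one>\<^bsub>?GP\<^esub>" by blast
  qed
qed


definition gq :: "'i set \<Rightarrow> ('i \<Rightarrow> 'i \<Rightarrow> bool) \<Rightarrow> ('i \<Rightarrow> 'x monoid) \<Rightarrow> ('i \<times> 'x) list \<Rightarrow> ('i \<times> 'x) list set" where
  "gq I adj F w = qclass (gp_words I F) (rewrite_step (gp_basic I adj F)) w"

definition gr :: "'i set \<Rightarrow> ('i \<Rightarrow> 'i \<Rightarrow> bool) \<Rightarrow> ('i \<Rightarrow> 'x monoid) \<Rightarrow> ('i \<times> 'x) list \<Rightarrow> ('i \<times> 'x) list \<Rightarrow> bool" where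
  "gr I adj F = qrel (gp_words I F) (rewrite_step (gp_basic I adj F))"

lemma gq_carrier: "carrier (graph_product I adj F) = gq I adj F ` gp_words I F"
  by (simp add: gp_carrier gq_def)

lemma gq_one: "\<one>\<^bsub>graph_product I adj F\<^esub> = gq I adj F []"
  by (simp add: gp_one gq_def)

lemma gq_mult: "x \<in> gp_words I F \<Longrightarrow> y \<in> gp_words I F \<Longrightarrow>
  gq I adj F x \<otimes>\<^bsub>graph_product I adj F\<^esub> gq I adj F y = gq I adj F (x @ y)"
  by (simp add: gp_mult gq_def)

lemma gq_eq_iff: "x \<in> gp_words I F \<Longrightarrow> y \<in> gp_words I F \<Longrightarrow> gq I adj F x = gq I adj F y \<longleftrightarrow> gr I adj F x y"
  by (simp add: gq_def gr_def qclass_eq_iff)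

lemma gq_eqI: "gr I adj F x y \<Longrightarrow> gq I adj F x = gq I adj F y"
  by (simp add: gq_def gr_def qclass_eqI)

lemma gp_factor_gq: "gp_factor I adj F a = (\<lambda>x. gq I adj F [(a, x)]) ` carrier (F a)"
  by (simp add: gp_factor_def gq_def)

lemma gr_step: "gp_basic I adj F l r \<Longrightarrow> u @ l @ v \<in> gp_words I F \<Longrightarrow> u @ r @ v \<in> gp_words I F
   \<Longrightarrow> gr I adj F (u @ l @ v) (u @ r @ v)"
  unfolding gr_def by (rule qrel_step_ctx)

lemma gr_sym: "gr I adj F x y \<Longrightarrow> gr I adj F y x" unfolding gr_def by (rule qrel_sym)
lemma gr_trans: "gr I adj F x y \<Longrightarrow> gr I adj F y z \<Longrightarrow> gr I adj F x z" unfolding gr_def by (rule qrel_trans)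
lemma gr_refl[simp]: "gr I adj F x x" unfolding gr_def by simp

lemma gr_app2: "gr I adj F x x' \<Longrightarrow> gr I adj F y y' \<Longrightarrow> x \<in> gp_words I F \<Longrightarrow> y' \<in> gp_words I F
  \<Longrightarrow> gr I adj F (x @ y) (x' @ y')"
  unfolding gr_def by (rule qrel_app2[OF gp_words_app_closed])

lemma gr_words: "gr I adj F x y \<Longrightarrow> x \<in> gp_words I F \<Longrightarrow> y \<in> gp_words I F"
  unfolding gr_def using qrel_cases by blast

section \<open>Evaluation retraction onto a vertex group\<close>

definition evl :: "('i \<Rightarrow> 'x monoid) \<Rightarrow> 'i \<Rightarrow> ('i \<times> 'x) list \<Rightarrow> 'x" where
  "evl F a w = foldr (\<lambda>p acc. if fst p = a then snd p \<otimes>\<^bsub>F a\<^esub> acc else acc) w \<one>\<^bsub>F a\<^esub>"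

lemma evl_Nil[simp]: "evl F a [] = \<one>\<^bsub>F a\<^esub>" by (simp add: evl_def)
lemma evl_Cons[simp]: "evl F a (p # w) = (if fst p = a then snd p \<otimes>\<^bsub>F a\<^esub> evl F a w else evl F a w)"
  by (simp add: evl_def)

lemma evl_closed: "group (F a) \<Longrightarrow> w \<in> gp_words I F \<Longrightarrow> evl F a w \<in> carrier (F a)"
  by (induction w) (auto simp: group.is_monoid monoid.m_closed monoid.one_closed)

lemma evl_append: "group (F a) \<Longrightarrow> u \<in> gp_words I F \<Longrightarrow> v \<in> gp_words I F \<Longrightarrow>
   evl F a (u @ v) = evl F a u \<otimes>\<^bsub>F a\<^esub> evl F a v"
proof (induction u)
  case Nil then show ?case using evl_closed[of F a v I] by (simp add: group.is_monoid monoid.l_one)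
next
  case (Cons p u)
  then show ?case using evl_closed[of F a u I] evl_closed[of F a v I]
    by (auto simp: monoid.m_assoc group.is_monoid)
qed

lemma evl_basic: "group (F a) \<Longrightarrow> simplicial I adj \<Longrightarrow> gp_basic I adj F l r \<Longrightarrow> evl F a l = evl F a r"
  unfolding gp_basic_def simplicial_def
  by (auto simp: group.is_monoid monoid.m_closed monoid.one_closed monoid.r_one monoid.l_one) blast+

lemma evl_rel:
  assumes g: "group (F a)" and s: "simplicial I adj" and r: "gr I adj F w w'"
  shows "evl F a w = evl F a w'"
  using r unfolding gr_def qrel_def
proof (induction rule: rtranclp_induct)
  case base then show ?case by simp
next
  case (step y z)
  have "evl F a y = evl F a z"
  proof -
    from step(2) obtain u l r v where st: "gp_basic I adj F l r"
      "(y = u @ l @ v \<and> z = u @ r @ v) \<or> (z = u @ l @ v \<and> y = u @ r @ v)"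
      and yz: "y \<in> gp_words I F" "z \<in> gp_words I F"
      unfolding rewrite_step_def by blast
    have "evl F a l = evl F a r" using evl_basic[OF g s st(1)] .
    then show ?thesis using st(2) yz by (auto simp: evl_append[of F a, OF g])
  qed
  then show ?case using step by simp
qed

lemma gq_in_carrier: "w \<in> gp_words I F \<Longrightarrow> gq I adj F w \<in> carrier (graph_product I adj F)"
  by (simp add: gq_carrier)

lemma gq_Cons: "[p] \<in> gp_words I F \<Longrightarrow> w \<in> gp_words I F \<Longrightarrow>
  gq I adj F (p # w) = gq I adj F [p] \<otimes>\<^bsub>graph_product I adj F\<^esub> gq I adj F w"
  using gq_mult[of "[p]" I F w adj] by simp

lemma gq_fac_mult: "group (F a) \<Longrightarrow> a \<in> I \<Longrightarrow> x \<in> carrier (F a) \<Longrightarrow> y \<in> carrier (F a) \<Longrightarrow>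
  gq I adj F [(a, x)] \<otimes>\<^bsub>graph_product I adj F\<^esub> gq I adj F [(a, y)] = gq I adj F [(a, x \<otimes>\<^bsub>F a\<^esub> y)]"
proof -
  assume A: "group (F a)" "a \<in> I" "x \<in> carrier (F a)" "y \<in> carrier (F a)"
  have c: "x \<otimes>\<^bsub>F a\<^esub> y \<in> carrier (F a)" using A by (simp add: group.is_monoid monoid.m_closed)
  have "gr I adj F ([] @ [(a, x), (a, y)] @ []) ([] @ [(a, x \<otimes>\<^bsub>F a\<^esub> y)] @ [])"
    by (rule gr_step) (use A c in \<open>auto simp: gp_basic_def\<close>)
  then show ?thesis using A by (simp add: gq_mult gq_eqI)
qed

lemma gq_fac_comm: "adj a b \<Longrightarrow> a \<in> I \<Longrightarrow> b \<in> I \<Longrightarrow> x \<in> carrier (F a) \<Longrightarrow> y \<in> carrier (F b) \<Longrightarrow>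
  gq I adj F [(a, x)] \<otimes>\<^bsub>graph_product I adj F\<^esub> gq I adj F [(b, y)] =
  gq I adj F [(b, y)] \<otimes>\<^bsub>graph_product I adj F\<^esub> gq I adj F [(a, x)]"
proof -
  assume A: "adj a b" "a \<in> I" "b \<in> I" "x \<in> carrier (F a)" "y \<in> carrier (F b)"
  have "gr I adj F ([] @ [(a, x), (b, y)] @ []) ([] @ [(b, y), (a, x)] @ [])"
    by (rule gr_step) (use A in \<open>auto simp: gp_basic_def\<close>)
  then show ?thesis using A by (simp add: gq_mult gq_eqI)
qed

lemma gq_fac_one: "group (F a) \<Longrightarrow> a \<in> I \<Longrightarrow> gq I adj F [(a, \<one>\<^bsub>F a\<^esub>)] = gq I adj F []"
proof -
  assume A: "group (F a)" "a \<in> I"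
  have "gr I adj F ([] @ [(a, \<one>\<^bsub>F a\<^esub>)] @ []) ([] @ [] @ [])"
    by (rule gr_step) (use A in \<open>auto simp: gp_basic_def group.is_monoid monoid.one_closed\<close>)
  then show ?thesis by (simp add: gq_eqI)
qed

lemma gq_fac_inj: "group (F a) \<Longrightarrow> simplicial I adj \<Longrightarrow> a \<in> I \<Longrightarrow> x \<in> carrier (F a) \<Longrightarrow> y \<in> carrier (F a)
  \<Longrightarrow> gq I adj F [(a, x)] = gq I adj F [(a, y)] \<Longrightarrow> x = y"
proof -
  assume A: "group (F a)" "simplicial I adj" "a \<in> I" "x \<in> carrier (F a)" "y \<in> carrier (F a)"
    "gq I adj F [(a, x)] = gq I adj F [(a, y)]"
  then have "gr I adj F [(a, x)] [(a, y)]" by (simp add: gq_eq_iff)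
  then have "evl F a [(a, x)] = evl F a [(a, y)]" using evl_rel A by metis
  then show ?thesis using A by (simp add: group.is_monoid monoid.r_one)
qed

lemma gp_factor_dist: "simplicial I adj \<Longrightarrow> a \<in> I \<Longrightarrow> b \<in> I \<Longrightarrow> a \<noteq> b \<Longrightarrow> group (F a) \<Longrightarrow>
   carrier (F a) \<noteq> {\<one>\<^bsub>F a\<^esub>} \<Longrightarrow> gp_factor I adj F a \<noteq> gp_factor I adj F b"
proof
  assume A: "simplicial I adj" "a \<in> I" "b \<in> I" "a \<noteq> b" "group (F a)" "carrier (F a) \<noteq> {\<one>\<^bsub>F a\<^esub>}"
    and E: "gp_factor I adj F a = gp_factor I adj F b"
  have "\<one>\<^bsub>F a\<^esub> \<in> carrier (F a)" using A by (simp add: group.is_monoid monoid.one_closed)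
  then obtain x where x: "x \<in> carrier (F a)" "x \<noteq> \<one>\<^bsub>F a\<^esub>" using A by blast
  have "gq I adj F [(a, x)] \<in> gp_factor I adj F b" using E x by (auto simp: gp_factor_gq)
  then obtain y where y: "y \<in> carrier (F b)" "gq I adj F [(a, x)] = gq I adj F [(b, y)]" by (auto simp: gp_factor_gq)
  then have "gr I adj F [(a, x)] [(b, y)]" using A x by (simp add: gq_eq_iff)
  then have "evl F a [(a, x)] = evl F a [(b, y)]" using evl_rel A by metis
  then show False using A x by (simp add: group.is_monoid monoid.r_one)
qed

lemma gp_factor_ne: "group (F a) \<Longrightarrow> gp_factor I adj F a \<noteq> {}"
  using group.is_monoid monoid.one_closed by (fastforce simp: gp_factor_gq)

lemma gp_factor_sub: "a \<in> I \<Longrightarrow> gp_factor I adj F a \<subseteq> carrier (graph_product I adj F)"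
  by (auto simp: gp_factor_gq gq_carrier)

lemma graph_product_cong: "(\<And>a. a \<in> I \<Longrightarrow> F a = F' a) \<Longrightarrow> graph_product I adj F = graph_product I adj F'"
proof -
  assume A: "\<And>a. a \<in> I \<Longrightarrow> F a = F' a"
  have w: "gp_words I F = gp_words I F'" using A by (auto simp: gp_words_def)
  have b: "gp_basic I adj F = gp_basic I adj F'" using A by (auto simp: gp_basic_def fun_eq_iff)
  show ?thesis by (simp add: graph_product_def w b)
qed

lemma gp_factor_cong: "(\<And>a. a \<in> I \<Longrightarrow> F a = F' a) \<Longrightarrow> b \<in> I \<Longrightarrow> gp_factor I adj F b = gp_factor I adj F' b"
proof -
  assume A: "\<And>a. a \<in> I \<Longrightarrow> F a = F' a" "b \<in> I"
  have w: "gp_words I F = gp_words I F'" using A by (auto simp: gp_words_def)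
  have bb: "gp_basic I adj F = gp_basic I adj F'" using A by (auto simp: gp_basic_def fun_eq_iff)
  show ?thesis using A by (simp add: gp_factor_def w bb)
qed


definition qv :: "('v, 'e, 'a, 'g) ragg \<Rightarrow> 'v \<Rightarrow> ('a \<times> 'g) list \<Rightarrow> ('a \<times> 'g) list set" where
  "qv R u w = gq (VGam R u) (adjG R u) (FV R u) w"

definition IMG :: "('v, 'e, 'a, 'g) ragg \<Rightarrow> 'e \<Rightarrow> ('a \<times> 'g) list set set" where
  "IMG R e = iota R e ` carrier (Ge R e)"

definition rev_path :: "('v, 'e, 'a, 'g) ragg \<Rightarrow> 'e list \<Rightarrow> 'e list" where
  "rev_path R c = rev (map (bar R) c)"

definition femb :: "('v, 'e, 'a, 'g) ragg \<Rightarrow> 'e \<Rightarrow> 'a \<Rightarrow> 'a" where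
  "femb R e = (SOME f. inj_on f (VEdg R e) \<and> f ` VEdg R e \<subseteq> VGam R (src R e) \<and>
           (\<forall>a\<in>VEdg R e. \<forall>b\<in>VEdg R e. adjE R e a b \<longleftrightarrow> adjG R (src R e) (f a) (f b)) \<and>
           (\<forall>b\<in>VEdg R e. bij_betw (iota R e) (efactor R e b) (factor R (src R e) (f b))))"

lemma factor_qv: "factor R u a = (\<lambda>x. qv R u [(a, x)]) ` carrier (FV R u a)"
  by (simp add: factor_def qv_def gp_factor_gq)

lemma phiset_path_Nil[simp]: "phiset_path R [] A = A" by (simp add: phiset_path_def)
lemma phiset_path_Cons[simp]: "phiset_path R (e # c) A = phiset_path R c (phiset R e A)"
  by (simp add: phiset_path_def)
lemma phiset_path_append: "phiset_path R (c1 @ c2) A = phiset_path R c2 (phiset_path R c1 A)"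
  by (simp add: phiset_path_def)
lemma phielt_path_Nil[simp]: "phielt_path R [] g = g" by (simp add: phielt_path_def)
lemma phielt_path_Cons[simp]: "phielt_path R (e # c) g = phielt_path R c (phielt R e g)"
  by (simp add: phielt_path_def)
lemma phielt_path_append: "phielt_path R (c1 @ c2) g = phielt_path R c2 (phielt_path R c1 g)"
  by (simp add: phielt_path_def)

lemma phiset_empty[simp]: "phiset R e {} = {}" by (simp add: phiset_def)
lemma phiset_path_empty[simp]: "phiset_path R c {} = {}"
  by (induction c) auto

lemma arrow_path_append: "arrow_path R (c1 @ c2) u w \<longleftrightarrow> (\<exists>v. arrow_path R c1 u v \<and> arrow_path R c2 v w)"
  by (induction c1 arbitrary: u) auto

lemma arrow_path_snoc: "arrow_path R (c @ [e]) u w \<longleftrightarrow> (\<exists>v. arrow_path R c u v \<and> e \<in> Es R \<and> src R e = v \<and> tgt R e = w)"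
  by (simp add: arrow_path_append)

lemma arrow_path_Es: "arrow_path R c u v \<Longrightarrow> set c \<subseteq> Es R"
  by (induction c arbitrary: u) auto

locale RG =
  fixes R :: "('v, 'e, 'a, 'g) ragg"
  assumes ragg: "is_ragg R"
begin

lemma bar_Es[simp]: "e \<in> Es R \<Longrightarrow> bar R e \<in> Es R" using ragg by (simp add: is_ragg_def)
lemma bar_bar[simp]: "e \<in> Es R \<Longrightarrow> bar R (bar R e) = e" using ragg by (simp add: is_ragg_def)
lemma bar_neq: "e \<in> Es R \<Longrightarrow> bar R e \<noteq> e" using ragg by (simp add: is_ragg_def)
lemma src_bar[simp]: "e \<in> Es R \<Longrightarrow> src R (bar R e) = tgt R e" using ragg by (simp add: is_ragg_def)
lemma tgt_bar[simp]: "e \<in> Es R \<Longrightarrow> tgt R (bar R e) = src R e"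
  using ragg unfolding is_ragg_def by (metis bar_Es bar_bar)
lemma src_Vs[simp]: "e \<in> Es R \<Longrightarrow> src R e \<in> Vs R" using ragg by (simp add: is_ragg_def)
lemma tgt_Vs[simp]: "e \<in> Es R \<Longrightarrow> tgt R e \<in> Vs R" using ragg by (simp add: is_ragg_def)

lemma simpl_V: "u \<in> Vs R \<Longrightarrow> simplicial (VGam R u) (adjG R u)" using ragg by (simp add: is_ragg_def)
lemma group_FV: "u \<in> Vs R \<Longrightarrow> a \<in> VGam R u \<Longrightarrow> group (FV R u a)" using ragg by (simp add: is_ragg_def)
lemma nontriv_FV: "u \<in> Vs R \<Longrightarrow> a \<in> VGam R u \<Longrightarrow> carrier (FV R u a) \<noteq> {\<one>\<^bsub>FV R u a\<^esub>}"
  using ragg by (simp add: is_ragg_def)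
lemma simpl_E: "e \<in> Es R \<Longrightarrow> simplicial (VEdg R e) (adjE R e)" using ragg by (simp add: is_ragg_def)
lemma group_FE: "e \<in> Es R \<Longrightarrow> b \<in> VEdg R e \<Longrightarrow> group (FE R e b)" using ragg by (simp add: is_ragg_def)
lemma VEdg_bar: "e \<in> Es R \<Longrightarrow> VEdg R (bar R e) = VEdg R e" using ragg by (simp add: is_ragg_def)
lemma adjE_bar: "e \<in> Es R \<Longrightarrow> adjE R (bar R e) = adjE R e" using ragg by (simp add: is_ragg_def)
lemma FE_bar: "e \<in> Es R \<Longrightarrow> b \<in> VEdg R e \<Longrightarrow> FE R (bar R e) b = FE R e b" using ragg by (simp add: is_ragg_def)
lemma gemb: "e \<in> Es R \<Longrightarrow> graphical_embedding R e" using ragg by (simp add: is_ragg_def)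

lemma Ge_bar: "e \<in> Es R \<Longrightarrow> Ge R (bar R e) = Ge R e"
proof -
  assume e: "e \<in> Es R"
  have "graph_product (VEdg R e) (adjE R e) (FE R (bar R e)) = graph_product (VEdg R e) (adjE R e) (FE R e)"
    by (rule graph_product_cong) (simp add: FE_bar e)
  then show ?thesis unfolding Ge_def by (simp add: VEdg_bar adjE_bar e)
qed

lemma efactor_bar: "e \<in> Es R \<Longrightarrow> b \<in> VEdg R e \<Longrightarrow> efactor R (bar R e) b = efactor R e b"
proof -
  assume e: "e \<in> Es R" and b: "b \<in> VEdg R e"
  have "gp_factor (VEdg R e) (adjE R e) (FE R (bar R e)) b = gp_factor (VEdg R e) (adjE R e) (FE R e) b"
    by (rule gp_factor_cong) (simp_all add: FE_bar e b)
  then show ?thesis unfolding efactor_def by (simp add: VEdg_bar adjE_bar e)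
qed

lemma group_Gv: "u \<in> Vs R \<Longrightarrow> group (Gv R u)"
  unfolding Gv_def by (rule gp_group) (simp add: group_FV)

lemma group_Ge: "e \<in> Es R \<Longrightarrow> group (Ge R e)"
  unfolding Ge_def by (rule gp_group) (simp add: group_FE)

lemma iota_hom: "e \<in> Es R \<Longrightarrow> iota R e \<in> hom (Ge R e) (Gv R (src R e))"
  using gemb by (simp add: graphical_embedding_def)

lemma iota_inj: "e \<in> Es R \<Longrightarrow> inj_on (iota R e) (carrier (Ge R e))"
  using gemb by (simp add: graphical_embedding_def)

lemma iota_bar_hom: "e \<in> Es R \<Longrightarrow> iota R (bar R e) \<in> hom (Ge R e) (Gv R (tgt R e))"
  using iota_hom[of "bar R e"] by (simp add: Ge_bar)

lemma iota_bar_inj: "e \<in> Es R \<Longrightarrow> inj_on (iota R (bar R e)) (carrier (Ge R e))"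
  using iota_inj[of "bar R e"] by (simp add: Ge_bar)

lemma iota_closed: "e \<in> Es R \<Longrightarrow> g \<in> carrier (Ge R e) \<Longrightarrow> iota R e g \<in> carrier (Gv R (src R e))"
  using iota_hom by (auto simp: hom_def)

lemma iota_bar_closed: "e \<in> Es R \<Longrightarrow> g \<in> carrier (Ge R e) \<Longrightarrow> iota R (bar R e) g \<in> carrier (Gv R (tgt R e))"
  using iota_bar_hom by (auto simp: hom_def)

lemma iota_mult: "e \<in> Es R \<Longrightarrow> g \<in> carrier (Ge R e) \<Longrightarrow> h \<in> carrier (Ge R e) \<Longrightarrow>
   iota R e (g \<otimes>\<^bsub>Ge R e\<^esub> h) = iota R e g \<otimes>\<^bsub>Gv R (src R e)\<^esub> iota R e h"
  using iota_hom by (auto simp: hom_def)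

lemma iota_bar_mult: "e \<in> Es R \<Longrightarrow> g \<in> carrier (Ge R e) \<Longrightarrow> h \<in> carrier (Ge R e) \<Longrightarrow>
   iota R (bar R e) (g \<otimes>\<^bsub>Ge R e\<^esub> h) = iota R (bar R e) g \<otimes>\<^bsub>Gv R (tgt R e)\<^esub> iota R (bar R e) h"
  using iota_bar_hom by (auto simp: hom_def)

lemma femb_props: "e \<in> Es R \<Longrightarrow> inj_on (femb R e) (VEdg R e) \<and> femb R e ` VEdg R e \<subseteq> VGam R (src R e) \<and>
           (\<forall>b\<in>VEdg R e. bij_betw (iota R e) (efactor R e b) (factor R (src R e) (femb R e b)))"
proof -
  assume e: "e \<in> Es R"
  have "\<exists>f. inj_on f (VEdg R e) \<and> f ` VEdg R e \<subseteq> VGam R (src R e) \<and>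
           (\<forall>a\<in>VEdg R e. \<forall>b\<in>VEdg R e. adjE R e a b \<longleftrightarrow> adjG R (src R e) (f a) (f b)) \<and>
           (\<forall>b\<in>VEdg R e. bij_betw (iota R e) (efactor R e b) (factor R (src R e) (f b)))"
    using gemb[OF e] by (simp add: graphical_embedding_def)
  from someI_ex[OF this] show ?thesis unfolding femb_def by blast
qed

lemma phielt_iota: "e \<in> Es R \<Longrightarrow> g \<in> carrier (Ge R e) \<Longrightarrow> phielt R e (iota R e g) = iota R (bar R e) g"
  unfolding phielt_def using iota_inj by (simp add: inv_into_f_f)

lemma IMG_sub: "e \<in> Es R \<Longrightarrow> IMG R e \<subseteq> carrier (Gv R (src R e))"
  unfolding IMG_def using iota_closed by blast

lemma phiset_image: "e \<in> Es R \<Longrightarrow> A \<subseteq> IMG R e \<Longrightarrow> phiset R e A = phielt R e ` A"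
proof -
  assume e: "e \<in> Es R" and A: "A \<subseteq> IMG R e"
  have "phiset R e A = iota R (bar R e) ` (iota R e -` A \<inter> carrier (Ge R e))"
    using A by (simp add: phiset_def IMG_def)
  also have "\<dots> = phielt R e ` A"
  proof
    show "iota R (bar R e) ` (iota R e -` A \<inter> carrier (Ge R e)) \<subseteq> phielt R e ` A"
    proof
      fix x assume "x \<in> iota R (bar R e) ` (iota R e -` A \<inter> carrier (Ge R e))"
      then obtain s where s: "s \<in> carrier (Ge R e)" "iota R e s \<in> A" "x = iota R (bar R e) s" by blast
      then have "x = phielt R e (iota R e s)" using phielt_iota[OF e] by simp
      then show "x \<in> phielt R e ` A" using s by blast
    qed
    show "phielt R e ` A \<subseteq> iota R (bar R e) ` (iota R e -` A \<inter> carrier (Ge R e))"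
    proof
      fix x assume "x \<in> phielt R e ` A"
      then obtain g where g: "g \<in> A" "x = phielt R e g" by blast
      then obtain g0 where "g0 \<in> carrier (Ge R e)" "g = iota R e g0" using A by (auto simp: IMG_def)
      then show "x \<in> iota R (bar R e) ` (iota R e -` A \<inter> carrier (Ge R e))"
        using g phielt_iota[OF e] by auto
    qed
  qed
  finally show ?thesis .
qed

lemma phiset_ne: "phiset R e A \<noteq> {} \<Longrightarrow> A \<subseteq> IMG R e"
  by (auto simp: phiset_def IMG_def split: if_splits)

lemma edge_back: "e \<in> Es R \<Longrightarrow> g \<in> IMG R e \<Longrightarrow> phielt R e g \<in> IMG R (bar R e) \<and> phielt R (bar R e) (phielt R e g) = g"
proof -
  assume e: "e \<in> Es R" and g: "g \<in> IMG R e"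
  then obtain g0 where g0: "g0 \<in> carrier (Ge R e)" "g = iota R e g0" by (auto simp: IMG_def)
  have "phielt R e g = iota R (bar R e) g0" using g0 phielt_iota[OF e] by simp
  moreover have "phielt R (bar R e) (iota R (bar R e) g0) = iota R e g0"
    using phielt_iota[of "bar R e" g0] e g0 by (simp add: Ge_bar)
  ultimately show ?thesis using g0 e by (auto simp: IMG_def Ge_bar)
qed

lemma edge_mult: "e \<in> Es R \<Longrightarrow> g \<in> IMG R e \<Longrightarrow> h \<in> IMG R e \<Longrightarrow>
   g \<otimes>\<^bsub>Gv R (src R e)\<^esub> h \<in> IMG R e \<and>
   phielt R e (g \<otimes>\<^bsub>Gv R (src R e)\<^esub> h) = phielt R e g \<otimes>\<^bsub>Gv R (tgt R e)\<^esub> phielt R e h"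
proof -
  assume e: "e \<in> Es R" and g: "g \<in> IMG R e" and h: "h \<in> IMG R e"
  obtain g0 where g0: "g0 \<in> carrier (Ge R e)" "g = iota R e g0" using g by (auto simp: IMG_def)
  obtain h0 where h0: "h0 \<in> carrier (Ge R e)" "h = iota R e h0" using h by (auto simp: IMG_def)
  have c: "g0 \<otimes>\<^bsub>Ge R e\<^esub> h0 \<in> carrier (Ge R e)" using group_Ge[OF e] g0 h0 by (simp add: group.is_monoid monoid.m_closed)
  have "g \<otimes>\<^bsub>Gv R (src R e)\<^esub> h = iota R e (g0 \<otimes>\<^bsub>Ge R e\<^esub> h0)" using iota_mult e g0 h0 by simp
  then show ?thesis using c e g0 h0 by (simp add: IMG_def phielt_iota iota_bar_mult)
qed

lemma path_rev:
  "arrow_path R c u v \<Longrightarrow> phiset_path R c A \<noteq> {} \<Longrightarrow>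
   phiset_path R c A = phielt_path R c ` A \<and>
   phiset_path R (rev_path R c) (phiset_path R c A) = A \<and>
   (\<forall>g\<in>A. phielt_path R (rev_path R (c)) (phielt_path R c g) = g)"
proof (induction c arbitrary: u A)
  case Nil then show ?case by (simp add: rev_path_def)
next
  case (Cons e c)
  have e: "e \<in> Es R" "src R e = u" and c: "arrow_path R c (tgt R e) v" using Cons.prems by auto
  have ne: "phiset_path R c (phiset R e A) \<noteq> {}" using Cons.prems by simp
  then have A: "A \<subseteq> IMG R e" using phiset_ne phiset_path_empty by metis
  let ?A' = "phiset R e A"
  have A': "?A' = phielt R e ` A" using phiset_image[OF e(1) A] .
  have IH: "phiset_path R c ?A' = phielt_path R c ` ?A' \<and> phiset_path R (rev_path R c) (phiset_path R c ?A') = ?A' \<and>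
    (\<forall>g\<in>?A'. phielt_path R (rev_path R c) (phielt_path R c g) = g)" using Cons.IH[OF c ne] .
  have rp: "rev_path R (e # c) = rev_path R c @ [bar R e]" by (simp add: rev_path_def)
  have bk: "phiset R (bar R e) ?A' = A"
  proof -
    have sub: "?A' \<subseteq> IMG R (bar R e)" using A' A edge_back[OF e(1)] by auto
    have "phiset R (bar R e) ?A' = phielt R (bar R e) ` ?A'" using phiset_image[OF bar_Es[OF e(1)] sub] .
    also have "\<dots> = A"
    proof -
      have "\<forall>g\<in>A. phielt R (bar R e) (phielt R e g) = g" using A edge_back[OF e(1)] by blast
      then show ?thesis unfolding A' image_image by simp
    qed
    finally show ?thesis .
  qed
  show ?case
  proof (intro conjI)
    show "phiset_path R (e # c) A = phielt_path R (e # c) ` A" using IH A' by (simp add: image_image)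
    have h: "phiset_path R (rev_path R c) (phiset_path R c ?A') = ?A'" using IH by blast
    show "phiset_path R (rev_path R (e # c)) (phiset_path R (e # c) A) = A"
      unfolding rp phiset_path_append phiset_path_Cons h using bk by simp
    show "\<forall>g\<in>A. phielt_path R (rev_path R (e # c)) (phielt_path R (e # c) g) = g"
      using IH A' A edge_back[OF e(1)] by (auto simp: rp phielt_path_append)
  qed
qed

lemma path_mult:
  "arrow_path R c u v \<Longrightarrow> phiset_path R c A \<noteq> {} \<Longrightarrow> A \<subseteq> carrier (Gv R u) \<Longrightarrow>
   (\<forall>g\<in>A. \<forall>h\<in>A. g \<otimes>\<^bsub>Gv R u\<^esub> h \<in> A) \<Longrightarrow> g \<in> A \<Longrightarrow> h \<in> A \<Longrightarrow>
   phielt_path R c (g \<otimes>\<^bsub>Gv R u\<^esub> h) = phielt_path R c g \<otimes>\<^bsub>Gv R v\<^esub> phielt_path R c h"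
proof (induction c arbitrary: u A g h)
  case Nil
  have "u = v" using Nil.prems(1) by simp
  then show ?case by simp
next
  case (Cons e c)
  have e: "e \<in> Es R" "src R e = u" and c: "arrow_path R c (tgt R e) v" using Cons.prems(1) by auto
  have ne: "phiset_path R c (phiset R e A) \<noteq> {}" using Cons.prems(2) by simp
  then have A: "A \<subseteq> IMG R e" using phiset_ne phiset_path_empty by metis
  let ?A' = "phiset R e A"
  have A': "?A' = phielt R e ` A" using phiset_image[OF e(1) A] .
  have sub: "?A' \<subseteq> carrier (Gv R (tgt R e))"
  proof -
    have "IMG R (bar R e) \<subseteq> carrier (Gv R (tgt R e))" using IMG_sub[OF bar_Es[OF e(1)]] e(1) by simp
    moreover have "phielt R e g \<in> IMG R (bar R e)" if "g \<in> A" for g using that A edge_back[OF e(1)] by blast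
    ultimately show ?thesis unfolding A' by blast
  qed
  have cl: "\<forall>x\<in>?A'. \<forall>y\<in>?A'. x \<otimes>\<^bsub>Gv R (tgt R e)\<^esub> y \<in> ?A'"
  proof (intro ballI)
    fix x y assume "x \<in> ?A'" "y \<in> ?A'"
    then obtain g' h' where gh: "g' \<in> A" "h' \<in> A" "x = phielt R e g'" "y = phielt R e h'" using A' by auto
    have gi: "g' \<in> IMG R e" "h' \<in> IMG R e" using gh A by auto
    have "x \<otimes>\<^bsub>Gv R (tgt R e)\<^esub> y = phielt R e (g' \<otimes>\<^bsub>Gv R u\<^esub> h')"
      using edge_mult[OF e(1) gi] gh e(2) by simp
    moreover have "g' \<otimes>\<^bsub>Gv R u\<^esub> h' \<in> A" using Cons.prems(4) gh by blast
    ultimately show "x \<otimes>\<^bsub>Gv R (tgt R e)\<^esub> y \<in> ?A'" using A' by blast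
  qed
  have gi: "g \<in> IMG R e" "h \<in> IMG R e" using Cons.prems(5,6) A by auto
  have 1: "phielt R e (g \<otimes>\<^bsub>Gv R u\<^esub> h) = phielt R e g \<otimes>\<^bsub>Gv R (tgt R e)\<^esub> phielt R e h"
    using edge_mult[OF e(1) gi] e(2) by simp
  have 2: "phielt R e g \<in> ?A'" "phielt R e h \<in> ?A'" using A' Cons.prems(5,6) by auto
  have 3: "phielt_path R c (phielt R e g \<otimes>\<^bsub>Gv R (tgt R e)\<^esub> phielt R e h) =
      phielt_path R c (phielt R e g) \<otimes>\<^bsub>Gv R v\<^esub> phielt_path R c (phielt R e h)"
    by (rule Cons.IH[OF c ne sub cl 2])
  show ?case unfolding phielt_path_Cons 1 3 ..
qed

lemma arrow_path_rev: "arrow_path R c u v \<Longrightarrow> arrow_path R (rev_path R c) v u"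
  by (induction c arbitrary: u) (auto simp: rev_path_def arrow_path_append)

lemma rev_rev_path: "arrow_path R c u v \<Longrightarrow> rev_path R (rev_path R c) = c"
proof -
  assume "arrow_path R c u v"
  then have "set c \<subseteq> Es R" by (rule arrow_path_Es)
  then show ?thesis by (induction c) (auto simp: rev_path_def)
qed

end


definition goodp :: "('v, 'e, 'a, 'g) ragg \<Rightarrow> 'v \<Rightarrow> 'a \<Rightarrow> 'e list \<Rightarrow> 'v \<Rightarrow> 'a \<Rightarrow> bool" where
  "goodp R u a c v b = (arrow_path R c u v \<and> b \<in> VGam R v \<and> phiset_path R c (factor R u a) = factor R v b)"

definition SS :: "('v, 'e, 'a, 'g) ragg \<Rightarrow> 'v \<times> 'a \<Rightarrow> 'v \<times> 'a \<Rightarrow> bool" where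
  "SS R x y = (sim R x y \<or> sim R y x)"

lemma psi_class_SS: "psi_class R p = {q. (SS R)\<^sup>*\<^sup>* p q}"
  by (simp add: psi_class_def SS_def[abs_def])

lemma class_refl: "p \<in> psi_class R p"
  by (simp add: psi_class_SS)

lemma SS_sym: "(SS R)\<^sup>*\<^sup>* p q \<Longrightarrow> (SS R)\<^sup>*\<^sup>* q p"
proof (induction rule: rtranclp_induct)
  case base then show ?case by simp
next
  case (step y z)
  then have "SS R z y" by (auto simp: SS_def)
  then show ?case using step(3) by (rule converse_rtranclp_into_rtranclp)
qed

lemma class_eq: "q \<in> psi_class R p \<Longrightarrow> psi_class R q = psi_class R p"
  unfolding psi_class_SS using SS_sym rtranclp_trans by (metis (mono_tags, lifting) Collect_cong mem_Collect_eq)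

definition rep :: "('v \<times> 'a) set \<Rightarrow> 'v \<times> 'a" where
  "rep C = (SOME p. p \<in> C)"

lemma rep_in: "rep (psi_class R p) \<in> psi_class R p"
  unfolding rep_def using class_refl by (metis someI_ex)

lemma ap_Vs: "arrow_path R c u v \<Longrightarrow> u \<in> Vs R \<Longrightarrow> is_ragg R \<Longrightarrow> v \<in> Vs R"
  by (induction c arbitrary: u) (auto simp: is_ragg_def)

context RG
begin

lemma fac_sub: "u \<in> Vs R \<Longrightarrow> a \<in> VGam R u \<Longrightarrow> factor R u a \<subseteq> carrier (Gv R u)"
  unfolding factor_def Gv_def by (rule gp_factor_sub)

lemma fac_ne: "u \<in> Vs R \<Longrightarrow> a \<in> VGam R u \<Longrightarrow> factor R u a \<noteq> {}"
  unfolding factor_def by (rule gp_factor_ne) (simp add: group_FV)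

lemma qv_fac_mult: "u \<in> Vs R \<Longrightarrow> a \<in> VGam R u \<Longrightarrow> x \<in> carrier (FV R u a) \<Longrightarrow> y \<in> carrier (FV R u a) \<Longrightarrow>
  qv R u [(a, x)] \<otimes>\<^bsub>Gv R u\<^esub> qv R u [(a, y)] = qv R u [(a, x \<otimes>\<^bsub>FV R u a\<^esub> y)]"
  unfolding qv_def Gv_def by (rule gq_fac_mult) (simp_all add: group_FV)

lemma fac_closed: "u \<in> Vs R \<Longrightarrow> a \<in> VGam R u \<Longrightarrow> \<forall>g\<in>factor R u a. \<forall>h\<in>factor R u a. g \<otimes>\<^bsub>Gv R u\<^esub> h \<in> factor R u a"
proof (intro ballI)
  fix g h assume A: "u \<in> Vs R" "a \<in> VGam R u" "g \<in> factor R u a" "h \<in> factor R u a"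
  then obtain x y where xy: "x \<in> carrier (FV R u a)" "y \<in> carrier (FV R u a)" "g = qv R u [(a, x)]" "h = qv R u [(a, y)]"
    by (auto simp: factor_qv)
  have c: "x \<otimes>\<^bsub>FV R u a\<^esub> y \<in> carrier (FV R u a)"
    using xy group_FV[OF A(1,2)] by (simp add: group.is_monoid monoid.m_closed)
  have "g \<otimes>\<^bsub>Gv R u\<^esub> h = qv R u [(a, x \<otimes>\<^bsub>FV R u a\<^esub> y)]" using qv_fac_mult A xy by simp
  then show "g \<otimes>\<^bsub>Gv R u\<^esub> h \<in> factor R u a" using c by (simp add: factor_qv)
qed

lemma qv_fac_inj: "u \<in> Vs R \<Longrightarrow> a \<in> VGam R u \<Longrightarrow> x \<in> carrier (FV R u a) \<Longrightarrow> y \<in> carrier (FV R u a) \<Longrightarrow>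
   qv R u [(a, x)] = qv R u [(a, y)] \<Longrightarrow> x = y"
  unfolding qv_def by (rule gq_fac_inj) (simp_all add: group_FV simpl_V)

lemma fac_dist: "u \<in> Vs R \<Longrightarrow> a \<in> VGam R u \<Longrightarrow> b \<in> VGam R u \<Longrightarrow> factor R u a = factor R u b \<Longrightarrow> a = b"
  unfolding factor_def using gp_factor_dist simpl_V group_FV nontriv_FV by metis

lemma ap_Vs': "arrow_path R c u v \<Longrightarrow> u \<in> Vs R \<Longrightarrow> v \<in> Vs R"
  using ap_Vs ragg by metis

lemma goodp_props: "goodp R u a c v b \<Longrightarrow> u \<in> Vs R \<Longrightarrow> a \<in> VGam R u \<Longrightarrow>
   factor R v b = phielt_path R c ` factor R u a \<and> goodp R v b (rev_path R c) u a \<and>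
   (\<forall>g\<in>factor R u a. phielt_path R (rev_path R c) (phielt_path R c g) = g)"
proof -
  assume A: "goodp R u a c v b" "u \<in> Vs R" "a \<in> VGam R u"
  have ap: "arrow_path R c u v" and b: "b \<in> VGam R v" and eq: "phiset_path R c (factor R u a) = factor R v b"
    using A(1) by (auto simp: goodp_def)
  have v: "v \<in> Vs R" using ap_Vs' ap A(2) .
  have ne: "phiset_path R c (factor R u a) \<noteq> {}" using eq fac_ne[OF v b] by simp
  note P = path_rev[OF ap ne]
  have 1: "factor R v b = phielt_path R c ` factor R u a" using P eq by simp
  have p2: "phiset_path R (rev_path R c) (phiset_path R c (factor R u a)) = factor R u a" using P by blast
  have 2: "phiset_path R (rev_path R c) (factor R v b) = factor R u a" using p2 unfolding eq .
  have 3: "goodp R v b (rev_path R c) u a" unfolding goodp_def using 2 arrow_path_rev[OF ap] A(3) by blast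
  show ?thesis using 1 3 P by blast
qed

lemma goodp_mem: "goodp R u a c v b \<Longrightarrow> u \<in> Vs R \<Longrightarrow> a \<in> VGam R u \<Longrightarrow> g \<in> factor R u a \<Longrightarrow>
  phielt_path R c g \<in> factor R v b"
proof -
  assume A: "goodp R u a c v b" "u \<in> Vs R" "a \<in> VGam R u" "g \<in> factor R u a"
  have "factor R v b = phielt_path R c ` factor R u a" using goodp_props[OF A(1,2,3)] by blast
  then show ?thesis using A(4) by simp
qed

lemma goodp_inj: "goodp R u a c v b \<Longrightarrow> u \<in> Vs R \<Longrightarrow> a \<in> VGam R u \<Longrightarrow> g \<in> factor R u a \<Longrightarrow>
  g' \<in> factor R u a \<Longrightarrow> phielt_path R c g = phielt_path R c g' \<Longrightarrow> g = g'"
proof -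
  assume A: "goodp R u a c v b" "u \<in> Vs R" "a \<in> VGam R u" "g \<in> factor R u a" "g' \<in> factor R u a"
    "phielt_path R c g = phielt_path R c g'"
  have "\<forall>g\<in>factor R u a. phielt_path R (rev_path R c) (phielt_path R c g) = g" using goodp_props[OF A(1,2,3)] by blast
  then show ?thesis using A(4,5,6) by metis
qed

lemma goodp_surj: "goodp R u a c v b \<Longrightarrow> u \<in> Vs R \<Longrightarrow> a \<in> VGam R u \<Longrightarrow> h \<in> factor R v b \<Longrightarrow>
  \<exists>g\<in>factor R u a. phielt_path R c g = h"
proof -
  assume A: "goodp R u a c v b" "u \<in> Vs R" "a \<in> VGam R u" "h \<in> factor R v b"
  have "factor R v b = phielt_path R c ` factor R u a" using goodp_props[OF A(1,2,3)] by blast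
  then show ?thesis using A(4) by auto
qed

lemma goodp_mult: "goodp R u a c v b \<Longrightarrow> u \<in> Vs R \<Longrightarrow> a \<in> VGam R u \<Longrightarrow> g \<in> factor R u a \<Longrightarrow> h \<in> factor R u a \<Longrightarrow>
  phielt_path R c (g \<otimes>\<^bsub>Gv R u\<^esub> h) = phielt_path R c g \<otimes>\<^bsub>Gv R v\<^esub> phielt_path R c h"
proof -
  assume A: "goodp R u a c v b" "u \<in> Vs R" "a \<in> VGam R u" "g \<in> factor R u a" "h \<in> factor R u a"
  have ap: "arrow_path R c u v" and b: "b \<in> VGam R v" and eq: "phiset_path R c (factor R u a) = factor R v b"
    using A(1) by (auto simp: goodp_def)
  have v: "v \<in> Vs R" using ap_Vs' ap A(2) .
  have ne: "phiset_path R c (factor R u a) \<noteq> {}" using eq fac_ne[OF v b] by simp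
  show ?thesis by (rule path_mult[OF ap ne fac_sub[OF A(2,3)] fac_closed[OF A(2,3)] A(4,5)])
qed

lemma goodp_append: "goodp R u a c v b \<Longrightarrow> goodp R v b c' w d \<Longrightarrow> goodp R u a (c @ c') w d"
  by (auto simp: goodp_def arrow_path_append phiset_path_append)

lemma goodp_Nil: "a \<in> VGam R u \<Longrightarrow> goodp R u a [] u a"
  by (simp add: goodp_def)

lemma sim_goodp: "sim R p q \<Longrightarrow> \<exists>e. goodp R (fst p) (snd p) [e] (fst q) (snd q)"
  unfolding sim_def goodp_def by auto

lemma class_path: "u \<in> Vs R \<Longrightarrow> a \<in> VGam R u \<Longrightarrow> q \<in> psi_class R (u, a) \<Longrightarrow>
   fst q \<in> Vs R \<and> snd q \<in> VGam R (fst q) \<and> (\<exists>c. goodp R u a c (fst q) (snd q))"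
proof -
  assume u: "u \<in> Vs R" and a: "a \<in> VGam R u" and q: "q \<in> psi_class R (u, a)"
  from q have "(SS R)\<^sup>*\<^sup>* (u, a) q" by (simp add: psi_class_SS)
  then show ?thesis
  proof (induction rule: rtranclp_induct)
    case base then show ?case using u a goodp_Nil by auto
  next
    case (step y z)
    then obtain c where y: "fst y \<in> Vs R" "snd y \<in> VGam R (fst y)" "goodp R u a c (fst y) (snd y)" by blast
    from step(2) show ?case unfolding SS_def
    proof
      assume "sim R y z"
      then obtain e where e: "goodp R (fst y) (snd y) [e] (fst z) (snd z)" using sim_goodp by blast
      have "arrow_path R [e] (fst y) (fst z)" using e by (simp add: goodp_def)
      then have "fst z \<in> Vs R" using tgt_Vs by (metis arrow_path.simps)
      then show ?thesis using e goodp_append[OF y(3) e] by (auto simp: goodp_def)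
    next
      assume "sim R z y"
      then obtain e where e: "goodp R (fst z) (snd z) [e] (fst y) (snd y)" using sim_goodp by blast
      have z: "fst z \<in> Vs R" "snd z \<in> VGam R (fst z)" using \<open>sim R z y\<close> src_Vs unfolding sim_def by auto
      have e': "goodp R (fst y) (snd y) (rev_path R [e]) (fst z) (snd z)"
        using goodp_props[OF e z] by blast
      show ?thesis using z goodp_append[OF y(3) e'] by blast
    qed
  qed
qed

end

locale RG4 = RG +
  assumes ci: "cond_i R" and cii: "cond_ii R" and ciii: "cond_iii R" and civ: "cond_iv R"
begin

lemma UNIQ: "u \<in> Vs R \<Longrightarrow> a \<in> VGam R u \<Longrightarrow> goodp R u a c v b \<Longrightarrow> goodp R u a c' v b \<Longrightarrow> g \<in> factor R u a \<Longrightarrow>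
   phielt_path R c g = phielt_path R c' g"
proof -
  assume u: "u \<in> Vs R" and a: "a \<in> VGam R u" and c: "goodp R u a c v b" and c': "goodp R u a c' v b"
    and g: "g \<in> factor R u a"
  have v: "v \<in> Vs R" "b \<in> VGam R v" using c ap_Vs' u by (auto simp: goodp_def)
  note P' = goodp_props[OF c' u a]
  have r: "goodp R v b (rev_path R c') u a" using P' by blast
  note Q = goodp_props[OF r v]
  have rr: "rev_path R (rev_path R c') = c'" using c' rev_rev_path by (auto simp: goodp_def)
  let ?d = "c @ rev_path R c'"
  have d: "goodp R u a ?d u a" using goodp_append[OF c r] .
  then have "restrict (phielt_path R ?d) (factor R u a) \<in> Phi R u (factor R u a)"
    unfolding Phi_def goodp_def by blast
  then have "restrict (phielt_path R ?d) (factor R u a) = restrict id (factor R u a)"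
    using civ u a by (simp add: cond_iv_def)
  then have "phielt_path R ?d g = g" using g by (metis id_apply restrict_apply')
  then have 1: "phielt_path R (rev_path R c') (phielt_path R c g) = g" by (simp add: phielt_path_append)
  have h: "phielt_path R c g \<in> factor R v b" using goodp_mem[OF c u a g] .
  have "phielt_path R c' (phielt_path R (rev_path R c') (phielt_path R c g)) = phielt_path R c g"
    using Q h rr by metis
  then show ?thesis using 1 by simp
qed

lemma SAMEFAC: "v \<in> Vs R \<Longrightarrow> a \<in> VGam R v \<Longrightarrow> (v, a') \<in> psi_class R (v, a) \<Longrightarrow> factor R v a' = factor R v a"
proof -
  assume v: "v \<in> Vs R" and a: "a \<in> VGam R v" and q: "(v, a') \<in> psi_class R (v, a)"
  obtain c where c: "goodp R v a c v a'" and a': "a' \<in> VGam R v" using class_path[OF v a q] by auto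
  have "phiset_path R c (factor R v a) \<in> {{}, factor R v a}"
    using ci v a c unfolding cond_i_def goodp_def by blast
  then show ?thesis using c fac_ne[OF v a'] by (auto simp: goodp_def)
qed

lemma CLASSNEQ: "u \<in> Vs R \<Longrightarrow> a \<in> VGam R u \<Longrightarrow> b \<in> VGam R u \<Longrightarrow> a \<noteq> b \<Longrightarrow> psi_class R (u, a) \<noteq> psi_class R (u, b)"
proof
  assume A: "u \<in> Vs R" "a \<in> VGam R u" "b \<in> VGam R u" "a \<noteq> b" "psi_class R (u, a) = psi_class R (u, b)"
  then have "(u, b) \<in> psi_class R (u, a)" using class_refl by metis
  then have "factor R u b = factor R u a" using SAMEFAC A by blast
  then show False using fac_dist A by metis
qed

lemma ADJ: "u \<in> Vs R \<Longrightarrow> v \<in> Vs R \<Longrightarrow> a1 \<in> VGam R u \<Longrightarrow> a2 \<in> VGam R u \<Longrightarrow> adjG R u a1 a2 \<Longrightarrow>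
  b1 \<in> VGam R v \<Longrightarrow> b2 \<in> VGam R v \<Longrightarrow> (v, b1) \<in> psi_class R (u, a1) \<Longrightarrow> (v, b2) \<in> psi_class R (u, a2) \<Longrightarrow>
  adjG R v b1 b2"
proof (rule ccontr)
  assume A: "u \<in> Vs R" "v \<in> Vs R" "a1 \<in> VGam R u" "a2 \<in> VGam R u" "adjG R u a1 a2"
    "b1 \<in> VGam R v" "b2 \<in> VGam R v" "(v, b1) \<in> psi_class R (u, a1)" "(v, b2) \<in> psi_class R (u, a2)"
    and N: "\<not> adjG R v b1 b2"
  have ne: "a1 \<noteq> a2" using A(5) simpl_V[OF A(1)] by (auto simp: simplicial_def)
  obtain \<alpha> where al: "goodp R u a1 \<alpha> v b1" using class_path[OF A(1,3,8)] by auto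
  obtain \<beta> where be: "goodp R u a2 \<beta> v b2" using class_path[OF A(1,4,9)] by auto
  show False
  proof (cases "b1 = b2")
    case True
    have "psi_class R (v, b1) = psi_class R (u, a1)" using class_eq A(8) by metis
    moreover have "psi_class R (v, b2) = psi_class R (u, a2)" using class_eq A(9) by metis
    ultimately show False using CLASSNEQ[OF A(1,3,4) ne] True by simp
  next
    case False
    then show False using cii A N ne al be unfolding cond_ii_def goodp_def by blast
  qed
qed

end


definition rho :: "('v, 'e, 'a, 'g) ragg \<Rightarrow> 'v \<Rightarrow> 'a \<Rightarrow> 'g \<Rightarrow> 'g" where
  "rho R u a x = (let p = rep (psi_class R (u, a)) in SOME y. y \<in> carrier (FV R (fst p) (snd p)) \<and>
     (\<exists>c. goodp R u a c (fst p) (snd p) \<and> phielt_path R c (qv R u [(a, x)]) = qv R (fst p) [(snd p, y)]))"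

definition sigma :: "('v, 'e, 'a, 'g) ragg \<Rightarrow> ('v \<times> 'a) set \<Rightarrow> 'v \<Rightarrow> 'g \<Rightarrow> ('a \<times> 'g) list set" where
  "sigma R C v y = (SOME g. \<exists>a. (v, a) \<in> C \<and> a \<in> VGam R v \<and> g \<in> factor R v a \<and>
     (\<forall>c. goodp R v a c (fst (rep C)) (snd (rep C)) \<longrightarrow> phielt_path R c g = qv R (fst (rep C)) [(snd (rep C), y)]))"

context RG4
begin

lemma rep_props: "u \<in> Vs R \<Longrightarrow> a \<in> VGam R u \<Longrightarrow> p = rep (psi_class R (u, a)) \<Longrightarrow>
  fst p \<in> Vs R \<and> snd p \<in> VGam R (fst p) \<and> (\<exists>c. goodp R u a c (fst p) (snd p))"
  using class_path rep_in by metis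

lemma rho_spec: "u \<in> Vs R \<Longrightarrow> a \<in> VGam R u \<Longrightarrow> x \<in> carrier (FV R u a) \<Longrightarrow> p = rep (psi_class R (u, a)) \<Longrightarrow>
  rho R u a x \<in> carrier (FV R (fst p) (snd p)) \<and>
  (\<forall>c. goodp R u a c (fst p) (snd p) \<longrightarrow> phielt_path R c (qv R u [(a, x)]) = qv R (fst p) [(snd p, rho R u a x)])"
proof -
  assume u: "u \<in> Vs R" and a: "a \<in> VGam R u" and x: "x \<in> carrier (FV R u a)" and p: "p = rep (psi_class R (u, a))"
  obtain c0 where p1: "fst p \<in> Vs R" "snd p \<in> VGam R (fst p)" and c0: "goodp R u a c0 (fst p) (snd p)"
    using rep_props[OF u a p] by blast
  have g: "qv R u [(a, x)] \<in> factor R u a" using x by (simp add: factor_qv)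
  have "phielt_path R c0 (qv R u [(a, x)]) \<in> factor R (fst p) (snd p)" using goodp_mem[OF c0 u a g] .
  then obtain y0 where y0: "y0 \<in> carrier (FV R (fst p) (snd p))"
    "phielt_path R c0 (qv R u [(a, x)]) = qv R (fst p) [(snd p, y0)]" by (auto simp: factor_qv)
  let ?P = "\<lambda>y. y \<in> carrier (FV R (fst p) (snd p)) \<and>
     (\<exists>c. goodp R u a c (fst p) (snd p) \<and> phielt_path R c (qv R u [(a, x)]) = qv R (fst p) [(snd p, y)])"
  have ex: "\<exists>y. ?P y" using y0 c0 by blast
  have r: "rho R u a x = (SOME y. ?P y)" unfolding rho_def p Let_def ..
  have P: "?P (rho R u a x)" unfolding r using someI_ex[OF ex] .
  then obtain c1 where c1: "goodp R u a c1 (fst p) (snd p)" "phielt_path R c1 (qv R u [(a, x)]) = qv R (fst p) [(snd p, rho R u a x)]"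
    by blast
  show ?thesis
  proof (intro conjI allI impI)
    show "rho R u a x \<in> carrier (FV R (fst p) (snd p))" using P by blast
    fix c assume c: "goodp R u a c (fst p) (snd p)"
    show "phielt_path R c (qv R u [(a, x)]) = qv R (fst p) [(snd p, rho R u a x)]"
      using UNIQ[OF u a c c1(1) g] c1(2) by simp
  qed
qed

lemma rho_mult: "u \<in> Vs R \<Longrightarrow> a \<in> VGam R u \<Longrightarrow> x \<in> carrier (FV R u a) \<Longrightarrow> y \<in> carrier (FV R u a) \<Longrightarrow>
  p = rep (psi_class R (u, a)) \<Longrightarrow>
  rho R u a (x \<otimes>\<^bsub>FV R u a\<^esub> y) = rho R u a x \<otimes>\<^bsub>FV R (fst p) (snd p)\<^esub> rho R u a y"
proof -
  assume u: "u \<in> Vs R" and a: "a \<in> VGam R u" and x: "x \<in> carrier (FV R u a)" and y: "y \<in> carrier (FV R u a)"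
    and p: "p = rep (psi_class R (u, a))"
  obtain c0 where p1: "fst p \<in> Vs R" "snd p \<in> VGam R (fst p)" and c0: "goodp R u a c0 (fst p) (snd p)"
    using rep_props[OF u a p] by blast
  have xy: "x \<otimes>\<^bsub>FV R u a\<^esub> y \<in> carrier (FV R u a)" using group_FV[OF u a] x y by (simp add: group.is_monoid monoid.m_closed)
  note sx = rho_spec[OF u a x p] and sy = rho_spec[OF u a y p] and sxy = rho_spec[OF u a xy p]
  have gx: "qv R u [(a, x)] \<in> factor R u a" and gy: "qv R u [(a, y)] \<in> factor R u a" using x y by (auto simp: factor_qv)
  have "qv R (fst p) [(snd p, rho R u a (x \<otimes>\<^bsub>FV R u a\<^esub> y))] = phielt_path R c0 (qv R u [(a, x \<otimes>\<^bsub>FV R u a\<^esub> y)])"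
    using sxy c0 by simp
  also have "\<dots> = phielt_path R c0 (qv R u [(a, x)] \<otimes>\<^bsub>Gv R u\<^esub> qv R u [(a, y)])"
    using qv_fac_mult[OF u a x y] by simp
  also have "\<dots> = phielt_path R c0 (qv R u [(a, x)]) \<otimes>\<^bsub>Gv R (fst p)\<^esub> phielt_path R c0 (qv R u [(a, y)])"
    using goodp_mult[OF c0 u a gx gy] .
  also have "\<dots> = qv R (fst p) [(snd p, rho R u a x)] \<otimes>\<^bsub>Gv R (fst p)\<^esub> qv R (fst p) [(snd p, rho R u a y)]"
    using sx sy c0 by simp
  also have "\<dots> = qv R (fst p) [(snd p, rho R u a x \<otimes>\<^bsub>FV R (fst p) (snd p)\<^esub> rho R u a y)]"
    using qv_fac_mult p1 sx sy by simp
  finally have e: "qv R (fst p) [(snd p, rho R u a (x \<otimes>\<^bsub>FV R u a\<^esub> y))] =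
      qv R (fst p) [(snd p, rho R u a x \<otimes>\<^bsub>FV R (fst p) (snd p)\<^esub> rho R u a y)]" .
  have c2: "rho R u a x \<otimes>\<^bsub>FV R (fst p) (snd p)\<^esub> rho R u a y \<in> carrier (FV R (fst p) (snd p))"
    using group_FV[OF p1] sx sy by (simp add: group.is_monoid monoid.m_closed)
  show ?thesis using qv_fac_inj[OF p1 _ c2 e] sxy by simp
qed

lemma rho_one: "u \<in> Vs R \<Longrightarrow> a \<in> VGam R u \<Longrightarrow> p = rep (psi_class R (u, a)) \<Longrightarrow>
  rho R u a \<one>\<^bsub>FV R u a\<^esub> = \<one>\<^bsub>FV R (fst p) (snd p)\<^esub>"
proof -
  assume u: "u \<in> Vs R" and a: "a \<in> VGam R u" and p: "p = rep (psi_class R (u, a))"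
  have p1: "fst p \<in> Vs R" "snd p \<in> VGam R (fst p)" using rep_props[OF u a p] by blast+
  have o: "\<one>\<^bsub>FV R u a\<^esub> \<in> carrier (FV R u a)" using group_FV[OF u a] by (simp add: group.is_monoid monoid.one_closed)
  have m: "rho R u a \<one>\<^bsub>FV R u a\<^esub> = rho R u a \<one>\<^bsub>FV R u a\<^esub> \<otimes>\<^bsub>FV R (fst p) (snd p)\<^esub> rho R u a \<one>\<^bsub>FV R u a\<^esub>"
    using rho_mult[OF u a o o p] group_FV[OF u a] by (simp add: group.is_monoid monoid.l_one o)
  have c: "rho R u a \<one>\<^bsub>FV R u a\<^esub> \<in> carrier (FV R (fst p) (snd p))" using rho_spec[OF u a o p] by blast
  show ?thesis using m c group.l_cancel_one'[OF group_FV[OF p1] c c] by simp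
qed

lemma rho_edge: "e \<in> Es R \<Longrightarrow> a \<in> VGam R (src R e) \<Longrightarrow> b \<in> VGam R (tgt R e) \<Longrightarrow>
  phiset R e (factor R (src R e) a) = factor R (tgt R e) b \<Longrightarrow>
  x \<in> carrier (FV R (src R e) a) \<Longrightarrow> y \<in> carrier (FV R (tgt R e) b) \<Longrightarrow>
  phielt R e (qv R (src R e) [(a, x)]) = qv R (tgt R e) [(b, y)] \<Longrightarrow>
  psi_class R (tgt R e, b) = psi_class R (src R e, a) \<and> rho R (tgt R e) b y = rho R (src R e) a x"
proof -
  assume e: "e \<in> Es R" and a: "a \<in> VGam R (src R e)" and b: "b \<in> VGam R (tgt R e)"
    and f: "phiset R e (factor R (src R e) a) = factor R (tgt R e) b"
    and x: "x \<in> carrier (FV R (src R e) a)" and y: "y \<in> carrier (FV R (tgt R e) b)"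
    and el: "phielt R e (qv R (src R e) [(a, x)]) = qv R (tgt R e) [(b, y)]"
  have s: "sim R (src R e, a) (tgt R e, b)" unfolding sim_def using e a b f by auto
  then have "(tgt R e, b) \<in> psi_class R (src R e, a)" unfolding psi_class_def by auto
  then have cl: "psi_class R (tgt R e, b) = psi_class R (src R e, a)" by (rule class_eq)
  define p where "p = rep (psi_class R (src R e, a))"
  have pt: "p = rep (psi_class R (tgt R e, b))" using cl p_def by simp
  have sv: "src R e \<in> Vs R" "tgt R e \<in> Vs R" using e by auto
  obtain c where c: "goodp R (tgt R e) b c (fst p) (snd p)" and p1: "fst p \<in> Vs R" "snd p \<in> VGam R (fst p)"
    using rep_props[OF sv(2) b pt] by blast
  have g1: "goodp R (src R e) a [e] (tgt R e) b" using e b f by (simp add: goodp_def)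
  have ec: "goodp R (src R e) a (e # c) (fst p) (snd p)" using goodp_append[OF g1 c] by simp
  have "phielt_path R (e # c) (qv R (src R e) [(a, x)]) = qv R (fst p) [(snd p, rho R (src R e) a x)]"
    using rho_spec[OF sv(1) a x p_def] ec by blast
  then have "qv R (fst p) [(snd p, rho R (src R e) a x)] = phielt_path R (e # c) (qv R (src R e) [(a, x)])" by simp
  also have "\<dots> = phielt_path R c (qv R (tgt R e) [(b, y)])" using el by simp
  also have "\<dots> = qv R (fst p) [(snd p, rho R (tgt R e) b y)]" using rho_spec[OF sv(2) b y pt] c by simp
  finally have "qv R (fst p) [(snd p, rho R (src R e) a x)] = qv R (fst p) [(snd p, rho R (tgt R e) b y)]" .
  then have "rho R (src R e) a x = rho R (tgt R e) b y"
    using qv_fac_inj[OF p1] rho_spec[OF sv(1) a x p_def] rho_spec[OF sv(2) b y pt] by blast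
  then show ?thesis using cl by simp
qed

lemma sigma_spec: "v \<in> Vs R \<Longrightarrow> a \<in> VGam R v \<Longrightarrow> C = psi_class R (v, a) \<Longrightarrow> p = rep C \<Longrightarrow>
  y \<in> carrier (FV R (fst p) (snd p)) \<Longrightarrow>
  sigma R C v y \<in> factor R v a \<and> (\<forall>c. goodp R v a c (fst p) (snd p) \<longrightarrow> phielt_path R c (sigma R C v y) = qv R (fst p) [(snd p, y)])"
proof -
  assume v: "v \<in> Vs R" and a: "a \<in> VGam R v" and C: "C = psi_class R (v, a)" and p: "p = rep C"
    and y: "y \<in> carrier (FV R (fst p) (snd p))"
  obtain c0 where p1: "fst p \<in> Vs R" "snd p \<in> VGam R (fst p)" and c0: "goodp R v a c0 (fst p) (snd p)"
    using rep_props[OF v a] C p by blast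
  have h: "qv R (fst p) [(snd p, y)] \<in> factor R (fst p) (snd p)" using y by (simp add: factor_qv)
  obtain g0 where g0: "g0 \<in> factor R v a" "phielt_path R c0 g0 = qv R (fst p) [(snd p, y)]"
    using goodp_surj[OF c0 v a h] by blast
  let ?P = "\<lambda>g. \<exists>a. (v, a) \<in> C \<and> a \<in> VGam R v \<and> g \<in> factor R v a \<and>
     (\<forall>c. goodp R v a c (fst (rep C)) (snd (rep C)) \<longrightarrow> phielt_path R c g = qv R (fst (rep C)) [(snd (rep C), y)])"
  have "?P g0"
  proof (intro exI conjI allI impI)
    show "(v, a) \<in> C" using C class_refl by metis
    show "a \<in> VGam R v" using a .
    show "g0 \<in> factor R v a" using g0 by simp
    fix c assume "goodp R v a c (fst (rep C)) (snd (rep C))"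
    then show "phielt_path R c g0 = qv R (fst (rep C)) [(snd (rep C), y)]"
      using UNIQ[OF v a _ c0 g0(1)] g0(2) p by simp
  qed
  then have P: "?P (sigma R C v y)" unfolding sigma_def by (rule someI)
  then obtain a' where a': "(v, a') \<in> C" "a' \<in> VGam R v" "sigma R C v y \<in> factor R v a'"
    "\<forall>c. goodp R v a' c (fst p) (snd p) \<longrightarrow> phielt_path R c (sigma R C v y) = qv R (fst p) [(snd p, y)]"
    using p by blast
  have ff: "factor R v a' = factor R v a" using SAMEFAC[OF v a] a'(1) C by simp
  have gg: "goodp R v a' c w d = goodp R v a c w d" for c w d by (simp add: goodp_def ff)
  show ?thesis using a'(3,4) ff gg by simp
qed

lemma sigma_rho: "v \<in> Vs R \<Longrightarrow> a \<in> VGam R v \<Longrightarrow> x \<in> carrier (FV R v a) \<Longrightarrow>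
  sigma R (psi_class R (v, a)) v (rho R v a x) = qv R v [(a, x)]"
proof -
  assume v: "v \<in> Vs R" and a: "a \<in> VGam R v" and x: "x \<in> carrier (FV R v a)"
  define p where "p = rep (psi_class R (v, a))"
  obtain c0 where p1: "fst p \<in> Vs R" "snd p \<in> VGam R (fst p)" and c0: "goodp R v a c0 (fst p) (snd p)"
    using rep_props[OF v a p_def] by blast
  note r = rho_spec[OF v a x p_def]
  note s = sigma_spec[OF v a refl p_def conjunct1[OF r]]
  have g: "qv R v [(a, x)] \<in> factor R v a" using x by (simp add: factor_qv)
  show ?thesis using goodp_inj[OF c0 v a conjunct1[OF s] g] s r c0 by simp
qed

lemma sigma_mult: "v \<in> Vs R \<Longrightarrow> a \<in> VGam R v \<Longrightarrow> C = psi_class R (v, a) \<Longrightarrow> p = rep C \<Longrightarrow>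
  y1 \<in> carrier (FV R (fst p) (snd p)) \<Longrightarrow> y2 \<in> carrier (FV R (fst p) (snd p)) \<Longrightarrow>
  sigma R C v (y1 \<otimes>\<^bsub>FV R (fst p) (snd p)\<^esub> y2) = sigma R C v y1 \<otimes>\<^bsub>Gv R v\<^esub> sigma R C v y2"
proof -
  assume v: "v \<in> Vs R" and a: "a \<in> VGam R v" and C: "C = psi_class R (v, a)" and p: "p = rep C"
    and y1: "y1 \<in> carrier (FV R (fst p) (snd p))" and y2: "y2 \<in> carrier (FV R (fst p) (snd p))"
  obtain c0 where p1: "fst p \<in> Vs R" "snd p \<in> VGam R (fst p)" and c0: "goodp R v a c0 (fst p) (snd p)"
    using rep_props[OF v a] C p by blast
  have y12: "y1 \<otimes>\<^bsub>FV R (fst p) (snd p)\<^esub> y2 \<in> carrier (FV R (fst p) (snd p))"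
    using group_FV[OF p1] y1 y2 by (simp add: group.is_monoid monoid.m_closed)
  note s1 = sigma_spec[OF v a C p y1] and s2 = sigma_spec[OF v a C p y2] and s12 = sigma_spec[OF v a C p y12]
  have m: "sigma R C v y1 \<otimes>\<^bsub>Gv R v\<^esub> sigma R C v y2 \<in> factor R v a"
    using fac_closed[OF v a] s1 s2 by blast
  have "phielt_path R c0 (sigma R C v y1 \<otimes>\<^bsub>Gv R v\<^esub> sigma R C v y2) =
     phielt_path R c0 (sigma R C v y1) \<otimes>\<^bsub>Gv R (fst p)\<^esub> phielt_path R c0 (sigma R C v y2)"
    using goodp_mult[OF c0 v a] s1 s2 by blast
  also have "\<dots> = qv R (fst p) [(snd p, y1)] \<otimes>\<^bsub>Gv R (fst p)\<^esub> qv R (fst p) [(snd p, y2)]"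
    using s1 s2 c0 by simp
  also have "\<dots> = qv R (fst p) [(snd p, y1 \<otimes>\<^bsub>FV R (fst p) (snd p)\<^esub> y2)]"
    using qv_fac_mult[OF p1 y1 y2] .
  also have "\<dots> = phielt_path R c0 (sigma R C v (y1 \<otimes>\<^bsub>FV R (fst p) (snd p)\<^esub> y2))"
    using s12 c0 by simp
  finally show ?thesis using goodp_inj[OF c0 v a] m s12 by metis
qed

lemma sigma_one: "v \<in> Vs R \<Longrightarrow> a \<in> VGam R v \<Longrightarrow> C = psi_class R (v, a) \<Longrightarrow> p = rep C \<Longrightarrow>
  sigma R C v \<one>\<^bsub>FV R (fst p) (snd p)\<^esub> = qv R v []"
proof -
  assume v: "v \<in> Vs R" and a: "a \<in> VGam R v" and C: "C = psi_class R (v, a)" and p: "p = rep C"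
  have o: "\<one>\<^bsub>FV R v a\<^esub> \<in> carrier (FV R v a)" using group_FV[OF v a] by (simp add: group.is_monoid monoid.one_closed)
  have "sigma R C v (rho R v a \<one>\<^bsub>FV R v a\<^esub>) = qv R v [(a, \<one>\<^bsub>FV R v a\<^esub>)]"
    using sigma_rho[OF v a o] C by simp
  moreover have "rho R v a \<one>\<^bsub>FV R v a\<^esub> = \<one>\<^bsub>FV R (fst p) (snd p)\<^esub>" using rho_one[OF v a] C p by simp
  moreover have "qv R v [(a, \<one>\<^bsub>FV R v a\<^esub>)] = qv R v []"
    unfolding qv_def by (rule gq_fac_one) (simp_all add: group_FV v a)
  ultimately show ?thesis by simp
qed

end

definition qE :: "('v, 'e, 'a, 'g) ragg \<Rightarrow> 'e \<Rightarrow> ('a \<times> 'g) list \<Rightarrow> ('a \<times> 'g) list set" where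
  "qE R e w = gq (VEdg R e) (adjE R e) (FE R e) w"

definition zz :: "('v, 'e, 'a, 'g) ragg \<Rightarrow> 'e \<Rightarrow> 'a \<Rightarrow> 'g \<Rightarrow> 'g" where
  "zz R e b z = (SOME z'. z' \<in> carrier (FV R (src R e) (femb R e b)) \<and>
      iota R e (qE R e [(b, z)]) = qv R (src R e) [(femb R e b, z')])"

definition imgword :: "('v, 'e, 'a, 'g) ragg \<Rightarrow> 'e \<Rightarrow> ('a \<times> 'g) list \<Rightarrow> ('a \<times> 'g) list" where
  "imgword R e w = map (\<lambda>p. (femb R e (fst p), zz R e (fst p) (snd p))) w"

lemma gq_cong: "(\<And>a. a \<in> I \<Longrightarrow> F a = F' a) \<Longrightarrow> gq I adj F = gq I adj F'"
proof -
  assume A: "\<And>a. a \<in> I \<Longrightarrow> F a = F' a"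
  have w: "gp_words I F = gp_words I F'" using A by (auto simp: gp_words_def)
  have b: "gp_basic I adj F = gp_basic I adj F'" using A by (auto simp: gp_basic_def fun_eq_iff)
  show ?thesis by (simp add: gq_def[abs_def] w b)
qed

lemma gp_words_cong: "(\<And>a. a \<in> I \<Longrightarrow> F a = F' a) \<Longrightarrow> gp_words I F = gp_words I F'"
  by (auto simp: gp_words_def)

lemma evl_none: "\<forall>p\<in>set w. fst p \<noteq> a \<Longrightarrow> evl F a w = \<one>\<^bsub>F a\<^esub>"
  by (induction w) auto

context RG
begin

lemma Ge_carrier: "carrier (Ge R e) = qE R e ` gp_words (VEdg R e) (FE R e)"
  by (simp add: Ge_def qE_def gq_carrier)

lemma efactor_qE: "efactor R e b = (\<lambda>z. qE R e [(b, z)]) ` carrier (FE R e b)"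
  by (simp add: efactor_def qE_def gp_factor_gq)

lemma qE_bar: "e \<in> Es R \<Longrightarrow> qE R (bar R e) = qE R e"
proof -
  assume e: "e \<in> Es R"
  have "gq (VEdg R e) (adjE R e) (FE R (bar R e)) = gq (VEdg R e) (adjE R e) (FE R e)"
    by (rule gq_cong) (simp add: FE_bar e)
  then show ?thesis unfolding qE_def[abs_def] by (simp add: VEdg_bar adjE_bar e)
qed

lemma Gvw_bar: "e \<in> Es R \<Longrightarrow> gp_words (VEdg R (bar R e)) (FE R (bar R e)) = gp_words (VEdg R e) (FE R e)"
proof -
  assume e: "e \<in> Es R"
  have "gp_words (VEdg R e) (FE R (bar R e)) = gp_words (VEdg R e) (FE R e)"
    by (rule gp_words_cong) (simp add: FE_bar e)
  then show ?thesis by (simp add: VEdg_bar e)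
qed

lemma zz_spec: "e \<in> Es R \<Longrightarrow> b \<in> VEdg R e \<Longrightarrow> z \<in> carrier (FE R e b) \<Longrightarrow>
  zz R e b z \<in> carrier (FV R (src R e) (femb R e b)) \<and> iota R e (qE R e [(b, z)]) = qv R (src R e) [(femb R e b, zz R e b z)]"
proof -
  assume e: "e \<in> Es R" and b: "b \<in> VEdg R e" and z: "z \<in> carrier (FE R e b)"
  have bij: "bij_betw (iota R e) (efactor R e b) (factor R (src R e) (femb R e b))" using femb_props[OF e] b by blast
  have "qE R e [(b, z)] \<in> efactor R e b" using z by (simp add: efactor_qE)
  then have "iota R e (qE R e [(b, z)]) \<in> factor R (src R e) (femb R e b)" using bij by (auto simp: bij_betw_def)
  then have ex: "\<exists>z'. z' \<in> carrier (FV R (src R e) (femb R e b)) \<and>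
      iota R e (qE R e [(b, z)]) = qv R (src R e) [(femb R e b, z')]" by (auto simp: factor_qv)
  show ?thesis unfolding zz_def using someI_ex[OF ex] .
qed

lemma femb_in: "e \<in> Es R \<Longrightarrow> b \<in> VEdg R e \<Longrightarrow> femb R e b \<in> VGam R (src R e)"
  using femb_props by blast

lemma iota_word: "e \<in> Es R \<Longrightarrow> w \<in> gp_words (VEdg R e) (FE R e) \<Longrightarrow>
   imgword R e w \<in> gp_words (VGam R (src R e)) (FV R (src R e)) \<and> iota R e (qE R e w) = qv R (src R e) (imgword R e w)"
proof (induction w)
  case Nil
  have "iota R e (\<one>\<^bsub>Ge R e\<^esub>) = \<one>\<^bsub>Gv R (src R e)\<^esub>"
    using hom_one[OF iota_hom group_Ge group_Gv] Nil by simp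
  then show ?case by (simp add: imgword_def qE_def qv_def Ge_def Gv_def gq_one)
next
  case (Cons p w)
  obtain b z where p: "p = (b, z)" by force
  have b: "b \<in> VEdg R e" and z: "z \<in> carrier (FE R e b)" and w: "w \<in> gp_words (VEdg R e) (FE R e)"
    using Cons.prems p by auto
  note IH = Cons.IH[OF Cons.prems(1) w]
  note zs = zz_spec[OF Cons.prems(1) b z]
  have l: "[(femb R e b, zz R e b z)] \<in> gp_words (VGam R (src R e)) (FV R (src R e))"
    using zs femb_in[OF Cons.prems(1) b] by simp
  have "qE R e (p # w) = qE R e [p] \<otimes>\<^bsub>Ge R e\<^esub> qE R e w"
    using gq_mult[of "[p]" "VEdg R e" "FE R e" w "adjE R e"] b z w p by (simp add: qE_def Ge_def)
  then have "iota R e (qE R e (p # w)) = iota R e (qE R e [p]) \<otimes>\<^bsub>Gv R (src R e)\<^esub> iota R e (qE R e w)"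
    using iota_mult[OF Cons.prems(1)] b z w p by (simp add: Ge_carrier)
  also have "\<dots> = qv R (src R e) [(femb R e b, zz R e b z)] \<otimes>\<^bsub>Gv R (src R e)\<^esub> qv R (src R e) (imgword R e w)"
    using zs IH p by simp
  also have "\<dots> = qv R (src R e) ((femb R e b, zz R e b z) # imgword R e w)"
    using gq_mult[OF l conjunct1[OF IH]] by (simp add: qv_def Gv_def)
  finally show ?case using l IH p by (simp add: imgword_def)
qed

lemma zz_edge: "e \<in> Es R \<Longrightarrow> b \<in> VEdg R e \<Longrightarrow> z \<in> carrier (FE R e b) \<Longrightarrow>
  phielt R e (qv R (src R e) [(femb R e b, zz R e b z)]) = qv R (tgt R e) [(femb R (bar R e) b, zz R (bar R e) b z)]"
proof -
  assume e: "e \<in> Es R" and b: "b \<in> VEdg R e" and z: "z \<in> carrier (FE R e b)"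
  have g: "qE R e [(b, z)] \<in> carrier (Ge R e)" using b z by (simp add: Ge_carrier)
  have "phielt R e (qv R (src R e) [(femb R e b, zz R e b z)]) = iota R (bar R e) (qE R e [(b, z)])"
    using zz_spec[OF e b z] phielt_iota[OF e g] by simp
  also have "\<dots> = qv R (tgt R e) [(femb R (bar R e) b, zz R (bar R e) b z)]"
    using zz_spec[of "bar R e" b z] e b z by (simp add: VEdg_bar FE_bar qE_bar)
  finally show ?thesis .
qed

lemma fac_img: "e \<in> Es R \<Longrightarrow> b \<in> VEdg R e \<Longrightarrow> factor R (src R e) (femb R e b) = iota R e ` efactor R e b"
  using femb_props by (metis bij_betw_imp_surj_on)

lemma fac_IMG: "e \<in> Es R \<Longrightarrow> b \<in> VEdg R e \<Longrightarrow> factor R (src R e) (femb R e b) \<subseteq> IMG R e"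
proof -
  assume e: "e \<in> Es R" and b: "b \<in> VEdg R e"
  have "efactor R e b \<subseteq> carrier (Ge R e)" by (auto simp: efactor_qE Ge_carrier b)
  then show ?thesis using fac_img[OF e b] by (auto simp: IMG_def)
qed

lemma PHISET_EDGE: "e \<in> Es R \<Longrightarrow> b \<in> VEdg R e \<Longrightarrow>
  phiset R e (factor R (src R e) (femb R e b)) = factor R (tgt R e) (femb R (bar R e) b)"
proof -
  assume e: "e \<in> Es R" and b: "b \<in> VEdg R e"
  have sub: "efactor R e b \<subseteq> carrier (Ge R e)" by (auto simp: efactor_qE Ge_carrier b)
  have "phiset R e (factor R (src R e) (femb R e b)) = phielt R e ` iota R e ` efactor R e b"
    using phiset_image[OF e fac_IMG[OF e b]] fac_img[OF e b] by simp
  also have "\<dots> = iota R (bar R e) ` efactor R e b"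
    unfolding image_image using phielt_iota[OF e] sub by (auto intro!: image_cong)
  also have "\<dots> = factor R (tgt R e) (femb R (bar R e) b)"
    using fac_img[of "bar R e" b] e b by (simp add: VEdg_bar efactor_bar)
  finally show ?thesis .
qed

lemma EDGEFAC: "e \<in> Es R \<Longrightarrow> a \<in> VGam R (src R e) \<Longrightarrow> factor R (src R e) a \<subseteq> IMG R e \<Longrightarrow>
  \<exists>b\<in>VEdg R e. a = femb R e b"
proof (rule ccontr)
  assume e: "e \<in> Es R" and a: "a \<in> VGam R (src R e)" and sub: "factor R (src R e) a \<subseteq> IMG R e"
    and N: "\<not> (\<exists>b\<in>VEdg R e. a = femb R e b)"
  have u: "src R e \<in> Vs R" using e by simp
  have "\<one>\<^bsub>FV R (src R e) a\<^esub> \<in> carrier (FV R (src R e) a)" using group_FV[OF u a] by (simp add: group.is_monoid monoid.one_closed)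
  then obtain x where x: "x \<in> carrier (FV R (src R e) a)" "x \<noteq> \<one>\<^bsub>FV R (src R e) a\<^esub>"
    using nontriv_FV[OF u a] by blast
  have "qv R (src R e) [(a, x)] \<in> IMG R e" using sub x by (auto simp: factor_qv)
  then obtain w where w: "w \<in> gp_words (VEdg R e) (FE R e)" "qv R (src R e) [(a, x)] = iota R e (qE R e w)"
    by (auto simp: IMG_def Ge_carrier)
  note iw = iota_word[OF e w(1)]
  have "qv R (src R e) [(a, x)] = qv R (src R e) (imgword R e w)" using w iw by simp
  then have "gr (VGam R (src R e)) (adjG R (src R e)) (FV R (src R e)) [(a, x)] (imgword R e w)"
    using iw x a by (simp add: qv_def gq_eq_iff)
  then have "evl (FV R (src R e)) a [(a, x)] = evl (FV R (src R e)) a (imgword R e w)"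
    using evl_rel group_FV[OF u a] simpl_V[OF u] by metis
  moreover have "evl (FV R (src R e)) a (imgword R e w) = \<one>\<^bsub>FV R (src R e) a\<^esub>"
    apply (rule evl_none) using N w(1) by (auto simp: imgword_def gp_words_def)
  ultimately show False using x group_FV[OF u a] by (simp add: group.is_monoid monoid.r_one)
qed

end


lemma qrel_map:
  assumes H: "\<And>u l r v. b l r \<Longrightarrow> u @ l @ v \<in> W \<Longrightarrow> u @ r @ v \<in> W \<Longrightarrow> qrel W' st' (f (u @ l @ v)) (f (u @ r @ v))"
    and r: "qrel W (rewrite_step b) w w'"
  shows "qrel W' st' (f w) (f w')"
  using r unfolding qrel_def[of W]
proof (induction rule: rtranclp_induct)
  case base then show ?case by simp
next
  case (step y z)
  from step(2) obtain u l r v where st: "b l r" "(y = u @ l @ v \<and> z = u @ r @ v) \<or> (z = u @ l @ v \<and> y = u @ r @ v)"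
    and yz: "y \<in> W" "z \<in> W" unfolding rewrite_step_def by blast
  have "qrel W' st' (f y) (f z)" using st yz H qrel_sym by metis
  then show ?case using step(3) qrel_trans by metis
qed

lemma transport_carrier: "carrier (transport f G) = f ` carrier G"
  by (simp add: transport_def)

lemma transport_one: "\<one>\<^bsub>transport f G\<^esub> = f \<one>\<^bsub>G\<^esub>"
  by (simp add: transport_def)

lemma transport_mult: "inj f \<Longrightarrow> x \<in> carrier G \<Longrightarrow> y \<in> carrier G \<Longrightarrow> f x \<otimes>\<^bsub>transport f G\<^esub> f y = f (x \<otimes>\<^bsub>G\<^esub> y)"
proof -
  assume "inj f" "x \<in> carrier G" "y \<in> carrier G"
  moreover have "inj_on f (carrier G)" using \<open>inj f\<close> inj_on_subset by blast
  ultimately show ?thesis by (simp add: transport_def inv_into_f_f)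
qed

definition hmap :: "('v, 'e, 'a, 'g) ragg \<Rightarrow> 'v \<Rightarrow> ('a \<times> 'g) list \<Rightarrow> ((('v \<times> 'a) set + 'e set) \<times> ('g + int)) list" where
  "hmap R u w = map (\<lambda>p. (Inl (psi_class R (u, fst p)), Inl (rho R u (fst p) (snd p)))) w"

definition repw :: "('a \<times> 'g) list set \<Rightarrow> ('a \<times> 'g) list" where
  "repw g = (SOME w. w \<in> g)"

definition hl :: "('v, 'e, 'a, 'g) ragg \<Rightarrow> ('v, 'e, ('a \<times> 'g) list set) gletter
   \<Rightarrow> ((('v \<times> 'a) set + 'e set) \<times> ('g + int)) list" where
  "hl R l = (case l of Arr e \<Rightarrow> [(Inr {e, bar R e}, Inr 1)] | Elt u g \<Rightarrow> hmap R u (repw g))"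

definition hw :: "('v, 'e, 'a, 'g) ragg \<Rightarrow> ('v, 'e, ('a \<times> 'g) list set) gletter list
   \<Rightarrow> ((('v \<times> 'a) set + 'e set) \<times> ('g + int)) list" where
  "hw R w = concat (map (hl R) w)"

lemma hw_append[simp]: "hw R (x @ y) = hw R x @ hw R y" by (simp add: hw_def)
lemma hw_Nil[simp]: "hw R [] = []" by (simp add: hw_def)
lemma hw_Cons: "hw R (l # w) = hl R l @ hw R w" by (simp add: hw_def)
lemma hmap_append[simp]: "hmap R u (x @ y) = hmap R u x @ hmap R u y" by (simp add: hmap_def)

abbreviation "PW R \<equiv> gp_words (Psi_V R) (Psi_F R)"
abbreviation "grH R \<equiv> gr (Psi_V R) (Psi_adj R) (Psi_F R)"

definition vl :: "('v, 'e, 'a, 'g) ragg \<Rightarrow> ('v, 'e, ('a \<times> 'g) list set) gletter \<Rightarrow> bool" where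
  "vl R l = (case l of Arr e \<Rightarrow> e \<in> Es R | Elt u g \<Rightarrow> u \<in> Vs R \<and> g \<in> carrier (Gv R u))"

lemma word_path_vl: "word_path R u v w \<Longrightarrow> \<forall>l\<in>set w. vl R l"
  by (induction R u v w rule: word_path.induct) (auto simp: vl_def)

lemma Psi_F_Inl: "Psi_F R (Inl C) = transport Inl (FV R (fst (rep C)) (snd (rep C)))"
  by (simp add: Psi_F_def rep_def)

lemma Psi_F_Inr: "Psi_F R (Inr P) = transport Inr (integer_mod_group 2)"
  by (simp add: Psi_F_def)

lemma Z2_carrier: "carrier (Psi_F R (Inr P)) = Inr ` {0, 1}"
  by (auto simp: Psi_F_Inr transport_carrier integer_mod_group_def)

lemma Z2_one: "\<one>\<^bsub>Psi_F R (Inr P)\<^esub> = Inr 0"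
  by (simp add: Psi_F_Inr transport_one integer_mod_group_def)

lemma Z2_mult: "i \<in> {0, 1} \<Longrightarrow> j \<in> {0, 1} \<Longrightarrow> Inr i \<otimes>\<^bsub>Psi_F R (Inr P)\<^esub> Inr j = Inr ((i + j) mod 2)"
  by (auto simp: Psi_F_Inr transport_def integer_mod_group_def inv_into_f_f)

context RG4
begin

lemma Psi_V_Inl: "u \<in> Vs R \<Longrightarrow> a \<in> VGam R u \<Longrightarrow> Inl (psi_class R (u, a)) \<in> Psi_V R"
  by (auto simp: Psi_V_def disj_union_def)

lemma Psi_V_Inr: "e \<in> Es R \<Longrightarrow> Inr {e, bar R e} \<in> Psi_V R"
  by (auto simp: Psi_V_def)

lemma Inl_rho_carrier: "u \<in> Vs R \<Longrightarrow> a \<in> VGam R u \<Longrightarrow> x \<in> carrier (FV R u a) \<Longrightarrow>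
  Inl (rho R u a x) \<in> carrier (Psi_F R (Inl (psi_class R (u, a))))"
proof -
  assume u: "u \<in> Vs R" and a: "a \<in> VGam R u" and x: "x \<in> carrier (FV R u a)"
  have "rho R u a x \<in> carrier (FV R (fst (rep (psi_class R (u, a)))) (snd (rep (psi_class R (u, a)))))"
    using rho_spec[OF u a x refl] by blast
  then show ?thesis by (simp add: Psi_F_Inl transport_carrier)
qed

lemma hmap_PW: "u \<in> Vs R \<Longrightarrow> w \<in> gp_words (VGam R u) (FV R u) \<Longrightarrow> hmap R u w \<in> PW R"
proof (induction w)
  case Nil then show ?case by (simp add: hmap_def)
next
  case (Cons p w)
  obtain a x where p: "p = (a, x)" by force
  have a: "a \<in> VGam R u" and x: "x \<in> carrier (FV R u a)" and w: "w \<in> gp_words (VGam R u) (FV R u)"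
    using Cons.prems(2) p by auto
  have "hmap R u (p # w) = (Inl (psi_class R (u, a)), Inl (rho R u a x)) # hmap R u w" by (simp add: hmap_def p)
  then show ?case using Cons.IH[OF Cons.prems(1) w] Psi_V_Inl[OF Cons.prems(1) a] Inl_rho_carrier[OF Cons.prems(1) a x]
    by simp
qed

lemma repw: "u \<in> Vs R \<Longrightarrow> g \<in> carrier (Gv R u) \<Longrightarrow> repw g \<in> gp_words (VGam R u) (FV R u) \<and> qv R u (repw g) = g"
proof -
  assume u: "u \<in> Vs R" and g: "g \<in> carrier (Gv R u)"
  have "g \<in> gq (VGam R u) (adjG R u) (FV R u) ` gp_words (VGam R u) (FV R u)"
    using g gq_carrier unfolding Gv_def by metis
  then obtain w where w: "w \<in> gp_words (VGam R u) (FV R u)" "g = qv R u w" unfolding qv_def by blast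
  then have "w \<in> g" by (simp add: qv_def gq_def mem_qclass)
  then have "repw g \<in> g" unfolding repw_def by (rule someI)
  then have "repw g \<in> qclass (gp_words (VGam R u) (FV R u)) (rewrite_step (gp_basic (VGam R u) (adjG R u) (FV R u))) w"
    using w(2) by (simp add: qv_def gq_def)
  from qclass_mem_eq[OF this] show ?thesis using w(2) by (simp add: qv_def gq_def)
qed

lemma hl_PW: "vl R l \<Longrightarrow> hl R l \<in> PW R"
  by (cases l) (auto simp: vl_def hl_def Psi_V_Inr Z2_carrier hmap_PW repw)

lemma hw_PW: "\<forall>l\<in>set w. vl R l \<Longrightarrow> hw R w \<in> PW R"
  by (induction w) (auto simp: hw_Cons hl_PW)

lemma grH_step: "gp_basic (Psi_V R) (Psi_adj R) (Psi_F R) l r \<Longrightarrow> u \<in> PW R \<Longrightarrow> l \<in> PW R \<Longrightarrow> r \<in> PW R \<Longrightarrow> v \<in> PW R \<Longrightarrow>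
  grH R (u @ l @ v) (u @ r @ v)"
  by (rule gr_step) auto

lemma grH_ctx: "grH R l r \<Longrightarrow> u \<in> PW R \<Longrightarrow> v \<in> PW R \<Longrightarrow> l \<in> PW R \<Longrightarrow> grH R (u @ l @ v) (u @ r @ v)"
proof -
  assume A: "grH R l r" "u \<in> PW R" "v \<in> PW R" "l \<in> PW R"
  have r: "r \<in> PW R" using gr_words[OF A(1) A(4)] .
  have "grH R (l @ v) (r @ v)" using gr_app2[OF A(1) gr_refl A(4) A(3)] .
  then show ?thesis using gr_app2[OF gr_refl _ A(2)] A r by (simp)
qed

lemma MAP_basic: "u \<in> Vs R \<Longrightarrow> gp_basic (VGam R u) (adjG R u) (FV R u) l r \<Longrightarrow>
   l \<in> gp_words (VGam R u) (FV R u) \<Longrightarrow> r \<in> gp_words (VGam R u) (FV R u) \<Longrightarrow>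
   gp_basic (Psi_V R) (Psi_adj R) (Psi_F R) (hmap R u l) (hmap R u r)"
proof -
  assume u: "u \<in> Vs R" and b: "gp_basic (VGam R u) (adjG R u) (FV R u) l r"
    and lw: "l \<in> gp_words (VGam R u) (FV R u)" and rw: "r \<in> gp_words (VGam R u) (FV R u)"
  from b show ?thesis unfolding gp_basic_def[of "VGam R u"]
  proof (elim disjE bexE conjE)
    fix a x y assume a: "a \<in> VGam R u" and x: "x \<in> carrier (FV R u a)" and y: "y \<in> carrier (FV R u a)"
      and l: "l = [(a, x), (a, y)]" and r: "r = [(a, x \<otimes>\<^bsub>FV R u a\<^esub> y)]"
    define C where "C = psi_class R (u, a)"
    define p where "p = rep C"
    have m: "Inl (rho R u a x) \<otimes>\<^bsub>Psi_F R (Inl C)\<^esub> Inl (rho R u a y) = Inl (rho R u a (x \<otimes>\<^bsub>FV R u a\<^esub> y))"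
      using rho_mult[OF u a x y] rho_spec[OF u a x] rho_spec[OF u a y] unfolding C_def
      by (simp add: Psi_F_Inl transport_mult)
    show ?thesis unfolding gp_basic_def
      apply (rule disjI1)
      apply (rule bexI[where x = "Inl C"])
      using l r m Inl_rho_carrier[OF u a x] Inl_rho_carrier[OF u a y] Psi_V_Inl[OF u a]
      by (auto simp: hmap_def C_def)
  next
    fix a assume a: "a \<in> VGam R u" and l: "l = [(a, \<one>\<^bsub>FV R u a\<^esub>)]" and r: "r = []"
    have "Inl (rho R u a \<one>\<^bsub>FV R u a\<^esub>) = \<one>\<^bsub>Psi_F R (Inl (psi_class R (u, a)))\<^esub>"
      using rho_one[OF u a refl] by (simp add: Psi_F_Inl transport_one)
    then show ?thesis unfolding gp_basic_def using l r Psi_V_Inl[OF u a] by (auto simp: hmap_def)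
  next
    fix a b x y assume a: "a \<in> VGam R u" and b: "b \<in> VGam R u" and ab: "adjG R u a b"
      and x: "x \<in> carrier (FV R u a)" and y: "y \<in> carrier (FV R u b)"
      and l: "l = [(a, x), (b, y)]" and r: "r = [(b, y), (a, x)]"
    have ne: "a \<noteq> b" using ab simpl_V[OF u] by (auto simp: simplicial_def)
    have adj: "Psi_adj R (Inl (psi_class R (u, a))) (Inl (psi_class R (u, b)))"
    proof -
      have "(u, a) \<in> psi_class R (u, a)" "(u, b) \<in> psi_class R (u, b)" by (rule class_refl)+
      then show ?thesis unfolding Psi_adj_def using Psi_V_Inl[OF u a] Psi_V_Inl[OF u b] CLASSNEQ[OF u a b ne] u ab
        by auto
    qed
    show ?thesis unfolding gp_basic_def
      apply (rule disjI2, rule disjI2)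
      using l r adj Inl_rho_carrier[OF u a x] Inl_rho_carrier[OF u b y] Psi_V_Inl[OF u a] Psi_V_Inl[OF u b]
      by (auto simp: hmap_def)
  qed
qed

lemma MAP: assumes u: "u \<in> Vs R" and rr: "gr (VGam R u) (adjG R u) (FV R u) w w'"
  shows "grH R (hmap R u w) (hmap R u w')"
proof -
  have "qrel (PW R) (rewrite_step (gp_basic (Psi_V R) (Psi_adj R) (Psi_F R))) (hmap R u w) (hmap R u w')"
  proof (rule qrel_map[OF _ rr[unfolded gr_def]])
    fix x l r y assume b: "gp_basic (VGam R u) (adjG R u) (FV R u) l r"
      and w1: "x @ l @ y \<in> gp_words (VGam R u) (FV R u)" and w2: "x @ r @ y \<in> gp_words (VGam R u) (FV R u)"
    have "grH R (hmap R u x @ hmap R u l @ hmap R u y) (hmap R u x @ hmap R u r @ hmap R u y)"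
      apply (rule grH_step)
      using MAP_basic[OF u b] w1 w2 hmap_PW[OF u] by auto
    then show "qrel (PW R) (rewrite_step (gp_basic (Psi_V R) (Psi_adj R) (Psi_F R))) (hmap R u (x @ l @ y)) (hmap R u (x @ r @ y))"
      by (simp add: gr_def)
  qed
  then show ?thesis by (simp add: gr_def)
qed

end

definition WO :: "('v, 'e, 'a, 'g) ragg \<Rightarrow> 'v \<Rightarrow> ('v, 'e, ('a \<times> 'g) list set) gletter list set" where
  "WO R \<omega> = {w. word_path R \<omega> \<omega> w}"

context RG4
begin

lemma comm_list: "(\<forall>p\<in>set N. gp_basic (Psi_V R) (Psi_adj R) (Psi_F R) [p, q] [q, p]) \<Longrightarrow> N \<in> PW R \<Longrightarrow> [q] \<in> PW R \<Longrightarrow>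
   grH R (N @ [q]) ([q] @ N)"
proof (induction N)
  case Nil then show ?case by simp
next
  case (Cons p N)
  have p: "[p] \<in> PW R" and N: "N \<in> PW R" using Cons.prems by auto
  have 1: "grH R ([p] @ (N @ [q])) ([p] @ ([q] @ N))"
    using gr_app2[OF gr_refl Cons.IH[OF _ N Cons.prems(3)] p] Cons.prems(1) Cons.prems(3) N by simp
  have 2: "grH R ([] @ [p, q] @ N) ([] @ [q, p] @ N)"
    by (rule grH_step) (use Cons.prems p N in auto)
  show ?case using gr_trans[OF 1] 2 by simp
qed

lemma hmap_edge: "e \<in> Es R \<Longrightarrow> w \<in> gp_words (VEdg R e) (FE R e) \<Longrightarrow>
  hmap R (src R e) (imgword R e w) = hmap R (tgt R e) (imgword R (bar R e) w)"
proof (induction w)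
  case Nil then show ?case by (simp add: imgword_def hmap_def)
next
  case (Cons p w)
  obtain b z where p: "p = (b, z)" by force
  have b: "b \<in> VEdg R e" and z: "z \<in> carrier (FE R e b)" and w: "w \<in> gp_words (VEdg R e) (FE R e)"
    using Cons.prems p by auto
  note e = Cons.prems(1)
  have zb: "z \<in> carrier (FE R (bar R e) b)" using z FE_bar[OF e b] by simp
  have bb: "b \<in> VEdg R (bar R e)" using b VEdg_bar[OF e] by simp
  have re: "psi_class R (tgt R e, femb R (bar R e) b) = psi_class R (src R e, femb R e b) \<and>
     rho R (tgt R e) (femb R (bar R e) b) (zz R (bar R e) b z) = rho R (src R e) (femb R e b) (zz R e b z)"
    apply (rule rho_edge[OF e femb_in[OF e b] _ PHISET_EDGE[OF e b] conjunct1[OF zz_spec[OF e b z]] _ zz_edge[OF e b z]])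
    using femb_in[OF bar_Es[OF e] bb] e apply simp
    using conjunct1[OF zz_spec[OF bar_Es[OF e] bb zb]] e by simp
  show ?case using Cons.IH[OF e w] re p by (simp add: imgword_def hmap_def)
qed

lemma HWB: "groupoid_basic R l r \<Longrightarrow> grH R (hw R l) (hw R r)"
  unfolding groupoid_basic_def
proof (elim disjE bexE conjE)
  fix u x y assume u: "u \<in> Vs R" and x: "x \<in> carrier (Gv R u)" and y: "y \<in> carrier (Gv R u)"
    and l: "l = [Elt u x, Elt u y]" and r: "r = [Elt u (x \<otimes>\<^bsub>Gv R u\<^esub> y)]"
  have xy: "x \<otimes>\<^bsub>Gv R u\<^esub> y \<in> carrier (Gv R u)" using group_Gv[OF u] x y by (simp add: group.is_monoid monoid.m_closed)
  note rx = repw[OF u x] and ry = repw[OF u y] and rxy = repw[OF u xy]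
  have "qv R u (repw x @ repw y) = x \<otimes>\<^bsub>Gv R u\<^esub> y"
    using gq_mult[of "repw x" "VGam R u" "FV R u" "repw y" "adjG R u"] rx ry by (simp add: qv_def Gv_def)
  then have "qv R u (repw x @ repw y) = qv R u (repw (x \<otimes>\<^bsub>Gv R u\<^esub> y))" using rxy by simp
  then have "gr (VGam R u) (adjG R u) (FV R u) (repw x @ repw y) (repw (x \<otimes>\<^bsub>Gv R u\<^esub> y))"
    using rx ry rxy by (simp add: qv_def gq_eq_iff)
  then have "grH R (hmap R u (repw x @ repw y)) (hmap R u (repw (x \<otimes>\<^bsub>Gv R u\<^esub> y)))" by (rule MAP[OF u])
  then show ?thesis using l r by (simp add: hw_def hl_def)
next
  fix u assume u: "u \<in> Vs R" and l: "l = [Elt u \<one>\<^bsub>Gv R u\<^esub>]" and r: "r = []"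
  have o: "\<one>\<^bsub>Gv R u\<^esub> \<in> carrier (Gv R u)" using group_Gv[OF u] by (simp add: group.is_monoid monoid.one_closed)
  note ro = repw[OF u o]
  have "qv R u (repw \<one>\<^bsub>Gv R u\<^esub>) = qv R u []" using ro by (simp add: qv_def Gv_def gq_one)
  then have "gr (VGam R u) (adjG R u) (FV R u) (repw \<one>\<^bsub>Gv R u\<^esub>) []"
    using ro by (simp add: qv_def gq_eq_iff)
  then have "grH R (hmap R u (repw \<one>\<^bsub>Gv R u\<^esub>)) (hmap R u [])" by (rule MAP[OF u])
  then show ?thesis using l r by (simp add: hw_def hl_def hmap_def)
next
  fix e assume e: "e \<in> Es R" and l: "l = [Arr e, Arr (bar R e)]" and r: "r = []"
  let ?P = "{e, bar R e}"
  have P: "{bar R e, bar R (bar R e)} = ?P" using e by auto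
  have PV: "Inr ?P \<in> Psi_V R" using Psi_V_Inr[OF e] .
  have c1: "Inr 1 \<in> carrier (Psi_F R (Inr ?P))" by (simp add: Z2_carrier)
  have c0: "Inr 0 \<in> carrier (Psi_F R (Inr ?P))" by (simp add: Z2_carrier)
  have m: "Inr 1 \<otimes>\<^bsub>Psi_F R (Inr ?P)\<^esub> Inr 1 = Inr 0" using Z2_mult[of 1 1 R ?P] by simp
  have hl: "hw R l = [(Inr ?P, Inr 1), (Inr ?P, Inr 1)]" using l P by (simp add: hw_def hl_def)
  have s1: "grH R ([] @ [(Inr ?P, Inr 1), (Inr ?P, Inr 1)] @ []) ([] @ [(Inr ?P, Inr 0)] @ [])"
    apply (rule grH_step)
    unfolding gp_basic_def using PV c1 c0 m by (auto intro!: bexI[where x = "Inr ?P"])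
  have s2: "grH R ([] @ [(Inr ?P, Inr 0)] @ []) ([] @ [] @ [])"
    apply (rule grH_step)
    unfolding gp_basic_def using PV c0 Z2_one[of R ?P] by (auto intro!: bexI[where x = "Inr ?P"])
  show ?thesis using gr_trans[OF s1 s2] hl r by simp
next
  fix e g assume e: "e \<in> Es R" and g: "g \<in> carrier (Ge R e)"
    and l: "l = [Elt (src R e) (iota R e g), Arr e]" and r: "r = [Arr e, Elt (tgt R e) (iota R (bar R e) g)]"
  obtain w where w: "w \<in> gp_words (VEdg R e) (FE R e)" "g = qE R e w" using g by (auto simp: Ge_carrier)
  have s: "src R e \<in> Vs R" and t: "tgt R e \<in> Vs R" using e by auto
  note iw = iota_word[OF e w(1)]
  have wb: "w \<in> gp_words (VEdg R (bar R e)) (FE R (bar R e))" using w(1) Gvw_bar[OF e] by simp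
  note iwb = iota_word[OF bar_Es[OF e] wb]
  have ib: "iota R (bar R e) g = qv R (tgt R e) (imgword R (bar R e) w)" using iwb w(2) qE_bar[OF e] e by simp
  have iwb1: "imgword R (bar R e) w \<in> gp_words (VGam R (tgt R e)) (FV R (tgt R e))" using iwb e by simp
  have ic: "iota R e g \<in> carrier (Gv R (src R e))" using iota_closed[OF e g] .
  have icb: "iota R (bar R e) g \<in> carrier (Gv R (tgt R e))" using iota_bar_closed[OF e g] .
  let ?X = "(Inr {e, bar R e}, Inr (1::int))"
  let ?N = "hmap R (src R e) (imgword R e w)"
  have N1: "grH R (hmap R (src R e) (repw (iota R e g))) ?N"
  proof -
    have "qv R (src R e) (repw (iota R e g)) = qv R (src R e) (imgword R e w)" using repw[OF s ic] iw w(2) by simp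
    then have "gr (VGam R (src R e)) (adjG R (src R e)) (FV R (src R e)) (repw (iota R e g)) (imgword R e w)"
      using repw[OF s ic] iw by (simp add: qv_def gq_eq_iff)
    then show ?thesis using MAP[OF s] by simp
  qed
  have N2: "grH R (hmap R (tgt R e) (repw (iota R (bar R e) g))) ?N"
  proof -
    have "qv R (tgt R e) (repw (iota R (bar R e) g)) = qv R (tgt R e) (imgword R (bar R e) w)" using repw[OF t icb] ib by simp
    then have "gr (VGam R (tgt R e)) (adjG R (tgt R e)) (FV R (tgt R e)) (repw (iota R (bar R e) g)) (imgword R (bar R e) w)"
      using repw[OF t icb] iwb1 by (simp add: qv_def gq_eq_iff)
    then show ?thesis using MAP[OF t] hmap_edge[OF e w(1)] by simp
  qed
  have NPW: "?N \<in> PW R" using hmap_PW[OF s] iw by simp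
  have XPW: "[?X] \<in> PW R" using Psi_V_Inr[OF e] by (simp add: Z2_carrier)
  have comm: "\<forall>p\<in>set ?N. gp_basic (Psi_V R) (Psi_adj R) (Psi_F R) [p, ?X] [?X, p]"
  proof
    fix p assume "p \<in> set ?N"
    then obtain b z where bz: "(b, z) \<in> set w" "p = (Inl (psi_class R (src R e, femb R e b)), Inl (rho R (src R e) (femb R e b) (zz R e b z)))"
      by (auto simp: hmap_def imgword_def)
    have b: "b \<in> VEdg R e" and z: "z \<in> carrier (FE R e b)" using bz w(1) by (auto simp: gp_words_def)
    have fb: "femb R e b \<in> VGam R (src R e)" using femb_in[OF e b] .
    have zc: "zz R e b z \<in> carrier (FV R (src R e) (femb R e b))" using zz_spec[OF e b z] by blast
    have ea: "edge_adj R {e, bar R e} (psi_class R (src R e, femb R e b))"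
      unfolding edge_adj_def using fb fac_IMG[OF e b] class_refl[of "(src R e, femb R e b)" R] by (auto simp: IMG_def)
    have adj: "Psi_adj R (Inl (psi_class R (src R e, femb R e b))) (Inr {e, bar R e})"
      unfolding Psi_adj_def using Psi_V_Inl[OF s fb] Psi_V_Inr[OF e] ea by simp
    show "gp_basic (Psi_V R) (Psi_adj R) (Psi_F R) [p, ?X] [?X, p]"
      unfolding gp_basic_def using bz(2) adj Psi_V_Inl[OF s fb] Psi_V_Inr[OF e] Inl_rho_carrier[OF s fb zc]
      by (auto simp: Z2_carrier)
  qed
  have C: "grH R (?N @ [?X]) ([?X] @ ?N)" using comm_list[OF comm NPW XPW] .
  have hl: "hw R l = hmap R (src R e) (repw (iota R e g)) @ [?X]" using l by (simp add: hw_def hl_def)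
  have hr: "hw R r = [?X] @ hmap R (tgt R e) (repw (iota R (bar R e) g))" using r by (simp add: hw_def hl_def)
  have h1: "hmap R (src R e) (repw (iota R e g)) \<in> PW R" using hmap_PW[OF s] repw[OF s ic] by simp
  have a1: "grH R (hmap R (src R e) (repw (iota R e g)) @ [?X]) (?N @ [?X])"
    using gr_app2[OF N1 gr_refl h1 XPW] .
  have a2: "grH R ([?X] @ ?N) ([?X] @ hmap R (tgt R e) (repw (iota R (bar R e) g)))"
    using gr_app2[OF gr_refl gr_sym[OF N2] XPW] hmap_PW[OF t] repw[OF t icb] by simp
  show ?thesis unfolding hl hr using gr_trans[OF a1 gr_trans[OF C a2]] .
qed


lemma HW2: "qrel (WO R \<omega>) (rewrite_step (groupoid_basic R)) w w' \<Longrightarrow> grH R (hw R w) (hw R w')"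
  unfolding gr_def
proof (erule qrel_map[rotated])
  fix x l r y assume b: "groupoid_basic R l r" and w1: "x @ l @ y \<in> WO R \<omega>" and w2: "x @ r @ y \<in> WO R \<omega>"
  have v1: "\<forall>m\<in>set (x @ l @ y). vl R m" using word_path_vl[of R \<omega> \<omega> "x @ l @ y"] w1 by (simp add: WO_def)
  have xy: "hw R x \<in> PW R" "hw R y \<in> PW R" "hw R l \<in> PW R" using hw_PW v1 by auto
  have "grH R (hw R x @ hw R l @ hw R y) (hw R x @ hw R r @ hw R y)"
    using grH_ctx[OF HWB[OF b]] xy by simp
  then show "qrel (PW R) (rewrite_step (gp_basic (Psi_V R) (Psi_adj R) (Psi_F R))) (hw R (x @ l @ y)) (hw R (x @ r @ y))"
    by (simp add: gr_def)
qed

end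

fun endv :: "('v, 'e, 'a, 'g) ragg \<Rightarrow> 'v \<Rightarrow> ('v, 'e, 'x) gletter list \<Rightarrow> 'v" where
  "endv R v [] = v"
| "endv R v (Arr e # w) = endv R (tgt R e) w"
| "endv R v (Elt x g # w) = endv R v w"

lemma endv_append[simp]: "endv R v (w1 @ w2) = endv R (endv R v w1) w2"
  by (induction R v w1 rule: endv.induct) auto

lemma word_path_endv: "word_path R u v w \<Longrightarrow> endv R u w = v"
  by (induction R u v w rule: word_path.induct) auto

lemma word_path_fun: "word_path R u v w \<Longrightarrow> word_path R u v' w \<Longrightarrow> v = v'"
  using word_path_endv by metis

lemma word_path_append: "word_path R u v (w1 @ w2) \<longleftrightarrow> (\<exists>m. word_path R u m w1 \<and> word_path R m v w2)"
  by (induction R u v w1 rule: word_path.induct) auto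

lemma word_path_Vs: "word_path R u v w \<Longrightarrow> u \<in> Vs R \<Longrightarrow> is_ragg R \<Longrightarrow> v \<in> Vs R"
  by (induction R u v w rule: word_path.induct) (auto simp: is_ragg_def)

definition T :: "('v, 'e, 'a, 'g) ragg \<Rightarrow> (('v \<times> 'a) set + 'e set) \<times> ('g + int) \<Rightarrow> 'v
   \<Rightarrow> ('v, 'e, ('a \<times> 'g) list set) gletter list" where
  "T R l v = (case fst l of
      Inr P \<Rightarrow> (if snd l = Inr 1 \<and> (\<exists>e\<in>P. e \<in> Es R \<and> src R e = v)
                then [Arr (SOME e. e \<in> P \<and> e \<in> Es R \<and> src R e = v)] else [])
    | Inl C \<Rightarrow> (if v \<in> Vs R \<and> (\<exists>a. (v, a) \<in> C \<and> a \<in> VGam R v)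
                then [Elt v (sigma R C v (projl (snd l)))] else []))"

fun Tw :: "('v, 'e, 'a, 'g) ragg \<Rightarrow> ((('v \<times> 'a) set + 'e set) \<times> ('g + int)) list \<Rightarrow> 'v
   \<Rightarrow> ('v, 'e, ('a \<times> 'g) list set) gletter list" where
  "Tw R [] v = []"
| "Tw R (l # ls) v = T R l v @ Tw R ls (endv R v (T R l v))"

lemma Tw_append: "Tw R (xs @ ys) v = Tw R xs v @ Tw R ys (endv R v (Tw R xs v))"
  by (induction xs arbitrary: v) auto

definition XW :: "('v, 'e, 'a, 'g) ragg \<Rightarrow> 'v \<Rightarrow> ('v, 'e, ('a \<times> 'g) list set) gletter list set" where
  "XW R \<omega> = {w. \<exists>v. word_path R \<omega> v w}"

abbreviation "QQ R \<omega> \<equiv> qrel (XW R \<omega>) (rewrite_step (groupoid_basic R))"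

lemma basic_end: "groupoid_basic R l r \<Longrightarrow> word_path R a b l \<Longrightarrow> word_path R a b' r \<Longrightarrow> is_ragg R \<Longrightarrow> b = b'"
proof -
  assume b: "groupoid_basic R l r" and l: "word_path R a b l" and r: "word_path R a b' r" and rg: "is_ragg R"
  have tb: "\<And>e. e \<in> Es R \<Longrightarrow> tgt R (bar R e) = src R e"
    using rg unfolding is_ragg_def by (metis)
  from b show ?thesis unfolding groupoid_basic_def
  proof (elim disjE bexE conjE)
    fix e assume "e \<in> Es R" "l = [Arr e, Arr (bar R e)]" "r = []"
    then show ?thesis using l r tb by auto
  qed (use l r in auto)
qed

lemma step_end: "rewrite_step (groupoid_basic R) x y \<Longrightarrow> word_path R w m x \<Longrightarrow> word_path R w m' y \<Longrightarrow> is_ragg R \<Longrightarrow> m = m'"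
proof -
  assume st: "rewrite_step (groupoid_basic R) x y" and x: "word_path R w m x" and y: "word_path R w m' y"
    and rg: "is_ragg R"
  obtain u l r v where b: "groupoid_basic R l r" and xy: "x = u @ l @ v" "y = u @ r @ v"
    using st unfolding rewrite_step_def by blast
  obtain m1 m2 where 1: "word_path R w m1 u" "word_path R m1 m2 l" "word_path R m2 m v"
    using x xy word_path_append by metis
  obtain m1' m2' where 2: "word_path R w m1' u" "word_path R m1' m2' r" "word_path R m2' m' v"
    using y xy word_path_append by metis
  have "m1 = m1'" using 1 2 word_path_fun by metis
  then have "m2 = m2'" using basic_end[OF b 1(2)] 2(2) rg by simp
  then show ?thesis using 1 2 word_path_fun by metis
qed

lemma Q_end: "QQ R \<omega> x y \<Longrightarrow> word_path R \<omega> m x \<Longrightarrow> is_ragg R \<Longrightarrow> word_path R \<omega> m y"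
  unfolding qrel_def
proof (induction rule: rtranclp_induct)
  case base then show ?case by simp
next
  case (step y z)
  have yw: "word_path R \<omega> m y" using step by blast
  obtain m' where zw: "word_path R \<omega> m' z" using step(2) by (auto simp: XW_def)
  have "m = m' " using step(2) yw zw step_end step.prems(2) by metis
  then show ?case using zw by simp
qed

lemma rs_app: "rewrite_step b p q \<Longrightarrow> rewrite_step b (p @ z) (q @ z)"
  unfolding rewrite_step_def by (metis append.assoc)

lemma Q_app:
  assumes q: "QQ R \<omega> x x'" and xp: "word_path R \<omega> m x" and z: "word_path R m m' z" and rg: "is_ragg R"
  shows "QQ R \<omega> (x @ z) (x' @ z)"
proof -
  have "QQ R \<omega> (x @ z) (x' @ z) \<and> word_path R \<omega> m x'"
    using q unfolding qrel_def[of "XW R \<omega>"]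
  proof (induction rule: rtranclp_induct)
    case base then show ?case using xp by simp
  next
    case (step y y')
    have IH1: "QQ R \<omega> (x @ z) (y @ z)" using step(3) unfolding qrel_def by blast
    have yw: "word_path R \<omega> m y" using step(3) by blast
    have yX: "y \<in> XW R \<omega>" and y'X: "y' \<in> XW R \<omega>" and rs: "rewrite_step (groupoid_basic R) y y' \<or> rewrite_step (groupoid_basic R) y' y"
      using step(2) by blast+
    obtain k where y'w: "word_path R \<omega> k y'" using y'X by (auto simp: XW_def)
    have mm: "m = k"
      using rs
    proof
      assume "rewrite_step (groupoid_basic R) y y'" then show ?thesis using step_end yw y'w rg by metis
    next
      assume "rewrite_step (groupoid_basic R) y' y" then show ?thesis using step_end yw y'w rg by metis
    qed
    have st: "rewrite_step (groupoid_basic R) (y @ z) (y' @ z) \<or> rewrite_step (groupoid_basic R) (y' @ z) (y @ z)"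
      using rs rs_app by blast
    have p1: "word_path R \<omega> m' (y @ z)" unfolding word_path_append using yw z by blast
    have p2: "word_path R \<omega> m' (y' @ z)" unfolding word_path_append using y'w z mm by blast
    have "y @ z \<in> XW R \<omega>" "y' @ z \<in> XW R \<omega>" using p1 p2 unfolding XW_def by blast+
    then have "QQ R \<omega> (y @ z) (y' @ z)" using st qrel_stepI qrel_sym by metis
    then have "QQ R \<omega> (x @ z) (y' @ z)" using IH1 qrel_trans by metis
    then show ?case using mm y'w unfolding qrel_def by simp
  qed
  then show ?thesis by blast
qed

lemma Q_basic: "groupoid_basic R l r \<Longrightarrow> x @ l @ y \<in> XW R \<omega> \<Longrightarrow> x @ r @ y \<in> XW R \<omega> \<Longrightarrow> QQ R \<omega> (x @ l @ y) (x @ r @ y)"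
  by (rule qrel_step_ctx)

lemma Q_WO: "QQ R \<omega> x y \<Longrightarrow> x \<in> WO R \<omega> \<Longrightarrow> is_ragg R \<Longrightarrow> qrel (WO R \<omega>) (rewrite_step (groupoid_basic R)) x y"
proof -
  assume q: "QQ R \<omega> x y" and x: "x \<in> WO R \<omega>" and rg: "is_ragg R"
  have "qrel (WO R \<omega>) (rewrite_step (groupoid_basic R)) x y \<and> y \<in> WO R \<omega>"
    using q unfolding qrel_def[of "XW R \<omega>"]
  proof (induction rule: rtranclp_induct)
    case base then show ?case using x by simp
  next
    case (step y z)
    have yw: "word_path R \<omega> \<omega> y" using step by (auto simp: WO_def)
    obtain m' where zw: "word_path R \<omega> m' z" using step(2) by (auto simp: XW_def)
    have "\<omega> = m'" using step(2) yw zw step_end rg by metis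
    then have z: "z \<in> WO R \<omega>" using zw by (simp add: WO_def)
    have yW: "y \<in> WO R \<omega>" using yw by (simp add: WO_def)
    have "rewrite_step (groupoid_basic R) y z \<or> rewrite_step (groupoid_basic R) z y" using step(2) by blast
    then have "qrel (WO R \<omega>) (rewrite_step (groupoid_basic R)) y z"
      using z yW qrel_stepI qrel_sym by metis
    then show ?case using step(3) z qrel_trans by metis
  qed
  then show ?thesis by blast
qed


definition goodC :: "('v, 'e, 'a, 'g) ragg \<Rightarrow> ('v \<times> 'a) set \<Rightarrow> bool" where
  "goodC R C = (\<exists>u a. u \<in> Vs R \<and> a \<in> VGam R u \<and> C = psi_class R (u, a))"

lemma goodC_eq: "goodC R C \<Longrightarrow> (v, a) \<in> C \<Longrightarrow> C = psi_class R (v, a)"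
  unfolding goodC_def using class_eq by metis

lemma T_Inr_0: "T R (Inr P, Inr 0) v = []" by (simp add: T_def)

lemma T_Inr_none: "\<not> (\<exists>e\<in>P. e \<in> Es R \<and> src R e = v) \<Longrightarrow> T R (Inr P, y) v = []"
  by (simp add: T_def)

lemma T_Inl_none: "\<not> (\<exists>a. (v, a) \<in> C \<and> a \<in> VGam R v) \<Longrightarrow> T R (Inl C, y) v = []"
  by (simp add: T_def)

lemma T_Inl: "v \<in> Vs R \<Longrightarrow> (v, a) \<in> C \<Longrightarrow> a \<in> VGam R v \<Longrightarrow> T R (Inl C, Inl y) v = [Elt v (sigma R C v y)]"
  by (auto simp: T_def)

lemma Psi_V_cases: "Xv \<in> Psi_V R \<Longrightarrow> (\<exists>C. Xv = Inl C \<and> goodC R C) \<or> (\<exists>e\<in>Es R. Xv = Inr {e, bar R e})"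
  by (auto simp: Psi_V_def goodC_def disj_union_def)

lemma Inl_carrier: "x \<in> carrier (Psi_F R (Inl C)) \<Longrightarrow> \<exists>y. x = Inl y \<and> y \<in> carrier (FV R (fst (rep C)) (snd (rep C)))"
  by (auto simp: Psi_F_Inl transport_carrier)

lemma Inr_carrier: "x \<in> carrier (Psi_F R (Inr P)) \<Longrightarrow> x = Inr 0 \<or> x = Inr 1"
  by (auto simp: Z2_carrier)

context RG4
begin

lemma T_Inr_1: "e0 \<in> Es R \<Longrightarrow> e \<in> {e0, bar R e0} \<Longrightarrow> src R e = v \<Longrightarrow> T R (Inr {e0, bar R e0}, Inr 1) v = [Arr e]"
proof -
  assume e0: "e0 \<in> Es R" and e: "e \<in> {e0, bar R e0}" and v: "src R e = v"
  have eE: "e \<in> Es R" using e e0 by auto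
  have u: "\<And>e'. e' \<in> {e0, bar R e0} \<and> e' \<in> Es R \<and> src R e' = v \<Longrightarrow> e' = e"
  proof -
    fix e' assume A: "e' \<in> {e0, bar R e0} \<and> e' \<in> Es R \<and> src R e' = v"
    show "e' = e"
    proof (rule ccontr)
      assume "e' \<noteq> e"
      then have "e' = bar R e" using A e e0 by auto
      then have "src R e' = tgt R e" using eE by simp
      then show False using A v ciii eE by (simp add: cond_iii_def)
    qed
  qed
  have "(SOME e'. e' \<in> {e0, bar R e0} \<and> e' \<in> Es R \<and> src R e' = v) = e"
    using u e eE v by (metis (mono_tags, lifting) someI)
  then show ?thesis using e eE v by (auto simp: T_def)
qed

lemma EDGE_ADJ: "e0 \<in> Es R \<Longrightarrow> e \<in> {e0, bar R e0} \<Longrightarrow> edge_adj R {e0, bar R e0} C \<Longrightarrow> goodC R C \<Longrightarrow>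
  \<exists>a b. a \<in> VGam R (src R e) \<and> b \<in> VGam R (tgt R e) \<and> (src R e, a) \<in> C \<and> (tgt R e, b) \<in> C \<and>
    factor R (src R e) a \<subseteq> IMG R e \<and> phiset R e (factor R (src R e) a) = factor R (tgt R e) b"
proof -
  assume e0: "e0 \<in> Es R" and e: "e \<in> {e0, bar R e0}" and ea: "edge_adj R {e0, bar R e0} C" and gC: "goodC R C"
  have eE: "e \<in> Es R" using e e0 by auto
  obtain e' a'' where e': "e' \<in> {e0, bar R e0}" "a'' \<in> VGam R (src R e')" "(src R e', a'') \<in> C"
    "factor R (src R e') a'' \<subseteq> IMG R e'"
    using ea unfolding edge_adj_def IMG_def by blast
  have e'E: "e' \<in> Es R" using e' e0 by auto
  obtain b0 where b0: "b0 \<in> VEdg R e'" "a'' = femb R e' b0" using EDGEFAC[OF e'E e'(2,4)] by blast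
  have simE: "sim R (src R e, femb R e b0) (tgt R e, femb R (bar R e) b0)" if "b0 \<in> VEdg R e" for b0
    unfolding sim_def using eE femb_in[OF eE that] femb_in[OF bar_Es[OF eE]] that VEdg_bar[OF eE] PHISET_EDGE[OF eE that]
    by auto
  show ?thesis
  proof (cases "e' = e")
    case True
    have b0e: "b0 \<in> VEdg R e" using b0 True by simp
    have in1: "(src R e, femb R e b0) \<in> C" using e'(3) b0 True by simp
    have Ceq: "C = psi_class R (src R e, femb R e b0)" using goodC_eq[OF gC in1] .
    have "(tgt R e, femb R (bar R e) b0) \<in> psi_class R (src R e, femb R e b0)"
      using simE[OF b0e] unfolding psi_class_def by auto
    then have in2: "(tgt R e, femb R (bar R e) b0) \<in> C" using Ceq by simp
    show ?thesis
      apply (rule exI[of _ "femb R e b0"], rule exI[of _ "femb R (bar R e) b0"])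
      using in1 in2 femb_in[OF eE b0e] femb_in[OF bar_Es[OF eE]] b0e VEdg_bar[OF eE] fac_IMG[OF eE b0e] PHISET_EDGE[OF eE b0e] eE
      by auto
  next
    case False
    have "e' = bar R e" using False e e' e0 by auto
    then have b0e: "b0 \<in> VEdg R e" and in2: "(tgt R e, femb R (bar R e) b0) \<in> C"
      using b0 e'(3) VEdg_bar[OF eE] eE by auto
    have Ceq: "C = psi_class R (tgt R e, femb R (bar R e) b0)" using goodC_eq[OF gC in2] .
    have "(tgt R e, femb R (bar R e) b0) \<in> psi_class R (src R e, femb R e b0)"
      using simE[OF b0e] unfolding psi_class_def by auto
    then have "psi_class R (tgt R e, femb R (bar R e) b0) = psi_class R (src R e, femb R e b0)" by (rule class_eq)
    then have in1: "(src R e, femb R e b0) \<in> C" using Ceq class_refl by metis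
    show ?thesis
      apply (rule exI[of _ "femb R e b0"], rule exI[of _ "femb R (bar R e) b0"])
      using in1 in2 femb_in[OF eE b0e] femb_in[OF bar_Es[OF eE]] b0e VEdg_bar[OF eE] fac_IMG[OF eE b0e] PHISET_EDGE[OF eE b0e] eE
      by auto
  qed
qed

lemma sigma_in: "v \<in> Vs R \<Longrightarrow> (v, a) \<in> C \<Longrightarrow> a \<in> VGam R v \<Longrightarrow> goodC R C \<Longrightarrow> y \<in> carrier (FV R (fst (rep C)) (snd (rep C))) \<Longrightarrow>
  sigma R C v y \<in> factor R v a \<and> sigma R C v y \<in> carrier (Gv R v)"
proof -
  assume v: "v \<in> Vs R" and va: "(v, a) \<in> C" and a: "a \<in> VGam R v" and gC: "goodC R C"
    and y: "y \<in> carrier (FV R (fst (rep C)) (snd (rep C)))"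
  have C: "C = psi_class R (v, a)" using goodC_eq[OF gC va] .
  have "sigma R C v y \<in> factor R v a" using sigma_spec[OF v a C refl y] by blast
  then show ?thesis using fac_sub[OF v a] by blast
qed

lemma sigma_edge: "e \<in> Es R \<Longrightarrow> a \<in> VGam R (src R e) \<Longrightarrow> b \<in> VGam R (tgt R e) \<Longrightarrow> goodC R C \<Longrightarrow>
  (src R e, a) \<in> C \<Longrightarrow> (tgt R e, b) \<in> C \<Longrightarrow> factor R (src R e) a \<subseteq> IMG R e \<Longrightarrow>
  phiset R e (factor R (src R e) a) = factor R (tgt R e) b \<Longrightarrow> y \<in> carrier (FV R (fst (rep C)) (snd (rep C))) \<Longrightarrow>
  \<exists>g\<in>carrier (Ge R e). sigma R C (src R e) y = iota R e g \<and> sigma R C (tgt R e) y = iota R (bar R e) g"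
proof -
  assume e: "e \<in> Es R" and a: "a \<in> VGam R (src R e)" and b: "b \<in> VGam R (tgt R e)" and gC: "goodC R C"
    and ia: "(src R e, a) \<in> C" and ib: "(tgt R e, b) \<in> C" and sub: "factor R (src R e) a \<subseteq> IMG R e"
    and ph: "phiset R e (factor R (src R e) a) = factor R (tgt R e) b"
    and y: "y \<in> carrier (FV R (fst (rep C)) (snd (rep C)))"
  have s: "src R e \<in> Vs R" and t: "tgt R e \<in> Vs R" using e by auto
  have Ca: "C = psi_class R (src R e, a)" using goodC_eq[OF gC ia] .
  have Cb: "C = psi_class R (tgt R e, b)" using goodC_eq[OF gC ib] .
  define p where "p = rep C"
  note ss = sigma_spec[OF s a Ca p_def] and st = sigma_spec[OF t b Cb p_def]
  have yp: "y \<in> carrier (FV R (fst p) (snd p))" using y p_def by simp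
  obtain c where c: "goodp R (tgt R e) b c (fst p) (snd p)" using rep_props[OF t b] Cb p_def by blast
  have g1: "goodp R (src R e) a [e] (tgt R e) b" using e b ph by (simp add: goodp_def)
  have ec: "goodp R (src R e) a (e # c) (fst p) (snd p)" using goodp_append[OF g1 c] by simp
  have sm: "sigma R C (src R e) y \<in> factor R (src R e) a" using ss yp by blast
  then obtain g where g: "g \<in> carrier (Ge R e)" "sigma R C (src R e) y = iota R e g" using sub by (auto simp: IMG_def)
  have pe: "phielt R e (sigma R C (src R e) y) \<in> factor R (tgt R e) b"
    using goodp_mem[OF g1 s a sm] by simp
  have "phielt_path R (e # c) (sigma R C (src R e) y) = qv R (fst p) [(snd p, y)]"
    using ss[OF yp] ec by blast
  then have 1: "phielt_path R c (phielt R e (sigma R C (src R e) y)) = qv R (fst p) [(snd p, y)]" by simp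
  have 2: "phielt_path R c (sigma R C (tgt R e) y) = qv R (fst p) [(snd p, y)]"
    using st[OF yp] c by blast
  have "phielt R e (sigma R C (src R e) y) = sigma R C (tgt R e) y"
    using goodp_inj[OF c t b pe] st[OF yp] 1 2 by blast
  then have "sigma R C (tgt R e) y = iota R (bar R e) g" using g phielt_iota[OF e g(1)] by simp
  then show ?thesis using g by blast
qed

lemma T_path: "[l] \<in> PW R \<Longrightarrow> v \<in> Vs R \<Longrightarrow> word_path R v (endv R v (T R l v)) (T R l v) \<and> endv R v (T R l v) \<in> Vs R"
proof -
  assume l: "[l] \<in> PW R" and v: "v \<in> Vs R"
  obtain Xv x where lx: "l = (Xv, x)" by force
  have Xv: "Xv \<in> Psi_V R" and x: "x \<in> carrier (Psi_F R Xv)" using l lx by auto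
  from Psi_V_cases[OF Xv] show ?thesis
  proof (elim disjE exE conjE bexE)
    fix C assume XC: "Xv = Inl C" and gC: "goodC R C"
    obtain y where y: "x = Inl y" "y \<in> carrier (FV R (fst (rep C)) (snd (rep C)))" using Inl_carrier x XC by blast
    show ?thesis
    proof (cases "\<exists>a. (v, a) \<in> C \<and> a \<in> VGam R v")
      case True
      then obtain a where a: "(v, a) \<in> C" "a \<in> VGam R v" by blast
      have "T R l v = [Elt v (sigma R C v y)]" using T_Inl[OF v a] lx XC y by simp
      then show ?thesis using sigma_in[OF v a gC y(2)] v by simp
    next
      case False
      then have "T R l v = []" using T_Inl_none[OF False] lx XC by simp
      then show ?thesis using v by simp
    qed
  next
    fix e0 assume e0: "e0 \<in> Es R" and XP: "Xv = Inr {e0, bar R e0}"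
    show ?thesis
    proof (cases "x = Inr 1 \<and> (\<exists>e\<in>{e0, bar R e0}. e \<in> Es R \<and> src R e = v)")
      case True
      then obtain e where e: "e \<in> {e0, bar R e0}" "e \<in> Es R" "src R e = v" and x1: "x = Inr 1" by blast
      have "T R l v = [Arr e]" using T_Inr_1[OF e0 e(1,3)] lx XP x1 by simp
      then show ?thesis using e by auto
    next
      case False
      then have "T R l v = []" using lx XP by (auto simp: T_def)
      then show ?thesis using v by simp
    qed
  qed
qed

lemma Tw_path: "ws \<in> PW R \<Longrightarrow> v \<in> Vs R \<Longrightarrow> word_path R v (endv R v (Tw R ws v)) (Tw R ws v) \<and> endv R v (Tw R ws v) \<in> Vs R"
proof (induction ws arbitrary: v)
  case Nil then show ?case by simp
next
  case (Cons l ws)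
  have l: "[l] \<in> PW R" and ws: "ws \<in> PW R" using Cons.prems by auto
  note t = T_path[OF l Cons.prems(2)]
  note IH = Cons.IH[OF ws conjunct2[OF t]]
  show ?case using t IH by (auto simp: word_path_append)
qed

end

context RG4
begin

lemma Qb: "groupoid_basic R l r \<Longrightarrow> word_path R \<omega> m \<delta> \<Longrightarrow> word_path R m m2 l \<Longrightarrow> word_path R m m2 r \<Longrightarrow>
  QQ R \<omega> (\<delta> @ l) (\<delta> @ r)"
proof -
  assume b: "groupoid_basic R l r" and d: "word_path R \<omega> m \<delta>" and l: "word_path R m m2 l" and r: "word_path R m m2 r"
  have "word_path R \<omega> m2 (\<delta> @ l)" "word_path R \<omega> m2 (\<delta> @ r)" unfolding word_path_append using d l r by blast+
  then have "\<delta> @ l @ [] \<in> XW R \<omega>" "\<delta> @ r @ [] \<in> XW R \<omega>" unfolding XW_def by auto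
  then have "QQ R \<omega> (\<delta> @ l @ []) (\<delta> @ r @ [])" by (rule Q_basic[OF b])
  then show ?thesis by simp
qed

lemma gb_mult: "u \<in> Vs R \<Longrightarrow> x \<in> carrier (Gv R u) \<Longrightarrow> y \<in> carrier (Gv R u) \<Longrightarrow>
  groupoid_basic R [Elt u x, Elt u y] [Elt u (x \<otimes>\<^bsub>Gv R u\<^esub> y)]"
  unfolding groupoid_basic_def by blast

lemma gb_one: "u \<in> Vs R \<Longrightarrow> groupoid_basic R [Elt u \<one>\<^bsub>Gv R u\<^esub>] []"
  unfolding groupoid_basic_def by blast

lemma gb_arr: "e \<in> Es R \<Longrightarrow> groupoid_basic R [Arr e, Arr (bar R e)] []"
  unfolding groupoid_basic_def by blast

lemma gb_edge: "e \<in> Es R \<Longrightarrow> g \<in> carrier (Ge R e) \<Longrightarrow>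
  groupoid_basic R [Elt (src R e) (iota R e g), Arr e] [Arr e, Elt (tgt R e) (iota R (bar R e) g)]"
  unfolding groupoid_basic_def by blast

lemma Gv_mult_closed: "u \<in> Vs R \<Longrightarrow> x \<in> carrier (Gv R u) \<Longrightarrow> y \<in> carrier (Gv R u) \<Longrightarrow> x \<otimes>\<^bsub>Gv R u\<^esub> y \<in> carrier (Gv R u)"
  using group_Gv by (simp add: group.is_monoid monoid.m_closed)

lemma Q_mult2: "word_path R \<omega> m \<delta> \<Longrightarrow> m \<in> Vs R \<Longrightarrow> g \<in> carrier (Gv R m) \<Longrightarrow> h \<in> carrier (Gv R m) \<Longrightarrow>
  QQ R \<omega> (\<delta> @ [Elt m g, Elt m h]) (\<delta> @ [Elt m (g \<otimes>\<^bsub>Gv R m\<^esub> h)])"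
  by (rule Qb[OF gb_mult]) (auto simp: Gv_mult_closed)

lemma ACT_CC: "goodC R C \<Longrightarrow> goodC R D \<Longrightarrow> Psi_adj R (Inl C) (Inl D) \<Longrightarrow>
  x \<in> carrier (Psi_F R (Inl C)) \<Longrightarrow> y \<in> carrier (Psi_F R (Inl D)) \<Longrightarrow> word_path R \<omega> m \<delta> \<Longrightarrow> m \<in> Vs R \<Longrightarrow>
  QQ R \<omega> (\<delta> @ Tw R [(Inl C, x), (Inl D, y)] m) (\<delta> @ Tw R [(Inl D, y), (Inl C, x)] m)"
proof -
  assume gC: "goodC R C" and gD: "goodC R D" and adj: "Psi_adj R (Inl C) (Inl D)"
    and x: "x \<in> carrier (Psi_F R (Inl C))" and y: "y \<in> carrier (Psi_F R (Inl D))"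
    and d: "word_path R \<omega> m \<delta>" and m: "m \<in> Vs R"
  obtain x0 where x0: "x = Inl x0" "x0 \<in> carrier (FV R (fst (rep C)) (snd (rep C)))" using Inl_carrier[OF x] by blast
  obtain y0 where y0: "y = Inl y0" "y0 \<in> carrier (FV R (fst (rep D)) (snd (rep D)))" using Inl_carrier[OF y] by blast
  show ?thesis
  proof (cases "\<exists>a. (m, a) \<in> C \<and> a \<in> VGam R m")
    case True
    then obtain a where a: "(m, a) \<in> C" "a \<in> VGam R m" by blast
    show ?thesis
    proof (cases "\<exists>b. (m, b) \<in> D \<and> b \<in> VGam R m")
      case True
      then obtain b where b: "(m, b) \<in> D" "b \<in> VGam R m" by blast
      obtain u a1 a2 where w: "(u, a1) \<in> C" "(u, a2) \<in> D" "u \<in> Vs R" "adjG R u a1 a2"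
        using adj unfolding Psi_adj_def by auto
      have a12: "a1 \<in> VGam R u" "a2 \<in> VGam R u" using w(4) simpl_V[OF w(3)] by (auto simp: simplicial_def)
      have C1: "C = psi_class R (u, a1)" using goodC_eq[OF gC w(1)] .
      have D1: "D = psi_class R (u, a2)" using goodC_eq[OF gD w(2)] .
      have ab: "adjG R m a b" using ADJ[OF w(3) m a12 w(4) a(2) b(2)] a(1) b(1) C1 D1 by simp
      note sa = sigma_in[OF m a(1) a(2) gC x0(2)] and sb = sigma_in[OF m b(1) b(2) gD y0(2)]
      let ?g = "sigma R C m x0" and ?h = "sigma R D m y0"
      have comm: "?g \<otimes>\<^bsub>Gv R m\<^esub> ?h = ?h \<otimes>\<^bsub>Gv R m\<^esub> ?g"
      proof -
        obtain x1 where x1: "x1 \<in> carrier (FV R m a)" "?g = qv R m [(a, x1)]" using sa by (auto simp: factor_qv)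
        obtain y1 where y1: "y1 \<in> carrier (FV R m b)" "?h = qv R m [(b, y1)]" using sb by (auto simp: factor_qv)
        show ?thesis unfolding x1(2) y1(2) qv_def Gv_def by (rule gq_fac_comm[where adj="adjG R m" and I="VGam R m" and F="FV R m", OF ab a(2) b(2) x1(1) y1(1)])
      qed
      have tl: "Tw R [(Inl C, x), (Inl D, y)] m = [Elt m ?g, Elt m ?h]"
        using T_Inl[OF m a] T_Inl[OF m b] x0 y0 by simp
      have tr: "Tw R [(Inl D, y), (Inl C, x)] m = [Elt m ?h, Elt m ?g]"
        using T_Inl[OF m a] T_Inl[OF m b] x0 y0 by simp
      have 1: "QQ R \<omega> (\<delta> @ [Elt m ?g, Elt m ?h]) (\<delta> @ [Elt m (?g \<otimes>\<^bsub>Gv R m\<^esub> ?h)])"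
        using Q_mult2[OF d m] sa sb by blast
      have 2: "QQ R \<omega> (\<delta> @ [Elt m ?h, Elt m ?g]) (\<delta> @ [Elt m (?h \<otimes>\<^bsub>Gv R m\<^esub> ?g)])"
        using Q_mult2[OF d m] sa sb by blast
      have 3: "QQ R \<omega> (\<delta> @ [Elt m (?g \<otimes>\<^bsub>Gv R m\<^esub> ?h)]) (\<delta> @ [Elt m ?h, Elt m ?g])"
        using qrel_sym[OF 2] comm by simp
      show ?thesis unfolding tl tr using qrel_trans[OF 1 3] .
    next
      case False
      have "Tw R [(Inl C, x), (Inl D, y)] m = Tw R [(Inl D, y), (Inl C, x)] m"
        using T_Inl[OF m a] T_Inl_none[OF False] x0 by simp
      then show ?thesis by simp
    qed
  next
    case False
    have "Tw R [(Inl C, x), (Inl D, y)] m = Tw R [(Inl D, y), (Inl C, x)] m"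
    proof (cases "\<exists>b. (m, b) \<in> D \<and> b \<in> VGam R m")
      case True
      then obtain b where b: "(m, b) \<in> D" "b \<in> VGam R m" by blast
      show ?thesis using T_Inl[OF m b] T_Inl_none[OF False] y0 by simp
    next
      case F2: False
      show ?thesis using T_Inl_none[OF False] T_Inl_none[OF F2] by simp
    qed
    then show ?thesis by simp
  qed
qed

lemma ACT_CP: "goodC R C \<Longrightarrow> e0 \<in> Es R \<Longrightarrow> edge_adj R {e0, bar R e0} C \<Longrightarrow>
  x \<in> carrier (Psi_F R (Inl C)) \<Longrightarrow> y \<in> carrier (Psi_F R (Inr {e0, bar R e0})) \<Longrightarrow> word_path R \<omega> m \<delta> \<Longrightarrow> m \<in> Vs R \<Longrightarrow>
  QQ R \<omega> (\<delta> @ Tw R [(Inl C, x), (Inr {e0, bar R e0}, y)] m) (\<delta> @ Tw R [(Inr {e0, bar R e0}, y), (Inl C, x)] m)"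
proof -
  assume gC: "goodC R C" and e0: "e0 \<in> Es R" and ea: "edge_adj R {e0, bar R e0} C"
    and x: "x \<in> carrier (Psi_F R (Inl C))" and y: "y \<in> carrier (Psi_F R (Inr {e0, bar R e0}))"
    and d: "word_path R \<omega> m \<delta>" and m: "m \<in> Vs R"
  let ?P = "{e0, bar R e0}"
  obtain x0 where x0: "x = Inl x0" "x0 \<in> carrier (FV R (fst (rep C)) (snd (rep C)))" using Inl_carrier[OF x] by blast
  have endC: "endv R v (T R (Inl C, x) v) = v" for v by (simp add: T_def)
  show ?thesis
  proof (cases "\<exists>e\<in>?P. e \<in> Es R \<and> src R e = m")
    case True
    then obtain e where e: "e \<in> ?P" "e \<in> Es R" "src R e = m" by blast
    obtain a b where ab: "a \<in> VGam R (src R e)" "b \<in> VGam R (tgt R e)" "(src R e, a) \<in> C" "(tgt R e, b) \<in> C"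
      "factor R (src R e) a \<subseteq> IMG R e" "phiset R e (factor R (src R e) a) = factor R (tgt R e) b"
      using EDGE_ADJ[OF e0 e(1) ea gC] by blast
    have t: "tgt R e \<in> Vs R" using e by simp
    have tm: "T R (Inl C, x) m = [Elt m (sigma R C m x0)]" using T_Inl[OF m] ab(1,3) e(3) x0 by simp
    have tt: "T R (Inl C, x) (tgt R e) = [Elt (tgt R e) (sigma R C (tgt R e) x0)]" using T_Inl[OF t ab(4) ab(2)] x0 by simp
    from Inr_carrier[OF y] show ?thesis
    proof
      assume y0: "y = Inr 0"
      show ?thesis using tm endC y0 by (simp add: T_Inr_0)
    next
      assume y1: "y = Inr 1"
      have te: "T R (Inr ?P, Inr 1) m = [Arr e]" using T_Inr_1[OF e0 e(1) e(3)] .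
      obtain g where g: "g \<in> carrier (Ge R e)" "sigma R C (src R e) x0 = iota R e g" "sigma R C (tgt R e) x0 = iota R (bar R e) g"
        using sigma_edge[OF e(2) ab(1,2) gC ab(3,4,5,6) x0(2)] by blast
      have l: "Tw R [(Inl C, x), (Inr ?P, y)] m = [Elt (src R e) (iota R e g), Arr e]"
        using tm endC te y1 g e(3) by simp
      have r: "Tw R [(Inr ?P, y), (Inl C, x)] m = [Arr e, Elt (tgt R e) (iota R (bar R e) g)]"
        using te tt y1 g by simp
      have p1: "word_path R m (tgt R e) [Elt (src R e) (iota R e g), Arr e]"
        using e m iota_closed[OF e(2) g(1)] by simp
      have p2: "word_path R m (tgt R e) [Arr e, Elt (tgt R e) (iota R (bar R e) g)]"
        using e t iota_bar_closed[OF e(2) g(1)] by simp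
      show ?thesis unfolding l r by (rule Qb[OF gb_edge[OF e(2) g(1)] d p1 p2])
    qed
  next
    case False
    have "T R (Inr ?P, y) v = []" if "v = m" for v using T_Inr_none False that by metis
    then show ?thesis using endC by simp
  qed
qed

end

context RG4
begin

lemma BACT_mult: "Xv \<in> Psi_V R \<Longrightarrow> x \<in> carrier (Psi_F R Xv) \<Longrightarrow> y \<in> carrier (Psi_F R Xv) \<Longrightarrow>
  word_path R \<omega> m \<delta> \<Longrightarrow> m \<in> Vs R \<Longrightarrow>
  QQ R \<omega> (\<delta> @ Tw R [(Xv, x), (Xv, y)] m) (\<delta> @ Tw R [(Xv, x \<otimes>\<^bsub>Psi_F R Xv\<^esub> y)] m)"
proof -
  assume X: "Xv \<in> Psi_V R" and x: "x \<in> carrier (Psi_F R Xv)" and y: "y \<in> carrier (Psi_F R Xv)"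
    and d: "word_path R \<omega> m \<delta>" and m: "m \<in> Vs R"
  from Psi_V_cases[OF X] show ?thesis
  proof (elim disjE exE conjE bexE)
    fix C assume XC: "Xv = Inl C" and gC: "goodC R C"
    obtain x0 where x0: "x = Inl x0" "x0 \<in> carrier (FV R (fst (rep C)) (snd (rep C)))" using Inl_carrier x XC by blast
    obtain y0 where y0: "y = Inl y0" "y0 \<in> carrier (FV R (fst (rep C)) (snd (rep C)))" using Inl_carrier y XC by blast
    have xy: "x \<otimes>\<^bsub>Psi_F R Xv\<^esub> y = Inl (x0 \<otimes>\<^bsub>FV R (fst (rep C)) (snd (rep C))\<^esub> y0)"
      using x0 y0 XC by (simp add: Psi_F_Inl transport_mult)
    show ?thesis
    proof (cases "\<exists>a. (m, a) \<in> C \<and> a \<in> VGam R m")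
      case True
      then obtain a where a: "(m, a) \<in> C" "a \<in> VGam R m" by blast
      have Ca: "C = psi_class R (m, a)" using goodC_eq[OF gC a(1)] .
      have sm: "sigma R C m (x0 \<otimes>\<^bsub>FV R (fst (rep C)) (snd (rep C))\<^esub> y0) = sigma R C m x0 \<otimes>\<^bsub>Gv R m\<^esub> sigma R C m y0"
        using sigma_mult[OF m a(2) Ca refl x0(2) y0(2)] .
      have l: "Tw R [(Xv, x), (Xv, y)] m = [Elt m (sigma R C m x0), Elt m (sigma R C m y0)]"
        using T_Inl[OF m a] XC x0 y0 by simp
      have r: "Tw R [(Xv, x \<otimes>\<^bsub>Psi_F R Xv\<^esub> y)] m = [Elt m (sigma R C m x0 \<otimes>\<^bsub>Gv R m\<^esub> sigma R C m y0)]"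
        using T_Inl[OF m a] XC xy sm by simp
      show ?thesis unfolding l r
        using Q_mult2[OF d m] sigma_in[OF m a gC x0(2)] sigma_in[OF m a gC y0(2)] by blast
    next
      case False
      then show ?thesis using T_Inl_none[OF False] XC x0 y0 xy by simp
    qed
  next
    fix e0 assume e0: "e0 \<in> Es R" and XP: "Xv = Inr {e0, bar R e0}"
    let ?P = "{e0, bar R e0}"
    have xs: "x = Inr 0 \<or> x = Inr 1" and ys: "y = Inr 0 \<or> y = Inr 1" using Inr_carrier x y XP by auto
    have mult: "Inr i \<otimes>\<^bsub>Psi_F R Xv\<^esub> Inr j = Inr ((i + j) mod 2)" if "i \<in> {0, 1}" "j \<in> {0, 1}" for i j :: int
      using Z2_mult[OF that] XP by simp
    show ?thesis
    proof (cases "\<exists>e\<in>?P. e \<in> Es R \<and> src R e = m")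
      case True
      then obtain e where e: "e \<in> ?P" "e \<in> Es R" "src R e = m" by blast
      have be: "bar R e \<in> ?P" using e e0 by auto
      have t1: "T R (Inr ?P, Inr 1) m = [Arr e]" using T_Inr_1[OF e0 e(1) e(3)] .
      have t2: "T R (Inr ?P, Inr 1) (tgt R e) = [Arr (bar R e)]" using T_Inr_1[OF e0 be] e(2) by simp
      have pe: "word_path R m m [Arr e, Arr (bar R e)]" using e by simp
      have q11: "QQ R \<omega> (\<delta> @ [Arr e, Arr (bar R e)]) (\<delta> @ [])"
        by (rule Qb[OF gb_arr[OF e(2)] d pe]) simp
      from xs ys show ?thesis
        using XP t1 t2 q11 mult[of 0 0] mult[of 0 1] mult[of 1 0] mult[of 1 1] by (auto simp: T_Inr_0)
    next
      case False
      have "T R (Inr ?P, z) m = []" for z using T_Inr_none[OF False] .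
      then show ?thesis using XP by simp
    qed
  qed
qed

lemma BACT_one: "Xv \<in> Psi_V R \<Longrightarrow> word_path R \<omega> m \<delta> \<Longrightarrow> m \<in> Vs R \<Longrightarrow>
  QQ R \<omega> (\<delta> @ Tw R [(Xv, \<one>\<^bsub>Psi_F R Xv\<^esub>)] m) (\<delta> @ Tw R [] m)"
proof -
  assume X: "Xv \<in> Psi_V R" and d: "word_path R \<omega> m \<delta>" and m: "m \<in> Vs R"
  from Psi_V_cases[OF X] show ?thesis
  proof (elim disjE exE conjE bexE)
    fix C assume XC: "Xv = Inl C" and gC: "goodC R C"
    have o: "\<one>\<^bsub>Psi_F R Xv\<^esub> = Inl \<one>\<^bsub>FV R (fst (rep C)) (snd (rep C))\<^esub>" using XC by (simp add: Psi_F_Inl transport_one)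
    show ?thesis
    proof (cases "\<exists>a. (m, a) \<in> C \<and> a \<in> VGam R m")
      case True
      then obtain a where a: "(m, a) \<in> C" "a \<in> VGam R m" by blast
      have Ca: "C = psi_class R (m, a)" using goodC_eq[OF gC a(1)] .
      have s1: "sigma R C m \<one>\<^bsub>FV R (fst (rep C)) (snd (rep C))\<^esub> = \<one>\<^bsub>Gv R m\<^esub>"
        using sigma_one[OF m a(2) Ca refl] by (simp add: qv_def Gv_def gq_one)
      have l: "Tw R [(Xv, \<one>\<^bsub>Psi_F R Xv\<^esub>)] m = [Elt m \<one>\<^bsub>Gv R m\<^esub>]" using T_Inl[OF m a] XC o s1 by simp
      have p: "word_path R m m [Elt m \<one>\<^bsub>Gv R m\<^esub>]" using m group_Gv[OF m] by (simp add: group.is_monoid monoid.one_closed)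
      have "QQ R \<omega> (\<delta> @ [Elt m \<one>\<^bsub>Gv R m\<^esub>]) (\<delta> @ [])" by (rule Qb[OF gb_one[OF m] d p]) simp
      then show ?thesis unfolding l by simp
    next
      case False
      then show ?thesis using T_Inl_none[OF False] XC o by simp
    qed
  next
    fix e0 assume e0: "e0 \<in> Es R" and XP: "Xv = Inr {e0, bar R e0}"
    then show ?thesis by (simp add: Z2_one T_Inr_0)
  qed
qed

lemma BACT: "gp_basic (Psi_V R) (Psi_adj R) (Psi_F R) l r \<Longrightarrow> word_path R \<omega> m \<delta> \<Longrightarrow> m \<in> Vs R \<Longrightarrow>
  QQ R \<omega> (\<delta> @ Tw R l m) (\<delta> @ Tw R r m)"
proof -
  assume b: "gp_basic (Psi_V R) (Psi_adj R) (Psi_F R) l r" and d: "word_path R \<omega> m \<delta>" and m: "m \<in> Vs R"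
  from b show ?thesis unfolding gp_basic_def
  proof (elim disjE bexE conjE)
    fix Xv x y assume "Xv \<in> Psi_V R" "x \<in> carrier (Psi_F R Xv)" "y \<in> carrier (Psi_F R Xv)"
      "l = [(Xv, x), (Xv, y)]" "r = [(Xv, x \<otimes>\<^bsub>Psi_F R Xv\<^esub> y)]"
    then show ?thesis using BACT_mult[OF _ _ _ d m] by simp
  next
    fix Xv assume "Xv \<in> Psi_V R" "l = [(Xv, \<one>\<^bsub>Psi_F R Xv\<^esub>)]" "r = []"
    then show ?thesis using BACT_one[OF _ d m] by simp
  next
    fix Xv Yv x y assume X: "Xv \<in> Psi_V R" and Y: "Yv \<in> Psi_V R" and adj: "Psi_adj R Xv Yv"
      and x: "x \<in> carrier (Psi_F R Xv)" and y: "y \<in> carrier (Psi_F R Yv)"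
      and l: "l = [(Xv, x), (Yv, y)]" and r: "r = [(Yv, y), (Xv, x)]"
    from Psi_V_cases[OF X] Psi_V_cases[OF Y] show ?thesis
    proof (elim disjE exE conjE bexE)
      fix C D assume XC: "Xv = Inl C" and gC: "goodC R C" and YD: "Yv = Inl D" and gD: "goodC R D"
      show ?thesis using ACT_CC[OF gC gD _ _ _ d m] adj x y XC YD l r by simp
    next
      fix C e0 assume XC: "Xv = Inl C" and gC: "goodC R C" and e0: "e0 \<in> Es R" and YP: "Yv = Inr {e0, bar R e0}"
      have ea: "edge_adj R {e0, bar R e0} C" using adj XC YP by (simp add: Psi_adj_def)
      show ?thesis using ACT_CP[OF gC e0 ea _ _ d m] x y XC YP l r by simp
    next
      fix C e0 assume YC: "Yv = Inl C" and gC: "goodC R C" and e0: "e0 \<in> Es R" and XP: "Xv = Inr {e0, bar R e0}"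
      have ea: "edge_adj R {e0, bar R e0} C" using adj YC XP by (simp add: Psi_adj_def)
      show ?thesis using qrel_sym[OF ACT_CP[OF gC e0 ea _ _ d m]] x y YC XP l r by simp
    next
      fix e0 e1 assume "Xv = Inr {e0, bar R e0}" "Yv = Inr {e1, bar R e1}"
      then show ?thesis using adj by (simp add: Psi_adj_def)
    qed
  qed
qed

end

context RG4
begin

lemma CTX: "gp_basic (Psi_V R) (Psi_adj R) (Psi_F R) l r \<Longrightarrow> U @ l @ V \<in> PW R \<Longrightarrow> U @ r @ V \<in> PW R \<Longrightarrow>
  word_path R \<omega> m \<delta> \<Longrightarrow> m \<in> Vs R \<Longrightarrow> QQ R \<omega> (\<delta> @ Tw R (U @ l @ V) m) (\<delta> @ Tw R (U @ r @ V) m)"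
proof -
  assume b: "gp_basic (Psi_V R) (Psi_adj R) (Psi_F R) l r" and w1: "U @ l @ V \<in> PW R" and w2: "U @ r @ V \<in> PW R"
    and d: "word_path R \<omega> m \<delta>" and m: "m \<in> Vs R"
  have U: "U \<in> PW R" and l: "l \<in> PW R" and V: "V \<in> PW R" and r: "r \<in> PW R" using w1 w2 by auto
  define m1 where "m1 = endv R m (Tw R U m)"
  define \<delta>1 where "\<delta>1 = \<delta> @ Tw R U m"
  have pU: "word_path R m m1 (Tw R U m)" "m1 \<in> Vs R" using Tw_path[OF U m] m1_def by auto
  have d1: "word_path R \<omega> m1 \<delta>1" unfolding \<delta>1_def word_path_append using d pU by blast
  define m2 where "m2 = endv R m1 (Tw R l m1)"
  define m2' where "m2' = endv R m1 (Tw R r m1)"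
  have pl: "word_path R m1 m2 (Tw R l m1)" "m2 \<in> Vs R" using Tw_path[OF l pU(2)] m2_def by auto
  have pr: "word_path R m1 m2' (Tw R r m1)" using Tw_path[OF r pU(2)] m2'_def by auto
  have q: "QQ R \<omega> (\<delta>1 @ Tw R l m1) (\<delta>1 @ Tw R r m1)" using BACT[OF b d1 pU(2)] .
  have pl2: "word_path R \<omega> m2 (\<delta>1 @ Tw R l m1)" unfolding word_path_append using d1 pl by blast
  have "word_path R \<omega> m2 (\<delta>1 @ Tw R r m1)" using Q_end[OF q pl2 ragg] .
  moreover have "word_path R \<omega> m2' (\<delta>1 @ Tw R r m1)" unfolding word_path_append using d1 pr by blast
  ultimately have mm: "m2 = m2'" using word_path_fun by metis
  have pV: "word_path R m2 (endv R m2 (Tw R V m2)) (Tw R V m2)" using Tw_path[OF V pl(2)] by blast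
  have "QQ R \<omega> ((\<delta>1 @ Tw R l m1) @ Tw R V m2) ((\<delta>1 @ Tw R r m1) @ Tw R V m2)"
    using Q_app[OF q pl2 pV ragg] .
  moreover have "\<delta> @ Tw R (U @ l @ V) m = (\<delta>1 @ Tw R l m1) @ Tw R V m2"
    by (simp add: Tw_append \<delta>1_def m1_def m2_def)
  moreover have "\<delta> @ Tw R (U @ r @ V) m = (\<delta>1 @ Tw R r m1) @ Tw R V m2"
    by (simp add: Tw_append \<delta>1_def m1_def mm m2'_def)
  ultimately show ?thesis by simp
qed

lemma ACT: "grH R ws ws' \<Longrightarrow> word_path R \<omega> m \<delta> \<Longrightarrow> m \<in> Vs R \<Longrightarrow> QQ R \<omega> (\<delta> @ Tw R ws m) (\<delta> @ Tw R ws' m)"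
proof -
  assume g: "grH R ws ws'" and d: "word_path R \<omega> m \<delta>" and m: "m \<in> Vs R"
  from g show ?thesis unfolding gr_def qrel_def[of "PW R"]
  proof (induction rule: rtranclp_induct)
    case base then show ?case by simp
  next
    case (step y z)
    have yP: "y \<in> PW R" and zP: "z \<in> PW R" and rs: "rewrite_step (gp_basic (Psi_V R) (Psi_adj R) (Psi_F R)) y z \<or>
      rewrite_step (gp_basic (Psi_V R) (Psi_adj R) (Psi_F R)) z y" using step(2) by blast+
    have "QQ R \<omega> (\<delta> @ Tw R y m) (\<delta> @ Tw R z m)"
      using rs
    proof
      assume "rewrite_step (gp_basic (Psi_V R) (Psi_adj R) (Psi_F R)) y z"
      then obtain U l r V where "gp_basic (Psi_V R) (Psi_adj R) (Psi_F R) l r" "y = U @ l @ V" "z = U @ r @ V"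
        unfolding rewrite_step_def by blast
      then show ?thesis using CTX[OF _ _ _ d m] yP zP by simp
    next
      assume "rewrite_step (gp_basic (Psi_V R) (Psi_adj R) (Psi_F R)) z y"
      then obtain U l r V where "gp_basic (Psi_V R) (Psi_adj R) (Psi_F R) l r" "z = U @ l @ V" "y = U @ r @ V"
        unfolding rewrite_step_def by blast
      then show ?thesis using qrel_sym[OF CTX[OF _ _ _ d m]] yP zP by simp
    qed
    then show ?case using step(3) qrel_trans by metis
  qed
qed

lemma Tw_hmap: "m \<in> Vs R \<Longrightarrow> ww \<in> gp_words (VGam R m) (FV R m) \<Longrightarrow>
  Tw R (hmap R m ww) m = map (\<lambda>p. Elt m (qv R m [p])) ww"
proof (induction ww)
  case Nil then show ?case by (simp add: hmap_def)
next
  case (Cons p ww)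
  obtain a x where p: "p = (a, x)" by force
  have a: "a \<in> VGam R m" and x: "x \<in> carrier (FV R m a)" and ww: "ww \<in> gp_words (VGam R m) (FV R m)"
    using Cons.prems p by auto
  have t: "T R (Inl (psi_class R (m, a)), Inl (rho R m a x)) m = [Elt m (qv R m [(a, x)])]"
    using T_Inl[OF Cons.prems(1) class_refl[of "(m, a)" R] a] sigma_rho[OF Cons.prems(1) a x] by simp
  show ?case using t Cons.IH[OF Cons.prems(1) ww] p by (simp add: hmap_def)
qed

lemma ELTS: "m \<in> Vs R \<Longrightarrow> ww \<in> gp_words (VGam R m) (FV R m) \<Longrightarrow> word_path R \<omega> m \<delta> \<Longrightarrow>
  QQ R \<omega> (\<delta> @ map (\<lambda>p. Elt m (qv R m [p])) ww) (\<delta> @ [Elt m (qv R m ww)])"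
proof (induction ww arbitrary: \<delta>)
  case Nil
  have o: "qv R m [] = \<one>\<^bsub>Gv R m\<^esub>" by (simp add: qv_def Gv_def gq_one)
  have p: "word_path R m m [Elt m \<one>\<^bsub>Gv R m\<^esub>]" using Nil.prems(1) group_Gv by (simp add: group.is_monoid monoid.one_closed)
  have "QQ R \<omega> (\<delta> @ [Elt m \<one>\<^bsub>Gv R m\<^esub>]) (\<delta> @ [])" by (rule Qb[OF gb_one[OF Nil.prems(1)] Nil.prems(3) p]) simp
  then show ?case using o qrel_sym by fastforce
next
  case (Cons p ww)
  have m: "m \<in> Vs R" using Cons.prems(1) .
  have pw: "[p] \<in> gp_words (VGam R m) (FV R m)" and ww: "ww \<in> gp_words (VGam R m) (FV R m)" using Cons.prems(2) by auto
  have cp: "qv R m [p] \<in> carrier (Gv R m)" using pw by (simp add: qv_def Gv_def gq_carrier)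
  have cw: "qv R m ww \<in> carrier (Gv R m)" using ww by (simp add: qv_def Gv_def gq_carrier)
  have d': "word_path R \<omega> m (\<delta> @ [Elt m (qv R m [p])])" unfolding word_path_append using Cons.prems(3) cp m by auto
  have 1: "QQ R \<omega> ((\<delta> @ [Elt m (qv R m [p])]) @ map (\<lambda>p. Elt m (qv R m [p])) ww) ((\<delta> @ [Elt m (qv R m [p])]) @ [Elt m (qv R m ww)])"
    using Cons.IH[OF m ww d'] .
  have 2: "QQ R \<omega> (\<delta> @ [Elt m (qv R m [p]), Elt m (qv R m ww)]) (\<delta> @ [Elt m (qv R m [p] \<otimes>\<^bsub>Gv R m\<^esub> qv R m ww)])"
    using Q_mult2[OF Cons.prems(3) m cp cw] .
  have e: "qv R m [p] \<otimes>\<^bsub>Gv R m\<^esub> qv R m ww = qv R m (p # ww)"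
    using gq_mult[of "[p]" "VGam R m" "FV R m" ww "adjG R m"] pw ww by (simp add: qv_def Gv_def)
  show ?case using qrel_trans[OF 1] 2 e by simp
qed

lemma BASE: "\<omega> \<in> Vs R \<Longrightarrow> word_path R m m' w \<Longrightarrow> word_path R \<omega> m \<delta> \<Longrightarrow> QQ R \<omega> (\<delta> @ Tw R (hw R w) m) (\<delta> @ w)"
proof (induction w arbitrary: m \<delta>)
  case Nil then show ?case by simp
next
  case (Cons l w)
  have m: "m \<in> Vs R" using word_path_Vs[OF Cons.prems(3) Cons.prems(1) ragg] .
  show ?case
  proof (cases l)
    case (Arr e)
    have e: "e \<in> Es R" "src R e = m" and w: "word_path R (tgt R e) m' w" using Cons.prems(2) Arr by auto
    have t: "T R (Inr {e, bar R e}, Inr 1) m = [Arr e]" using T_Inr_1[OF e(1) _ e(2)] by simp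
    have d': "word_path R \<omega> (tgt R e) (\<delta> @ [Arr e])" unfolding word_path_append using Cons.prems(3) e by auto
    have "QQ R \<omega> ((\<delta> @ [Arr e]) @ Tw R (hw R w) (tgt R e)) ((\<delta> @ [Arr e]) @ w)" using Cons.IH[OF Cons.prems(1) w d'] .
    then show ?thesis using t Arr by (simp add: hw_Cons hl_def)
  next
    case (Elt x g)
    have x: "x = m" and g: "g \<in> carrier (Gv R m)" and w: "word_path R m m' w" using Cons.prems(2) Elt by auto
    note rg = repw[OF m g]
    have hl: "hw R (l # w) = hmap R m (repw g) @ hw R w" using Elt x by (simp add: hw_Cons hl_def)
    have tw: "Tw R (hw R (l # w)) m = map (\<lambda>p. Elt m (qv R m [p])) (repw g) @ Tw R (hw R w) m"
    proof -
      have en: "endv R m (map (\<lambda>p. Elt m (qv R m [p])) ww) = m" for ww by (induction ww) auto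
      then have "endv R m (map (\<lambda>p. Elt m (qv R m [p])) (repw g)) = m" by blast
      then show ?thesis unfolding hl Tw_append using Tw_hmap[OF m conjunct1[OF rg]] by simp
    qed
    have hP: "hw R w \<in> PW R" using hw_PW word_path_vl[OF w] by blast
    have pT: "word_path R m (endv R m (Tw R (hw R w) m)) (Tw R (hw R w) m)" using Tw_path[OF hP m] by blast
    have dm: "word_path R \<omega> m (\<delta> @ map (\<lambda>p. Elt m (qv R m [p])) (repw g))"
    proof -
      have "word_path R m m (map (\<lambda>p. Elt m (qv R m [p])) ww)" if "ww \<in> gp_words (VGam R m) (FV R m)" for ww
        using that m by (induction ww) (auto simp: qv_def Gv_def gq_carrier)
      then show ?thesis unfolding word_path_append using Cons.prems(3) rg by blast
    qed
    have 1: "QQ R \<omega> ((\<delta> @ map (\<lambda>p. Elt m (qv R m [p])) (repw g)) @ Tw R (hw R w) m) ((\<delta> @ [Elt m g]) @ Tw R (hw R w) m)"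
      using Q_app[OF ELTS[OF m conjunct1[OF rg] Cons.prems(3)] dm pT ragg] rg by simp
    have d': "word_path R \<omega> m (\<delta> @ [Elt m g])" unfolding word_path_append using Cons.prems(3) m g by auto
    have 2: "QQ R \<omega> ((\<delta> @ [Elt m g]) @ Tw R (hw R w) m) ((\<delta> @ [Elt m g]) @ w)" using Cons.IH[OF Cons.prems(1) w d'] .
    show ?thesis unfolding tw using qrel_trans[OF 1 2] Elt x by simp
  qed
qed

end

context RG4
begin

lemma WO_app: "app_closed (WO R \<omega>)"
  unfolding app_closed_def WO_def by (auto simp: word_path_append)

lemma main_embedding:
  assumes om: "\<omega> \<in> Vs R"
  shows "\<exists>h. h \<in> hom (fund_group R \<omega>) (Psi_GP R) \<and> inj_on h (carrier (fund_group R \<omega>))"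
proof -
  let ?st = "rewrite_step (groupoid_basic R)"
  let ?F = "fund_group R \<omega>"
  let ?q = "qclass (WO R \<omega>) ?st"
  let ?qH = "gq (Psi_V R) (Psi_adj R) (Psi_F R)"
  have F: "?F = quot_monoid (WO R \<omega>) ?st" by (simp add: fund_group_def WO_def)
  define h where "h A = ?qH (hw R ((SOME w. w \<in> A)))" for A
  have rep: "(SOME w. w \<in> A) \<in> WO R \<omega> \<and> ?q ((SOME w. w \<in> A)) = A" if "A \<in> carrier ?F" for A
  proof -
    have "A \<in> ?q ` WO R \<omega>" using that unfolding F quot_carrier .
    then obtain w where w: "w \<in> WO R \<omega>" "A = ?q w" by blast
    then have "w \<in> A" by (simp add: mem_qclass)
    then have "(SOME w. w \<in> A) \<in> A" by (rule someI)
    then show ?thesis using w qclass_mem_eq by metis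
  qed
  have hwP: "hw R w \<in> PW R" if "w \<in> WO R \<omega>" for w
  proof -
    have "word_path R \<omega> \<omega> w" using that by (simp add: WO_def)
    then show ?thesis by (rule hw_PW[OF word_path_vl])
  qed
  have hom: "h \<in> hom ?F (Psi_GP R)"
  proof (rule homI)
    fix A assume "A \<in> carrier ?F"
    then show "h A \<in> carrier (Psi_GP R)" using rep hwP by (simp add: h_def Psi_GP_def gq_carrier)
  next
    fix A B assume A: "A \<in> carrier ?F" and B: "B \<in> carrier ?F"
    let ?x = "(SOME w. w \<in> A)" and ?y = "(SOME w. w \<in> B)"
    have x: "?x \<in> WO R \<omega>" "?q ?x = A" and y: "?y \<in> WO R \<omega>" "?q ?y = B" using rep A B by auto
    have xy: "?x @ ?y \<in> WO R \<omega>" using WO_app x y by (simp add: app_closed_def)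
    have AB0: "?q ?x \<otimes>\<^bsub>quot_monoid (WO R \<omega>) ?st\<^esub> ?q ?y = ?q (?x @ ?y)"
      by (rule quot_mult[OF WO_app x(1) y(1)])
    have AB: "A \<otimes>\<^bsub>?F\<^esub> B = ?q (?x @ ?y)" using AB0 unfolding F x(2) y(2) .
    have c: "?q (?x @ ?y) \<in> carrier ?F" using xy by (simp add: F quot_carrier)
    have r: "(SOME w. w \<in> (?q (?x @ ?y))) \<in> WO R \<omega> \<and> ?q ((SOME w. w \<in> (?q (?x @ ?y)))) = ?q (?x @ ?y)" using rep[OF c] .
    then have "qrel (WO R \<omega>) ?st ((SOME w. w \<in> (?q (?x @ ?y)))) (?x @ ?y)" using xy qclass_eq_iff by metis
    then have g: "grH R (hw R ((SOME w. w \<in> (?q (?x @ ?y))))) (hw R (?x @ ?y))" by (rule HW2)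
    have "h (A \<otimes>\<^bsub>?F\<^esub> B) = ?qH (hw R (?x @ ?y))" unfolding AB h_def using gq_eqI[OF g] .
    also have "\<dots> = ?qH (hw R ?x) \<otimes>\<^bsub>Psi_GP R\<^esub> ?qH (hw R ?y)"
      using gq_mult[OF hwP[OF x(1)] hwP[OF y(1)]] by (simp add: Psi_GP_def)
    finally show "h (A \<otimes>\<^bsub>?F\<^esub> B) = h A \<otimes>\<^bsub>Psi_GP R\<^esub> h B" by (simp add: h_def)
  qed
  have inj: "inj_on h (carrier ?F)"
  proof (rule inj_onI)
    fix A B assume A: "A \<in> carrier ?F" and B: "B \<in> carrier ?F" and e: "h A = h B"
    let ?x = "(SOME w. w \<in> A)" and ?y = "(SOME w. w \<in> B)"
    have x: "?x \<in> WO R \<omega>" "?q ?x = A" and y: "?y \<in> WO R \<omega>" "?q ?y = B" using rep A B by auto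
    have "grH R (hw R ?x) (hw R ?y)" using e hwP[OF x(1)] hwP[OF y(1)] by (simp add: h_def gq_eq_iff)
    then have 1: "QQ R \<omega> ([] @ Tw R (hw R ?x) \<omega>) ([] @ Tw R (hw R ?y) \<omega>)"
      by (rule ACT[OF _ _ om]) simp
    have px: "word_path R \<omega> \<omega> ?x" and py: "word_path R \<omega> \<omega> ?y" using x y by (auto simp: WO_def)
    have 2: "QQ R \<omega> ([] @ Tw R (hw R ?x) \<omega>) ([] @ ?x)" by (rule BASE[OF om px]) simp
    have 3: "QQ R \<omega> ([] @ Tw R (hw R ?y) \<omega>) ([] @ ?y)" by (rule BASE[OF om py]) simp
    have "QQ R \<omega> ?x ?y" using qrel_trans[OF qrel_trans[OF qrel_sym[OF 2] 1] 3] by simp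
    then have "qrel (WO R \<omega>) ?st ?x ?y" using Q_WO x(1) ragg by metis
    then have "?q ?x = ?q ?y" by (rule qclass_eqI)
    then show "A = B" using x y by simp
  qed
  show ?thesis using hom inj by blast
qed

end

theorem proposition4p12:
  fixes R :: "('v, 'e, 'a, 'g) ragg" and \<omega> :: 'v
  assumes "is_ragg R"
    and "cond_i R" and "cond_ii R" and "cond_iii R" and "cond_iv R"
    and "\<omega> \<in> Vs R"
  shows "\<exists>h. h \<in> hom (fund_group R \<omega>) (Psi_GP R) \<and> inj_on h (carrier (fund_group R \<omega>))"
proof -
  interpret RG4 R using assms by (simp add: RG4_def RG4_axioms_def RG_def)
  show ?thesis using main_embedding assms(6) .
qed


end
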